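(* Assume (H1). Then: (i) for every $p\ge1$ there is a constant $C_p$ such that $E[|I_t^T-I_s^T|^p]\le C_p|t-s|^{p/2}$ for all $t,s,T\in[0,1]$; (ii)–(iv) there is a constant $C$ such that for every $d$, every grid $0=T_0<\dots<T_d\le 1$, every $\xi\in\Theta$, $t,s\in[0,1]$ and $\alpha,\beta\in\{1,\dots,q\}$: $E[|\hat\sigma_t(\xi)-\hat\sigma_s(\xi)|^2]\le Cd|t-s|$, $E[|\partial_\alpha\hat\sigma_t(\xi)-\partial_\alpha\hat\sigma_s(\xi)|^2]\le Cd|t-s|$, and $E[|\partial_\alpha\partial_\beta\hat\sigma_t(\xi)-\partial_\alpha\partial_\beta\hat\sigma_s(\xi)|^2]\le Cd|t-s|$.
   Context: Let $q\ge1$ and let $\Theta\subset\mathbb{R}^q$ be compact and convex; $\partial_\alpha$ denotes $\partial/\partial\xi_\alpha$. Let $(\Omega,\mathscr F,(\mathscr F_t)_{t\in[0,1]},P)$ be a filtered probability space carrying a one-dimensional $(\mathscr F_t)$-standard Brownian motion $W$. Let $k:\Theta\times[0,1]\to\mathbb{R}$ be a kernel, extended by $k(\xi,t)=0$ for $t<0$. Fix $\theta\in\Theta$ and a deterministic, continuous, strictly positive function $u\mapsto V_0^u$ on $[0,1]$. For $0\le t\le u\le1$ set $V_t^u=V_0^u\exp\big(\int_0^t k(\theta,u-s)\,dW_s-\tfrac12\int_0^t k(\theta,u-s)^2ds\big)$, $V_t^u=0$ for $t>u$. For $0\le t<T\le 1$ let $I_t^T=\int_t^T V_t^u\,du$,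 and $I_t^T=0$ for $t\ge T$. Given a grid $0=T_0<T_1<\dots<T_d\le1$, put $\hat\sigma_t^j(\xi)=\sum_{l=1}^j k(\xi,T_l-t)(I_t^{T_l}-I_t^{T_{l-1}})$ and $\hat\sigma_t(\xi)=(\hat\sigma^1_t(\xi),\dots,\hat\sigma^d_t(\xi))\in\mathbb{R}^d$; $|\cdot|$ is the Euclidean norm. Hypothesis (H1): $k\in C^{2,2}(\Theta\times[0,1])$ and $k>0$ on $\Theta\times[0,1]$. *)

theory Defs
  imports "HOL-Probability.Probability"
begin

definition std_BM :: "'a measure \<Rightarrow> (real \<Rightarrow> 'a measure) \<Rightarrow> (real \<Rightarrow> 'a \<Rightarrow> real) \<Rightarrow> bool" where
  "std_BM M F W \<longleftrightarrow>
     prob_space M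
   \<and> (\<forall>t\<in>{0..1}. subalgebra M (F t))
   \<and> (\<forall>s t. 0 \<le> s \<longrightarrow> s \<le> t \<longrightarrow> t \<le> 1 \<longrightarrow> sets (F s) \<subseteq> sets (F t))
   \<and> (\<forall>t\<in>{0..1}. W t \<in> borel_measurable (F t))
   \<and> (\<forall>\<omega>\<in>space M. W 0 \<omega> = 0 \<and> continuous_on {0..1} (\<lambda>t. W t \<omega>))
   \<and> (\<forall>s t. 0 \<le> s \<longrightarrow> s < t \<longrightarrow> t \<le> 1 \<longrightarrow>
        distributed M lborel (\<lambda>\<omega>. W t \<omega> - W s \<omega>) (\<lambda>x. ennreal (normal_density 0 (sqrt (t - s)) x))
      \<and> prob_space.indep_set M (sets (F s))
           (sets (vimage_algebra (space M) (\<lambda>\<omega>. W t \<omega> - W s \<omega>) borel)))"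

text \<open>Limit of left-point Riemann sums along uniform partitions of [0,t]; for continuous
  paths and a C1 deterministic integrand this limit exists pathwise and is a version of the
  Ito integral.\<close>
definition ito_det :: "(real \<Rightarrow> real) \<Rightarrow> (real \<Rightarrow> 'a \<Rightarrow> real) \<Rightarrow> real \<Rightarrow> 'a \<Rightarrow> real" where
  "ito_det f W t \<omega> = lim (\<lambda>n. \<Sum>i<n. f (t * real i / real n) *
        (W (t * real (Suc i) / real n) \<omega> - W (t * real i / real n) \<omega>))"

definition kext :: "('q \<Rightarrow> real \<Rightarrow> real) \<Rightarrow> 'q \<Rightarrow> real \<Rightarrow> real" where
  "kext k \<xi> t = (if t < 0 then 0 else k \<xi> t)"

definition pdir :: "'q::finite \<Rightarrow> (real^'q \<Rightarrow> real) \<Rightarrow> real^'q \<Rightarrow> real" where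
  "pdir \<alpha> g \<xi> = deriv (\<lambda>h. g (\<xi> + h *\<^sub>R axis \<alpha> 1)) 0"

definition pd_xi :: "'q::finite \<Rightarrow> (real^'q \<Rightarrow> real \<Rightarrow> real) \<Rightarrow> real^'q \<Rightarrow> real \<Rightarrow> real" where
  "pd_xi \<alpha> f \<xi> t = pdir \<alpha> (\<lambda>x. f x t) \<xi>"

definition pd_t :: "('q \<Rightarrow> real \<Rightarrow> real) \<Rightarrow> 'q \<Rightarrow> real \<Rightarrow> real" where
  "pd_t f \<xi> t = deriv (f \<xi>) t"

text \<open>k is C^{2,2}: all derivatives of order at most 2 in xi and at most 2 in t exist and are
  continuous on the open set U.\<close>
definition C22_on :: "((real^'q::finite) \<times> real) set \<Rightarrow> (real^'q \<Rightarrow> real \<Rightarrow> real) \<Rightarrow> bool" where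
  "C22_on U k \<longleftrightarrow>
     (\<forall>g \<in> {k} \<union> {pd_xi \<alpha> k | \<alpha>. True}. \<forall>(\<xi>,t)\<in>U. \<forall>\<gamma>.
        (\<lambda>h. g (\<xi> + h *\<^sub>R axis \<gamma> 1) t) differentiable (at 0))
   \<and> (\<forall>g \<in> {k} \<union> {pd_xi \<alpha> k | \<alpha>. True} \<union> {pd_xi \<beta> (pd_xi \<alpha> k) | \<alpha> \<beta>. True}.
        (\<forall>(\<xi>,t)\<in>U. g \<xi> differentiable (at t) \<and> pd_t g \<xi> differentiable (at t))
      \<and> continuous_on U (\<lambda>(\<xi>,t). g \<xi> t)
      \<and> continuous_on U (\<lambda>(\<xi>,t). pd_t g \<xi> t)
      \<and> continuous_on U (\<lambda>(\<xi>,t). pd_t (pd_t g) \<xi> t))"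

definition H1 :: "(real^'q::finite) set \<Rightarrow> (real^'q \<Rightarrow> real \<Rightarrow> real) \<Rightarrow> bool" where
  "H1 \<Theta> k \<longleftrightarrow> (\<exists>U. open U \<and> \<Theta> \<times> {0..1} \<subseteq> U \<and> C22_on U k)
                \<and> (\<forall>\<xi>\<in>\<Theta>. \<forall>t\<in>{0..1}. k \<xi> t > 0)"

definition Vproc :: "('q \<Rightarrow> real \<Rightarrow> real) \<Rightarrow> 'q \<Rightarrow> (real \<Rightarrow> real) \<Rightarrow> (real \<Rightarrow> 'a \<Rightarrow> real)
                     \<Rightarrow> real \<Rightarrow> real \<Rightarrow> 'a \<Rightarrow> real" where
  "Vproc k \<theta> V0 W t u \<omega> =
     (if t \<le> u then V0 u * exp (ito_det (\<lambda>s. kext k \<theta> (u - s)) W t \<omega>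
                               - 1/2 * integral {0..t} (\<lambda>s. (kext k \<theta> (u - s))\<^sup>2))
      else 0)"

definition Iproc :: "('q \<Rightarrow> real \<Rightarrow> real) \<Rightarrow> 'q \<Rightarrow> (real \<Rightarrow> real) \<Rightarrow> (real \<Rightarrow> 'a \<Rightarrow> real)
                     \<Rightarrow> real \<Rightarrow> real \<Rightarrow> 'a \<Rightarrow> real" where
  "Iproc k \<theta> V0 W t T \<omega> = (if t < T then integral {t..T} (\<lambda>u. Vproc k \<theta> V0 W t u \<omega>) else 0)"

definition sigma_hat :: "('q \<Rightarrow> real \<Rightarrow> real) \<Rightarrow> 'q \<Rightarrow> (real \<Rightarrow> real) \<Rightarrow> (real \<Rightarrow> 'a \<Rightarrow> real)
                     \<Rightarrow> (nat \<Rightarrow> real) \<Rightarrow> nat \<Rightarrow> 'q \<Rightarrow> real \<Rightarrow> 'a \<Rightarrow> real" where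
  "sigma_hat k \<theta> V0 W Tg j \<xi> t \<omega> =
     (\<Sum>l\<in>{1..j}. kext k \<xi> (Tg l - t) *
        (Iproc k \<theta> V0 W t (Tg l) \<omega> - Iproc k \<theta> V0 W t (Tg (l - 1)) \<omega>))"

definition grid :: "nat \<Rightarrow> (nat \<Rightarrow> real) \<Rightarrow> bool" where
  "grid d Tg \<longleftrightarrow> Tg 0 = 0 \<and> (\<forall>l<d. Tg l < Tg (Suc l)) \<and> Tg d \<le> 1"

end

theory Submission
  imports Defs
begin


definition pt :: "real \<Rightarrow> real \<Rightarrow> nat \<Rightarrow> nat \<Rightarrow> real" where
  "pt a b n i = a + (b - a) * real i / real n"

lemma pt_mono: "a \<le> b \<Longrightarrow> pt a b n i \<le> pt a b n (Suc i)"
  unfolding pt_def by (cases "n = 0") (auto simp: divide_right_mono mult_left_mono)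

lemma pt_0[simp]: "pt a b n 0 = a" unfolding pt_def by simp
lemma pt_n[simp]: "n > 0 \<Longrightarrow> pt a b n n = b" unfolding pt_def by simp
lemma pt_diff: "n > 0 \<Longrightarrow> pt a b n (Suc i) - pt a b n i = (b - a) / real n"
  unfolding pt_def by (simp add: field_simps)

lemma pt_range: assumes "a \<le> b" "i \<le> n" shows "pt a b n i \<in> {a..b}"
proof (cases "n = 0")
  case True then show ?thesis using assms by (simp add: pt_def)
next
  case False
  have "(b - a) * real i / real n \<le> (b - a)"
    using assms False by (simp add: divide_le_eq mult_left_mono)
  moreover have "0 \<le> (b - a) * real i / real n" using assms by simp
  ultimately show ?thesis unfolding pt_def by auto
qed

lemma chain_mono:
  fixes x :: "nat \<Rightarrow> real"
  assumes "\<And>i. i < n \<Longrightarrow> x i \<le> x (Suc i)" "j \<le> k" "k \<le> n"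
  shows "x j \<le> x k"
  using assms
proof (induction k)
  case 0 then show ?case by simp
next
  case (Suc k)
  then show ?case by (cases "j = Suc k") (auto intro: order_trans)
qed

lemma integral_partition_sum:
  fixes x :: "nat \<Rightarrow> real" and f :: "real \<Rightarrow> real"
  assumes "\<And>i. i < n \<Longrightarrow> x i \<le> x (Suc i)" "continuous_on {x 0..x n} f"
  shows "integral {x 0..x n} f = (\<Sum>i<n. integral {x i..x (Suc i)} f)"
  using assms
proof (induction n)
  case 0 then show ?case by simp
next
  case (Suc n)
  have m1: "x 0 \<le> x n" by (rule chain_mono[of "Suc n"]) (use Suc.prems in auto)
  have m2: "x n \<le> x (Suc n)" using Suc.prems by auto
  have c: "continuous_on {x 0..x n} f"
    by (rule continuous_on_subset[OF Suc.prems(2)]) (use m2 in auto)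
  have "integral {x 0..x (Suc n)} f = integral {x 0..x n} f + integral {x n..x (Suc n)} f"
    using Henstock_Kurzweil_Integration.integral_combine[OF m1 m2 integrable_continuous_real[OF Suc.prems(2)]]
    by simp
  also have "integral {x 0..x n} f = (\<Sum>i<n. integral {x i..x (Suc i)} f)"
    using Suc.IH[OF _ c] Suc.prems by auto
  finally show ?case by simp
qed

lemma riemann_gen:
  fixes g h :: "real \<Rightarrow> real" and y :: "nat \<Rightarrow> nat \<Rightarrow> real"
  assumes ab: "a \<le> b" and cg: "continuous_on {a..b} g" and ch: "continuous_on {a..b} h"
    and y: "\<And>n i. i < n \<Longrightarrow> y n i \<in> {pt a b n i .. pt a b n (Suc i)}"
  shows "(\<lambda>n. \<Sum>i<n. g (y n i) * integral {pt a b n i .. pt a b n (Suc i)} h)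
           \<longlonglongrightarrow> integral {a..b} (\<lambda>r. g r * h r)"
proof (rule LIMSEQ_I)
  fix e :: real assume e: "0 < e"
  obtain B where B: "\<And>r. r \<in> {a..b} \<Longrightarrow> \<bar>h r\<bar> \<le> B"
    using compact_imp_bounded[OF compact_continuous_image[OF ch compact_Icc]]
    unfolding bounded_iff by fastforce
  have B0: "0 \<le> B" using B[of a] ab by auto
  define e' where "e' = e / ((b - a) * B + 1)"
  have e': "0 < e'" unfolding e'_def using e ab B0 by (auto intro!: divide_pos_pos add_nonneg_pos)
  obtain d where d: "d > 0" and dd: "\<And>x x'. x \<in> {a..b} \<Longrightarrow> x' \<in> {a..b} \<Longrightarrow> dist x' x < d \<Longrightarrow> dist (g x') (g x) < e'"
    using compact_uniformly_continuous[OF cg compact_Icc] e' unfolding uniformly_continuous_on_def by metis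
  obtain N :: nat where N: "(b - a) / d < real N" using reals_Archimedean2 by blast
  have "0 \<le> (b - a) / d" using ab d by simp
  then have N0: "N > 0" using N by (cases N) auto
  show "\<exists>no. \<forall>n\<ge>no. norm ((\<Sum>i<n. g (y n i) * integral {pt a b n i .. pt a b n (Suc i)} h)
           - integral {a..b} (\<lambda>r. g r * h r)) < e"
  proof (intro exI allI impI)
    fix n assume nN: "N \<le> n"
    have n0: "n > 0" using nN N0 by auto
    have mesh: "(b - a) / real n < d"
    proof -
      have "(b - a) / real n \<le> (b - a) / real N"
        using nN N0 ab by (intro divide_left_mono) auto
      also have "\<dots> < d" using N d N0 by (simp add: divide_less_eq mult.commute)
      finally show ?thesis .
    qed
    let ?x = "pt a b n"
    have mono: "\<And>i. ?x i \<le> ?x (Suc i)" using pt_mono[OF ab] by blast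
    have cgh: "continuous_on {a..b} (\<lambda>r. g r * h r)" by (intro continuous_intros cg ch)
    have sub: "\<And>i. i < n \<Longrightarrow> {?x i..?x (Suc i)} \<subseteq> {a..b}"
      using pt_range[OF ab] by (meson Suc_leI atLeastAtMost_iff less_imp_le_nat subsetI order_trans)
    have split: "integral {a..b} (\<lambda>r. g r * h r) = (\<Sum>i<n. integral {?x i..?x (Suc i)} (\<lambda>r. g r * h r))"
      using integral_partition_sum[of n ?x "\<lambda>r. g r * h r"] mono cgh n0 by simp
    have eq: "(\<Sum>i<n. g (y n i) * integral {?x i .. ?x (Suc i)} h) - integral {a..b} (\<lambda>r. g r * h r)
        = (\<Sum>i<n. integral {?x i..?x (Suc i)} (\<lambda>r. (g (y n i) - g r) * h r))"
    proof -
      have "\<And>i. i < n \<Longrightarrow> g (y n i) * integral {?x i .. ?x (Suc i)} h - integral {?x i..?x (Suc i)} (\<lambda>r. g r * h r)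
           = integral {?x i..?x (Suc i)} (\<lambda>r. (g (y n i) - g r) * h r)"
      proof -
        fix i assume i: "i < n"
        have ih: "h integrable_on {?x i..?x (Suc i)}"
          by (rule integrable_continuous_real, rule continuous_on_subset[OF ch sub[OF i]])
        have igh: "(\<lambda>r. g r * h r) integrable_on {?x i..?x (Suc i)}"
          by (rule integrable_continuous_real, rule continuous_on_subset[OF cgh sub[OF i]])
        have "integral {?x i..?x (Suc i)} (\<lambda>r. (g (y n i) - g r) * h r)
            = integral {?x i..?x (Suc i)} (\<lambda>r. g (y n i) * h r - g r * h r)"
          by (simp add: algebra_simps)
        also have "\<dots> = integral {?x i..?x (Suc i)} (\<lambda>r. g (y n i) * h r) - integral {?x i..?x (Suc i)} (\<lambda>r. g r * h r)"
          by (rule integral_diff[OF integrable_on_mult_right[OF ih] igh])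
        also have "integral {?x i..?x (Suc i)} (\<lambda>r. g (y n i) * h r) = g (y n i) * integral {?x i .. ?x (Suc i)} h"
          by simp
        finally show "g (y n i) * integral {?x i .. ?x (Suc i)} h - integral {?x i..?x (Suc i)} (\<lambda>r. g r * h r)
           = integral {?x i..?x (Suc i)} (\<lambda>r. (g (y n i) - g r) * h r)" by simp
      qed
      then show ?thesis unfolding split sum_subtractf[symmetric] by (intro sum.cong) auto
    qed
    have bnd: "\<And>i. i < n \<Longrightarrow> norm (integral {?x i..?x (Suc i)} (\<lambda>r. (g (y n i) - g r) * h r))
          \<le> e' * B * (?x (Suc i) - ?x i)"
    proof -
      fix i assume i: "i < n"
      have yi: "y n i \<in> {a..b}" using y[OF i] sub[OF i] by auto
      show "norm (integral {?x i..?x (Suc i)} (\<lambda>r. (g (y n i) - g r) * h r)) \<le> e' * B * (?x (Suc i) - ?x i)"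
      proof (rule integral_bound[OF mono])
        show "continuous_on {?x i..?x (Suc i)} (\<lambda>r. (g (y n i) - g r) * h r)"
          by (rule continuous_on_subset[OF _ sub[OF i]]) (intro continuous_intros cg ch)
        fix r assume r: "r \<in> {?x i..?x (Suc i)}"
        have rab: "r \<in> {a..b}" using r sub[OF i] by auto
        have "dist (y n i) r \<le> ?x (Suc i) - ?x i" using r y[OF i] by (auto simp: dist_real_def)
        also have "\<dots> = (b - a) / real n" using pt_diff[OF n0] .
        finally have "dist (y n i) r < d" using mesh by simp
        then have "\<bar>g (y n i) - g r\<bar> \<le> e'" using dd[OF rab yi] by (simp add: dist_real_def)
        then show "norm ((g (y n i) - g r) * h r) \<le> e' * B"
          using B[OF rab] e' by (simp add: abs_mult mult_mono')
      qed
    qed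
    have "norm (\<Sum>i<n. integral {?x i..?x (Suc i)} (\<lambda>r. (g (y n i) - g r) * h r))
        \<le> (\<Sum>i<n. e' * B * (?x (Suc i) - ?x i))"
      using bnd by (intro order_trans[OF norm_sum] sum_mono) auto
    also have "\<dots> = e' * B * (b - a)"
      using n0 by (simp add: sum_distrib_left[symmetric] sum_lessThan_telescope)
    also have "\<dots> < e"
    proof -
      have "e' * B * (b - a) = e * ((b - a) * B) / ((b - a) * B + 1)" unfolding e'_def by (simp add: field_simps)
      also have "\<dots> < e" using e ab B0 by (simp add: divide_less_eq add_nonneg_pos)
      finally show ?thesis .
    qed
    finally show "norm ((\<Sum>i<n. g (y n i) * integral {pt a b n i .. pt a b n (Suc i)} h)
           - integral {a..b} (\<lambda>r. g r * h r)) < e" using eq by simp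
  qed
qed

lemma riemann_sum:
  fixes g :: "real \<Rightarrow> real"
  assumes ab: "a \<le> b" and cg: "continuous_on {a..b} g"
  shows "(\<lambda>n. \<Sum>i<n. g (pt a b n i) * ((b - a) / real n)) \<longlonglongrightarrow> integral {a..b} g"
proof -
  have "(\<lambda>n. \<Sum>i<n. g (pt a b n i) * integral {pt a b n i .. pt a b n (Suc i)} (\<lambda>_. 1::real))
           \<longlonglongrightarrow> integral {a..b} (\<lambda>r. g r * 1)"
    by (rule riemann_gen[OF ab cg]) (auto intro: pt_mono[OF ab])
  moreover have "\<And>n. (\<Sum>i<n. g (pt a b n i) * integral {pt a b n i .. pt a b n (Suc i)} (\<lambda>_. 1::real))
     = (\<Sum>i<n. g (pt a b n i) * ((b - a) / real n))"
  proof (intro sum.cong refl)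
    fix n i :: nat assume "i \<in> {..<n}"
    then have "n > 0" by auto
    then show "g (pt a b n i) * integral {pt a b n i .. pt a b n (Suc i)} (\<lambda>_. 1::real) = g (pt a b n i) * ((b - a) / real n)"
      using pt_mono[OF ab, of n i] pt_diff[of n a b i] by simp
  qed
  ultimately show ?thesis by simp
qed

lemma sum_by_parts:
  fixes f w :: "nat \<Rightarrow> real"
  shows "(\<Sum>i<n. f i * (w (Suc i) - w i)) = f n * w n - f 0 * w 0 - (\<Sum>i<n. w (Suc i) * (f (Suc i) - f i))"
  by (induction n) (auto simp: algebra_simps)

lemma ibp_rs:
  fixes f f' w :: "real \<Rightarrow> real"
  assumes ab: "a \<le> b" and df: "\<And>x. x \<in> {a..b} \<Longrightarrow> (f has_real_derivative f' x) (at x within {a..b})"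
    and cf': "continuous_on {a..b} f'" and cw: "continuous_on {a..b} w"
  shows "(\<lambda>n. \<Sum>i<n. f (pt a b n i) * (w (pt a b n (Suc i)) - w (pt a b n i)))
           \<longlonglongrightarrow> f b * w b - f a * w a - integral {a..b} (\<lambda>r. w r * f' r)"
proof -
  have lim: "(\<lambda>n. \<Sum>i<n. w (pt a b n (Suc i)) * integral {pt a b n i .. pt a b n (Suc i)} f')
           \<longlonglongrightarrow> integral {a..b} (\<lambda>r. w r * f' r)"
    by (rule riemann_gen[OF ab cw cf']) (auto intro: pt_mono[OF ab])
  have ftc: "\<And>n i. i < (n::nat) \<Longrightarrow> integral {pt a b n i .. pt a b n (Suc i)} f' = f (pt a b n (Suc i)) - f (pt a b n i)"
  proof -
    fix n i :: nat assume i: "i < n"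
    have sub: "{pt a b n i..pt a b n (Suc i)} \<subseteq> {a..b}"
      using pt_range[OF ab, of i n] pt_range[OF ab, of "Suc i" n] i by auto
    show "integral {pt a b n i .. pt a b n (Suc i)} f' = f (pt a b n (Suc i)) - f (pt a b n i)"
    proof (rule integral_unique, rule fundamental_theorem_of_calculus[OF pt_mono[OF ab]])
      fix x assume "x \<in> {pt a b n i..pt a b n (Suc i)}"
      then show "(f has_vector_derivative f' x) (at x within {pt a b n i..pt a b n (Suc i)})"
        using df[of x] sub by (auto simp: has_real_derivative_iff_has_vector_derivative[symmetric]
            intro: DERIV_subset)
    qed
  qed
  have ev: "\<forall>\<^sub>F n in sequentially. f b * w b - f a * w a - (\<Sum>i<n. w (pt a b n (Suc i)) * integral {pt a b n i .. pt a b n (Suc i)} f')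
     = (\<Sum>i<n. f (pt a b n i) * (w (pt a b n (Suc i)) - w (pt a b n i)))"
  proof (rule eventually_sequentiallyI[of 1])
    fix n :: nat assume "1 \<le> n"
    then have n0: "n > 0" by simp
    have "(\<Sum>i<n. f (pt a b n i) * (w (pt a b n (Suc i)) - w (pt a b n i)))
       = f b * w b - f a * w a - (\<Sum>i<n. w (pt a b n (Suc i)) * (f (pt a b n (Suc i)) - f (pt a b n i)))"
      using sum_by_parts[of "\<lambda>i. f (pt a b n i)" "\<lambda>i. w (pt a b n i)" n] n0 by simp
    also have "(\<Sum>i<n. w (pt a b n (Suc i)) * (f (pt a b n (Suc i)) - f (pt a b n i)))
        = (\<Sum>i<n. w (pt a b n (Suc i)) * integral {pt a b n i .. pt a b n (Suc i)} f')"
      using ftc by (intro sum.cong) auto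
    finally show "f b * w b - f a * w a - (\<Sum>i<n. w (pt a b n (Suc i)) * integral {pt a b n i .. pt a b n (Suc i)} f')
     = (\<Sum>i<n. f (pt a b n i) * (w (pt a b n (Suc i)) - w (pt a b n i)))" by simp
  qed
  show ?thesis
    by (rule Lim_transform_eventually[OF tendsto_diff[OF tendsto_const lim] ev])
qed


lemma normal_density_exp_shift:
  assumes "\<sigma> > 0"
  shows "normal_density 0 \<sigma> x * exp (c * x) = exp (c\<^sup>2 * \<sigma>\<^sup>2 / 2) * normal_density (c * \<sigma>\<^sup>2) \<sigma> x"
proof -
  have "-(x - 0)\<^sup>2 / (2 * \<sigma>\<^sup>2) + c * x = c\<^sup>2 * \<sigma>\<^sup>2 / 2 + (-(x - c * \<sigma>\<^sup>2)\<^sup>2 / (2 * \<sigma>\<^sup>2))"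
    using assms by (simp add: field_simps power2_eq_square)
  then show ?thesis unfolding normal_density_def
    by (simp add: exp_add[symmetric] mult.assoc mult.left_commute[of "exp _"])
qed

lemma (in prob_space) gauss_mgf:
  assumes D: "distributed M lborel X (\<lambda>x. ennreal (normal_density 0 \<sigma> x))" and s: "\<sigma> > 0"
  shows "integrable M (\<lambda>\<omega>. exp (c * X \<omega>))" "(\<integral>\<omega>. exp (c * X \<omega>) \<partial>M) = exp (c\<^sup>2 * \<sigma>\<^sup>2 / 2)"
proof -
  have eq: "(\<lambda>x. normal_density 0 \<sigma> x * exp (c * x)) = (\<lambda>x. exp (c\<^sup>2 * \<sigma>\<^sup>2 / 2) * normal_density (c * \<sigma>\<^sup>2) \<sigma> x)"
    using normal_density_exp_shift[OF s] by auto
  have "integrable lborel (\<lambda>x. normal_density 0 \<sigma> x * exp (c * x))"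
    unfolding eq using s by simp
  then show "integrable M (\<lambda>\<omega>. exp (c * X \<omega>))"
    using distributed_integrable[OF D, of "\<lambda>x. exp (c * x)"] by simp
  have "(\<integral>\<omega>. exp (c * X \<omega>) \<partial>M) = (\<integral>x. normal_density 0 \<sigma> x * exp (c * x) \<partial>lborel)"
    using distributed_integral[OF D, of "\<lambda>x. exp (c * x)"] by simp
  also have "\<dots> = exp (c\<^sup>2 * \<sigma>\<^sup>2 / 2)" unfolding eq using s by simp
  finally show "(\<integral>\<omega>. exp (c * X \<omega>) \<partial>M) = exp (c\<^sup>2 * \<sigma>\<^sup>2 / 2)" .
qed

lemma fatou_bound:
  fixes f :: "nat \<Rightarrow> 'a \<Rightarrow> real" and g :: "'a \<Rightarrow> real"
  assumes fm: "\<And>n. f n \<in> borel_measurable M" and f0: "\<And>n x. x \<in> space M \<Longrightarrow> 0 \<le> f n x"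
    and lim: "\<And>x. x \<in> space M \<Longrightarrow> (\<lambda>n. f n x) \<longlonglongrightarrow> g x"
    and fi: "\<And>n. integrable M (f n)" and fB: "\<And>n. (\<integral>x. f n x \<partial>M) \<le> B"
  shows "integrable M g \<and> (\<integral>x. g x \<partial>M) \<le> B"
proof -
  have gm: "g \<in> borel_measurable M" by (rule borel_measurable_LIMSEQ_metric[OF fm lim])
  have g0: "\<And>x. x \<in> space M \<Longrightarrow> 0 \<le> g x"
    using lim f0 by (meson LIMSEQ_le_const)
  have "0 \<le> (\<integral>x. f 0 x \<partial>M)" by (rule integral_nonneg_AE) (use f0 in \<open>simp add: AE_I2\<close>)
  then have B0: "0 \<le> B" using fB[of 0] by linarith
  have "(\<integral>\<^sup>+x. ennreal (g x) \<partial>M) = (\<integral>\<^sup>+x. liminf (\<lambda>n. ennreal (f n x)) \<partial>M)"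
  proof (rule nn_integral_cong)
    fix x assume "x \<in> space M"
    then have "(\<lambda>n. ennreal (f n x)) \<longlonglongrightarrow> ennreal (g x)" using lim by (intro tendsto_ennrealI) auto
    then show "ennreal (g x) = liminf (\<lambda>n. ennreal (f n x))" using lim_imp_Liminf by force
  qed
  also have "\<dots> \<le> liminf (\<lambda>n. \<integral>\<^sup>+x. ennreal (f n x) \<partial>M)"
    by (rule nn_integral_liminf) (use fm in simp)
  also have "\<dots> = liminf (\<lambda>n. ennreal (\<integral>x. f n x \<partial>M))"
    using nn_integral_eq_integral[OF fi] f0 by (simp add: AE_I2)
  also have "\<dots> \<le> ennreal B"
  proof -
    have "liminf (\<lambda>n. ennreal (\<integral>x. f n x \<partial>M)) \<le> limsup (\<lambda>n. ennreal (\<integral>x. f n x \<partial>M))"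
      by (rule Liminf_le_Limsup) simp
    also have "\<dots> \<le> ennreal B" by (rule Limsup_bounded) (use fB in \<open>auto intro!: always_eventually ennreal_leI\<close>)
    finally show ?thesis .
  qed
  finally have nn: "(\<integral>\<^sup>+x. ennreal (g x) \<partial>M) \<le> ennreal B" .
  have ig: "integrable M g"
  proof (rule integrableI_nonneg[OF gm])
    show "AE x in M. 0 \<le> g x" using g0 by (simp add: AE_I2)
    show "(\<integral>\<^sup>+x. ennreal (g x) \<partial>M) < \<infinity>" using nn by (simp add: le_less_trans)
  qed
  have "ennreal (\<integral>x. g x \<partial>M) = (\<integral>\<^sup>+x. ennreal (g x) \<partial>M)"
    using nn_integral_eq_integral[OF ig] g0 by (simp add: AE_I2)
  then have "ennreal (\<integral>x. g x \<partial>M) \<le> ennreal B" using nn by simp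
  then show ?thesis using ig B0 by simp
qed

locale bm =
  fixes M :: "'a measure" and F :: "real \<Rightarrow> 'a measure" and W :: "real \<Rightarrow> 'a \<Rightarrow> real"
  assumes BM: "std_BM M F W"
begin

lemma ps: "prob_space M" using BM unfolding std_BM_def by auto

sublocale prob_space M by (rule ps)

lemma subF: "t \<in> {0..1} \<Longrightarrow> subalgebra M (F t)" using BM unfolding std_BM_def by auto
lemma monoF: "0 \<le> s \<Longrightarrow> s \<le> t \<Longrightarrow> t \<le> 1 \<Longrightarrow> sets (F s) \<subseteq> sets (F t)"
  using BM unfolding std_BM_def by auto
lemma adapt: "t \<in> {0..1} \<Longrightarrow> W t \<in> borel_measurable (F t)" using BM unfolding std_BM_def by auto
lemma W0: "\<omega> \<in> space M \<Longrightarrow> W 0 \<omega> = 0" using BM unfolding std_BM_def by auto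
lemma Wcont: "\<omega> \<in> space M \<Longrightarrow> continuous_on {0..1} (\<lambda>t. W t \<omega>)" using BM unfolding std_BM_def by auto
lemma incr_distr: "0 \<le> s \<Longrightarrow> s < t \<Longrightarrow> t \<le> 1 \<Longrightarrow>
   distributed M lborel (\<lambda>\<omega>. W t \<omega> - W s \<omega>) (\<lambda>x. ennreal (normal_density 0 (sqrt (t - s)) x))"
  using BM unfolding std_BM_def by auto
lemma incr_indep: "0 \<le> s \<Longrightarrow> s < t \<Longrightarrow> t \<le> 1 \<Longrightarrow>
   indep_set (sets (F s)) (sets (vimage_algebra (space M) (\<lambda>\<omega>. W t \<omega> - W s \<omega>) borel))"
  using BM unfolding std_BM_def by auto

lemma F_le: assumes "0 \<le> s" "s \<le> t" "t \<le> 1" "f \<in> measurable (F s) N" shows "f \<in> measurable (F t) N"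
proof (rule measurable_from_subalg[OF _ assms(4)])
  show "subalgebra (F t) (F s)"
    using subF[of s] subF[of t] monoF[OF assms(1-3)] assms unfolding subalgebra_def by auto
qed

lemma W_meas[measurable]: "t \<in> {0..1} \<Longrightarrow> W t \<in> borel_measurable M"
  using measurable_from_subalg[OF subF adapt] by blast

lemma incr_mgf:
  assumes "0 \<le> s" "s \<le> t" "t \<le> 1"
  shows "integrable M (\<lambda>\<omega>. exp (c * (W t \<omega> - W s \<omega>)))"
    "(\<integral>\<omega>. exp (c * (W t \<omega> - W s \<omega>)) \<partial>M) = exp (c\<^sup>2 * (t - s) / 2)"
proof -
  have "integrable M (\<lambda>\<omega>. exp (c * (W t \<omega> - W s \<omega>))) \<and> (\<integral>\<omega>. exp (c * (W t \<omega> - W s \<omega>)) \<partial>M) = exp (c\<^sup>2 * (t - s) / 2)"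
  proof (cases "s = t")
    case True then show ?thesis by (simp add: prob_space)
  next
    case False
    then have st: "s < t" using assms by auto
    have sq: "(sqrt (t - s))\<^sup>2 = t - s" using st by simp
    show ?thesis using gauss_mgf[OF incr_distr[OF assms(1) st assms(3)], of c] st sq by auto
  qed
  then show "integrable M (\<lambda>\<omega>. exp (c * (W t \<omega> - W s \<omega>)))"
    "(\<integral>\<omega>. exp (c * (W t \<omega> - W s \<omega>)) \<partial>M) = exp (c\<^sup>2 * (t - s) / 2)" by auto
qed

lemma indep_from_filtration:
  assumes "0 \<le> s" "s < t" "t \<le> 1"
    and P: "P \<in> borel_measurable (F s)" and g: "g \<in> borel_measurable borel"
  shows "indep_var borel P borel (\<lambda>\<omega>. g (W t \<omega> - W s \<omega>))"
proof -
  let ?V = "vimage_algebra (space M) (\<lambda>\<omega>. W t \<omega> - W s \<omega>) borel"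
  have sF: "space (F s) = space M" using subF[of s] assms unfolding subalgebra_def by auto
  have PM: "P \<in> borel_measurable M" using measurable_from_subalg[OF subF P] assms by auto
  have Q: "(\<lambda>\<omega>. g (W t \<omega> - W s \<omega>)) \<in> borel_measurable ?V"
    using measurable_comp[OF measurable_vimage_algebra1 g, of "\<lambda>\<omega>. W t \<omega> - W s \<omega>" "space M"]
    by (simp add: comp_def)
  have QM: "(\<lambda>\<omega>. g (W t \<omega> - W s \<omega>)) \<in> borel_measurable M"
  proof -
    have "t \<in> {0..1}" "s \<in> {0..1}" using assms by auto
    note [measurable] = W_meas[OF this(1)] W_meas[OF this(2)]
    show ?thesis using g by measurable
  qed
  have s1: "sigma_sets (space M) {P -` A \<inter> space M | A. A \<in> sets borel} \<subseteq> sets (F s)"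
  proof -
    have "{P -` A \<inter> space M | A. A \<in> sets borel} \<subseteq> sets (F s)"
      using measurable_sets[OF P] sF by auto
    then have "sigma_sets (space (F s)) {P -` A \<inter> space M | A. A \<in> sets borel} \<subseteq> sets (F s)"
      by (simp only: sigma_sets_le_sets_iff)
    then show ?thesis using sF by simp
  qed
  have s2: "sigma_sets (space M) {(\<lambda>\<omega>. g (W t \<omega> - W s \<omega>)) -` A \<inter> space M | A. A \<in> sets borel} \<subseteq> sets ?V"
  proof -
    have sV: "space ?V = space M" by simp
    have "{(\<lambda>\<omega>. g (W t \<omega> - W s \<omega>)) -` A \<inter> space M | A. A \<in> sets borel} \<subseteq> sets ?V"
      using measurable_sets[OF Q] sV by auto
    then have "sigma_sets (space ?V) {(\<lambda>\<omega>. g (W t \<omega> - W s \<omega>)) -` A \<inter> space M | A. A \<in> sets borel} \<subseteq> sets ?V"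
      by (simp only: sigma_sets_le_sets_iff)
    then show ?thesis using sV by simp
  qed
  have I: "indep_set (sets (F s)) (sets ?V)" by (rule incr_indep[OF assms(1-3)])
  have "indep_set (sigma_sets (space M) {P -` A \<inter> space M | A. A \<in> sets borel})
      (sigma_sets (space M) {(\<lambda>\<omega>. g (W t \<omega> - W s \<omega>)) -` A \<inter> space M | A. A \<in> sets borel})"
    using I s1 s2 unfolding indep_sets2_eq by blast
  then show ?thesis unfolding indep_var_eq using PM QM by auto
qed

lemma mgf_sum:
  fixes x :: "nat \<Rightarrow> real" and c :: "nat \<Rightarrow> real"
  assumes "\<And>i. i < m \<Longrightarrow> x i \<le> x (Suc i)" "0 \<le> x 0" "x m \<le> 1"
  shows "integrable M (\<lambda>\<omega>. exp (\<Sum>i<m. c i * (W (x (Suc i)) \<omega> - W (x i) \<omega>))) \<and>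
         (\<integral>\<omega>. exp (\<Sum>i<m. c i * (W (x (Suc i)) \<omega> - W (x i) \<omega>)) \<partial>M) = exp (\<Sum>i<m. (c i)\<^sup>2 * (x (Suc i) - x i) / 2)"
  using assms
proof (induction m)
  case 0 then show ?case by (simp add: prob_space)
next
  case (Suc m)
  have xm: "x m \<le> x (Suc m)" using Suc.prems by auto
  have x0m: "x 0 \<le> x m" by (rule chain_mono[of m]) (use Suc.prems in auto)
  have IH: "integrable M (\<lambda>\<omega>. exp (\<Sum>i<m. c i * (W (x (Suc i)) \<omega> - W (x i) \<omega>))) \<and>
         (\<integral>\<omega>. exp (\<Sum>i<m. c i * (W (x (Suc i)) \<omega> - W (x i) \<omega>)) \<partial>M) = exp (\<Sum>i<m. (c i)\<^sup>2 * (x (Suc i) - x i) / 2)"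
    using Suc.IH Suc.prems xm by auto
  let ?P = "\<lambda>\<omega>. exp (\<Sum>i<m. c i * (W (x (Suc i)) \<omega> - W (x i) \<omega>))"
  let ?Q = "\<lambda>\<omega>. exp (c m * (W (x (Suc m)) \<omega> - W (x m) \<omega>))"
  have split: "(\<lambda>\<omega>. exp (\<Sum>i<Suc m. c i * (W (x (Suc i)) \<omega> - W (x i) \<omega>))) = (\<lambda>\<omega>. ?P \<omega> * ?Q \<omega>)"
    by (simp add: exp_add)
  have split2: "exp (\<Sum>i<Suc m. (c i)\<^sup>2 * (x (Suc i) - x i) / 2) = exp (\<Sum>i<m. (c i)\<^sup>2 * (x (Suc i) - x i) / 2) * exp ((c m)\<^sup>2 * (x (Suc m) - x m) / 2)"
    by (simp add: exp_add)
  have Q: "integrable M ?Q" "(\<integral>\<omega>. ?Q \<omega> \<partial>M) = exp ((c m)\<^sup>2 * (x (Suc m) - x m) / 2)"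
    using incr_mgf[of "x m" "x (Suc m)" "c m"] Suc.prems xm x0m by auto
  show ?case
  proof (cases "x m = x (Suc m)")
    case True
    then show ?thesis using IH unfolding split split2 by simp
  next
    case False
    then have lt: "x m < x (Suc m)" using xm by auto
    have measF: "\<And>i. i \<le> m \<Longrightarrow> W (x i) \<in> borel_measurable (F (x m))"
    proof -
      fix i assume i: "i \<le> m"
      have "x 0 \<le> x i" "x i \<le> x m" by (rule chain_mono[of "Suc m"], use Suc.prems i in auto)+
      then show "W (x i) \<in> borel_measurable (F (x m))"
        using F_le[of "x i" "x m", OF _ _ _ adapt[of "x i"]] Suc.prems xm by auto
    qed
    have S: "(\<lambda>\<omega>. \<Sum>i<m. c i * (W (x (Suc i)) \<omega> - W (x i) \<omega>)) \<in> borel_measurable (F (x m))"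
      by (rule borel_measurable_sum) (auto intro!: borel_measurable_times borel_measurable_diff measF)
    have Pm: "?P \<in> borel_measurable (F (x m))"
      using measurable_compose[OF S borel_measurable_exp] by simp
    have ind: "indep_var borel ?P borel ?Q"
      using indep_from_filtration[OF _ lt _ Pm, of "\<lambda>y. exp (c m * y)"] Suc.prems x0m by auto
    show ?thesis unfolding split split2
      using indep_var_lebesgue_integral[OF ind] indep_var_integrable[OF ind] IH Q by auto
  qed
qed

lemma rs_meas:
  assumes "0 \<le> a" "a \<le> b" "b \<le> 1"
  shows "(\<lambda>\<omega>. \<Sum>i<n. c i * (W (pt a b n (Suc i)) \<omega> - W (pt a b n i) \<omega>)) \<in> borel_measurable M"
proof (rule borel_measurable_sum)
  fix i assume "i \<in> {..<n}"
  then have "pt a b n i \<in> {0..1}" "pt a b n (Suc i) \<in> {0..1}"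
    using pt_range[OF assms(2), of i n] pt_range[OF assms(2), of "Suc i" n] assms by auto
  then show "(\<lambda>\<omega>. c i * (W (pt a b n (Suc i)) \<omega> - W (pt a b n i) \<omega>)) \<in> borel_measurable M"
    by (intro borel_measurable_times borel_measurable_diff borel_measurable_const W_meas)
qed

lemma rs_lim:
  assumes "0 \<le> a" "a \<le> b" "b \<le> 1"
    and df: "\<And>x. x \<in> {a..b} \<Longrightarrow> (f has_real_derivative f' x) (at x within {a..b})"
    and cf': "continuous_on {a..b} f'" and \<omega>: "\<omega> \<in> space M"
  shows "(\<lambda>n. \<Sum>i<n. f (pt a b n i) * (W (pt a b n (Suc i)) \<omega> - W (pt a b n i) \<omega>))
     \<longlonglongrightarrow> f b * W b \<omega> - f a * W a \<omega> - integral {a..b} (\<lambda>r. W r \<omega> * f' r)"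
proof (rule ibp_rs[OF assms(2) df cf'])
  show "continuous_on {a..b} (\<lambda>r. W r \<omega>)"
    by (rule continuous_on_subset[OF Wcont[OF \<omega>]]) (use assms in auto)
qed auto

lemma mgf_J:
  assumes ab: "0 \<le> a" "a \<le> b" "b \<le> 1"
    and df: "\<And>x. x \<in> {a..b} \<Longrightarrow> (f has_real_derivative f' x) (at x within {a..b})"
    and cf': "continuous_on {a..b} f'" and K: "\<And>x. x \<in> {a..b} \<Longrightarrow> \<bar>f x\<bar> \<le> K"
  defines "J \<equiv> \<lambda>\<omega>. f b * W b \<omega> - f a * W a \<omega> - integral {a..b} (\<lambda>r. W r \<omega> * f' r)"
  shows "J \<in> borel_measurable M" "integrable M (\<lambda>\<omega>. exp (l * J \<omega>))"
    "(\<integral>\<omega>. exp (l * J \<omega>) \<partial>M) \<le> exp (l\<^sup>2 * K\<^sup>2 * (b - a) / 2)"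
proof -
  let ?S = "\<lambda>n \<omega>. \<Sum>i<n. f (pt a b n i) * (W (pt a b n (Suc i)) \<omega> - W (pt a b n i) \<omega>)"
  have lim: "\<And>\<omega>. \<omega> \<in> space M \<Longrightarrow> (\<lambda>n. ?S n \<omega>) \<longlonglongrightarrow> J \<omega>"
    unfolding J_def by (rule rs_lim[OF ab df cf'])
  have Sm: "\<And>n. ?S n \<in> borel_measurable M" by (rule rs_meas[OF ab])
  show Jm: "J \<in> borel_measurable M" by (rule borel_measurable_LIMSEQ_metric[OF Sm lim])
  have "integrable M (\<lambda>\<omega>. exp (l * J \<omega>)) \<and> (\<integral>\<omega>. exp (l * J \<omega>) \<partial>M) \<le> exp (l\<^sup>2 * K\<^sup>2 * (b - a) / 2)"
  proof (rule fatou_bound[where f = "\<lambda>n \<omega>. exp (l * ?S n \<omega>)"])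
    show "\<And>n. (\<lambda>\<omega>. exp (l * ?S n \<omega>)) \<in> borel_measurable M"
      using Sm by measurable
    show "\<And>n x. 0 \<le> exp (l * ?S n x)" by simp
    show "\<And>x. x \<in> space M \<Longrightarrow> (\<lambda>n. exp (l * ?S n x)) \<longlonglongrightarrow> exp (l * J x)"
      by (intro tendsto_exp tendsto_mult tendsto_const lim)
    fix n
    have mono: "\<And>i. i < n \<Longrightarrow> pt a b n i \<le> pt a b n (Suc i)" using pt_mono[OF ab(2)] by blast
    have pn: "pt a b n n \<le> 1" using ab by (cases "n = 0") auto
    have eq: "(\<lambda>\<omega>. exp (l * ?S n \<omega>)) = (\<lambda>\<omega>. exp (\<Sum>i<n. (l * f (pt a b n i)) * (W (pt a b n (Suc i)) \<omega> - W (pt a b n i) \<omega>)))"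
      by (simp add: sum_distrib_left mult.assoc)
    note ms = mgf_sum[of n "pt a b n" "\<lambda>i. l * f (pt a b n i)", OF mono _ pn]
    show "integrable M (\<lambda>\<omega>. exp (l * ?S n \<omega>))" unfolding eq using ms ab by simp
    have "(\<integral>\<omega>. exp (l * ?S n \<omega>) \<partial>M) = exp (\<Sum>i<n. (l * f (pt a b n i))\<^sup>2 * (pt a b n (Suc i) - pt a b n i) / 2)"
      unfolding eq using ms ab by simp
    also have "\<dots> \<le> exp (l\<^sup>2 * K\<^sup>2 * (b - a) / 2)"
    proof (cases "n = 0")
      case True then show ?thesis using ab by simp
    next
      case False
      have "(\<Sum>i<n. (l * f (pt a b n i))\<^sup>2 * (pt a b n (Suc i) - pt a b n i) / 2)
          \<le> (\<Sum>i<n. (l\<^sup>2 * K\<^sup>2) * (pt a b n (Suc i) - pt a b n i) / 2)"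
      proof (intro sum_mono divide_right_mono mult_right_mono)
        fix i assume "i \<in> {..<n}"
        then have "pt a b n i \<in> {a..b}" using pt_range[OF ab(2), of i n] by auto
        then have "(f (pt a b n i))\<^sup>2 \<le> K\<^sup>2" using K by (metis abs_ge_zero order_trans power2_abs power_mono)
        then show "(l * f (pt a b n i))\<^sup>2 \<le> l\<^sup>2 * K\<^sup>2" by (simp add: power_mult_distrib mult_left_mono)
        show "0 \<le> pt a b n (Suc i) - pt a b n i" using pt_mono[OF ab(2)] by simp
      qed simp
      also have "\<dots> = l\<^sup>2 * K\<^sup>2 * (b - a) / 2"
        using False by (simp add: sum_divide_distrib[symmetric] sum_distrib_left[symmetric] sum_lessThan_telescope)
      finally show ?thesis by simp
    qed
    finally show "(\<integral>\<omega>. exp (l * ?S n \<omega>) \<partial>M) \<le> exp (l\<^sup>2 * K\<^sup>2 * (b - a) / 2)" .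
  qed
  then show "integrable M (\<lambda>\<omega>. exp (l * J \<omega>))" "(\<integral>\<omega>. exp (l * J \<omega>) \<partial>M) \<le> exp (l\<^sup>2 * K\<^sup>2 * (b - a) / 2)"
    by auto
qed

end


lemma exp_minus_one_bound: fixes y :: real shows "\<bar>exp y - 1\<bar> \<le> \<bar>y\<bar> * exp \<bar>y\<bar>"
proof (cases "y \<ge> 0")
  case True
  have "exp (-y) \<ge> 1 - y" using exp_ge_add_one_self[of "-y"] by simp
  then have "exp y * (1 - y) \<le> exp y * exp (-y)" by (simp add: mult_left_mono)
  then have "exp y * (1 - y) \<le> 1" by (simp add: exp_minus field_simps)
  then show ?thesis using True by (simp add: algebra_simps)
next
  case False
  have "exp y \<ge> 1 + y" using exp_ge_add_one_self[of y] by simp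
  moreover have "exp y \<le> 1" using False by simp
  moreover have "\<bar>y\<bar> * 1 \<le> \<bar>y\<bar> * exp \<bar>y\<bar>" by (intro mult_left_mono) auto
  moreover have "\<bar>exp y - 1\<bar> = 1 - exp y" using \<open>exp y \<le> 1\<close> by simp
  moreover have "\<bar>y\<bar> = - y" using False by simp
  ultimately show ?thesis by linarith
qed

lemma pow_le_exp: assumes "0 \<le> x" shows "x ^ N \<le> real N ^ N * exp x"
proof (cases "N = 0")
  case True then show ?thesis using assms by simp
next
  case False
  have "x \<le> real N * exp (x / real N)"
  proof -
    have "x / real N \<le> exp (x / real N)" using exp_ge_add_one_self[of "x / real N"] by linarith
    then have "real N * (x / real N) \<le> real N * exp (x / real N)" by (intro mult_left_mono) auto
    then show ?thesis using False by simp
  qed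
  then have "x ^ N \<le> (real N * exp (x / real N)) ^ N" using assms by (intro power_mono) auto
  also have "\<dots> = real N ^ N * exp x"
    using False by (simp add: power_mult_distrib exp_of_nat_mult[symmetric])
  finally show ?thesis .
qed

context prob_space
begin

lemma exp_abs_mgf:
  fixes J :: "'a \<Rightarrow> real"
  assumes Jm: "J \<in> borel_measurable M" and l: "0 \<le> l"
    and Ji: "\<And>l. integrable M (\<lambda>\<omega>. exp (l * J \<omega>))"
    and Jb: "\<And>l. (\<integral>\<omega>. exp (l * J \<omega>) \<partial>M) \<le> exp (l\<^sup>2 * v / 2)"
  shows "integrable M (\<lambda>\<omega>. exp (l * \<bar>J \<omega>\<bar>))" "(\<integral>\<omega>. exp (l * \<bar>J \<omega>\<bar>) \<partial>M) \<le> 2 * exp (l\<^sup>2 * v / 2)"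
proof -
  have pw: "\<And>\<omega>. exp (l * \<bar>J \<omega>\<bar>) \<le> exp (l * J \<omega>) + exp ((-l) * J \<omega>)"
  proof -
    fix \<omega> show "exp (l * \<bar>J \<omega>\<bar>) \<le> exp (l * J \<omega>) + exp ((-l) * J \<omega>)"
    proof (cases "J \<omega> \<ge> 0")
      case True
      then have "exp (l * \<bar>J \<omega>\<bar>) = exp (l * J \<omega>)" by simp
      moreover have "0 \<le> exp ((-l) * J \<omega>)" by simp
      ultimately show ?thesis by linarith
    next
      case False
      then have "exp (l * \<bar>J \<omega>\<bar>) = exp ((-l) * J \<omega>)" by simp
      moreover have "0 \<le> exp (l * J \<omega>)" by simp
      ultimately show ?thesis by linarith
    qed
  qed
  have isum: "integrable M (\<lambda>\<omega>. exp (l * J \<omega>) + exp ((-l) * J \<omega>))"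
    by (rule Bochner_Integration.integrable_add[OF Ji[of l] Ji[of "-l"]])
  show int: "integrable M (\<lambda>\<omega>. exp (l * \<bar>J \<omega>\<bar>))"
    by (rule Bochner_Integration.integrable_bound[OF isum]) (use Jm pw in auto)
  have "(\<integral>\<omega>. exp (l * \<bar>J \<omega>\<bar>) \<partial>M) \<le> (\<integral>\<omega>. exp (l * J \<omega>) + exp ((-l) * J \<omega>) \<partial>M)"
    by (rule integral_mono[OF int isum]) (use pw in auto)
  also have "\<dots> = (\<integral>\<omega>. exp (l * J \<omega>) \<partial>M) + (\<integral>\<omega>. exp ((-l) * J \<omega>) \<partial>M)"
    by (rule Bochner_Integration.integral_add[OF Ji[of l] Ji[of "-l"]])
  also have "\<dots> \<le> exp (l\<^sup>2 * v / 2) + exp ((-l)\<^sup>2 * v / 2)" by (rule add_mono[OF Jb[of l] Jb[of "-l"]])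
  finally show "(\<integral>\<omega>. exp (l * \<bar>J \<omega>\<bar>) \<partial>M) \<le> 2 * exp (l\<^sup>2 * v / 2)" by simp
qed

lemma incr_moment:
  fixes J :: "'a \<Rightarrow> real"
  assumes Jm: "J \<in> borel_measurable M"
    and Ji: "\<And>l. integrable M (\<lambda>\<omega>. exp (l * J \<omega>))"
    and Jb: "\<And>l. (\<integral>\<omega>. exp (l * J \<omega>) \<partial>M) \<le> exp (l\<^sup>2 * (K\<^sup>2 * \<sigma>\<^sup>2) / 2)"
    and s: "0 < \<sigma>" "\<sigma> \<le> 1" and d: "0 \<le> \<delta>" "\<delta> \<le> c0 * \<sigma>\<^sup>2"
  shows "integrable M (\<lambda>\<omega>. \<bar>exp (J \<omega> - \<delta>) - 1\<bar> ^ N)"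
    "(\<integral>\<omega>. \<bar>exp (J \<omega> - \<delta>) - 1\<bar> ^ N \<partial>M)
       \<le> real N ^ N * exp (real (Suc N) * c0) * (2 * exp ((real (Suc N))\<^sup>2 * K\<^sup>2 / 2)) * \<sigma> ^ N"
proof -
  have "0 \<le> c0 * \<sigma>\<^sup>2" using d by linarith
  moreover have "0 < \<sigma>\<^sup>2" using s by simp
  ultimately have c0: "0 \<le> c0" by (simp add: zero_le_mult_iff)
  define l where "l = real (Suc N) / \<sigma>"
  have l0: "0 \<le> l" unfolding l_def using s by simp
  note E = exp_abs_mgf[OF Jm l0 Ji Jb]
  let ?C = "real N ^ N * exp (real (Suc N) * c0)"
  have pw: "\<bar>exp (J \<omega> - \<delta>) - 1\<bar> ^ N \<le> \<sigma> ^ N * ?C * exp (l * \<bar>J \<omega>\<bar>)" for \<omega>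
  proof -
    define Z where "Z = \<bar>J \<omega>\<bar> / \<sigma>"
    have Z0: "0 \<le> Z" unfolding Z_def using s by simp
    have JZ: "\<bar>J \<omega>\<bar> = \<sigma> * Z" unfolding Z_def using s by simp
    have "\<bar>J \<omega> - \<delta>\<bar> \<le> \<bar>J \<omega>\<bar> + \<delta>" using d by simp
    also have "\<dots> \<le> \<sigma> * Z + c0 * \<sigma>\<^sup>2" using JZ d by simp
    also have "\<dots> \<le> \<sigma> * (Z + c0)"
    proof -
      have "\<sigma> * \<sigma> \<le> 1 * \<sigma>" using s by (intro mult_right_mono) auto
      then have "c0 * \<sigma>\<^sup>2 \<le> c0 * \<sigma>" using c0 by (simp add: power2_eq_square mult_left_mono)
      then show ?thesis by (simp add: algebra_simps)
    qed
    finally have Y1: "\<bar>J \<omega> - \<delta>\<bar> \<le> \<sigma> * (Z + c0)" .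
    have Y2: "\<bar>J \<omega> - \<delta>\<bar> \<le> Z + c0"
    proof -
      have "\<sigma> * (Z + c0) \<le> 1 * (Z + c0)" using s Z0 c0 by (intro mult_right_mono) auto
      then have "\<sigma> * (Z + c0) \<le> Z + c0" by simp
      then show ?thesis using Y1 by (rule order_trans[rotated])
    qed
    have "\<bar>exp (J \<omega> - \<delta>) - 1\<bar> \<le> \<bar>J \<omega> - \<delta>\<bar> * exp \<bar>J \<omega> - \<delta>\<bar>" by (rule exp_minus_one_bound)
    also have "\<dots> \<le> (\<sigma> * (Z + c0)) * exp (Z + c0)"
      by (rule mult_mono[OF Y1]) (use Y2 s Z0 c0 in auto)
    finally have "\<bar>exp (J \<omega> - \<delta>) - 1\<bar> ^ N \<le> ((\<sigma> * (Z + c0)) * exp (Z + c0)) ^ N"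
      by (rule power_mono) simp
    also have "\<dots> = \<sigma> ^ N * (Z + c0) ^ N * exp (real N * (Z + c0))"
      by (simp add: power_mult_distrib exp_of_nat_mult[symmetric])
    also have "\<dots> \<le> \<sigma> ^ N * (real N ^ N * exp (Z + c0)) * exp (real N * (Z + c0))"
    proof (rule mult_right_mono[OF mult_left_mono])
      show "(Z + c0) ^ N \<le> real N ^ N * exp (Z + c0)" using pow_le_exp[of "Z + c0" N] Z0 c0 by simp
    qed (use s in auto)
    also have "\<dots> = \<sigma> ^ N * real N ^ N * (exp (Z + c0) * exp (real N * (Z + c0)))"
      by (simp only: mult.assoc)
    also have "exp (Z + c0) * exp (real N * (Z + c0)) = exp (real (Suc N) * c0) * exp (real (Suc N) * Z)"
    proof -
      have "exp (Z + c0) * exp (real N * (Z + c0)) = exp (Z + c0 + real N * (Z + c0))" by (simp only: exp_add)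
      also have "Z + c0 + real N * (Z + c0) = real (Suc N) * c0 + real (Suc N) * Z" by (simp add: algebra_simps)
      also have "exp (real (Suc N) * c0 + real (Suc N) * Z) = exp (real (Suc N) * c0) * exp (real (Suc N) * Z)"
        by (simp only: exp_add)
      finally show ?thesis .
    qed
    also have "\<sigma> ^ N * real N ^ N * (exp (real (Suc N) * c0) * exp (real (Suc N) * Z)) = \<sigma> ^ N * ?C * exp (real (Suc N) * Z)"
      by (simp only: mult.assoc)
    also have "real (Suc N) * Z = l * \<bar>J \<omega>\<bar>" unfolding l_def Z_def by simp
    finally show ?thesis .
  qed
  have i2: "integrable M (\<lambda>\<omega>. \<sigma> ^ N * ?C * exp (l * \<bar>J \<omega>\<bar>))" using E(1) by simp
  show int: "integrable M (\<lambda>\<omega>. \<bar>exp (J \<omega> - \<delta>) - 1\<bar> ^ N)"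
  proof (rule Bochner_Integration.integrable_bound[OF i2])
    show "(\<lambda>\<omega>. \<bar>exp (J \<omega> - \<delta>) - 1\<bar> ^ N) \<in> borel_measurable M" using Jm by measurable
    show "AE \<omega> in M. norm (\<bar>exp (J \<omega> - \<delta>) - 1\<bar> ^ N) \<le> norm (\<sigma> ^ N * ?C * exp (l * \<bar>J \<omega>\<bar>))"
    proof (rule AE_I2)
      fix \<omega>
      have "norm (\<bar>exp (J \<omega> - \<delta>) - 1\<bar> ^ N) = \<bar>exp (J \<omega> - \<delta>) - 1\<bar> ^ N" by (simp add: power_abs)
      also have "\<dots> \<le> \<sigma> ^ N * ?C * exp (l * \<bar>J \<omega>\<bar>)" by (rule pw)
      also have "\<dots> \<le> norm (\<sigma> ^ N * ?C * exp (l * \<bar>J \<omega>\<bar>))" by simp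
      finally show "norm (\<bar>exp (J \<omega> - \<delta>) - 1\<bar> ^ N) \<le> norm (\<sigma> ^ N * ?C * exp (l * \<bar>J \<omega>\<bar>))" .
    qed
  qed
  have "(\<integral>\<omega>. \<bar>exp (J \<omega> - \<delta>) - 1\<bar> ^ N \<partial>M) \<le> (\<integral>\<omega>. \<sigma> ^ N * ?C * exp (l * \<bar>J \<omega>\<bar>) \<partial>M)"
    by (rule integral_mono[OF int i2]) (use pw in auto)
  also have "\<dots> = \<sigma> ^ N * ?C * (\<integral>\<omega>. exp (l * \<bar>J \<omega>\<bar>) \<partial>M)" by simp
  also have "\<dots> \<le> \<sigma> ^ N * ?C * (2 * exp (l\<^sup>2 * (K\<^sup>2 * \<sigma>\<^sup>2) / 2))"
    using E(2) s by (intro mult_left_mono) auto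
  also have "l\<^sup>2 * (K\<^sup>2 * \<sigma>\<^sup>2) = (real (Suc N))\<^sup>2 * K\<^sup>2" unfolding l_def using s by (simp add: field_simps power2_eq_square)
  finally show "(\<integral>\<omega>. \<bar>exp (J \<omega> - \<delta>) - 1\<bar> ^ N \<partial>M)
       \<le> real N ^ N * exp (real (Suc N) * c0) * (2 * exp ((real (Suc N))\<^sup>2 * K\<^sup>2 / 2)) * \<sigma> ^ N"
    by (simp add: mult_ac)
qed

end


locale vk = bm M F W for M :: "'a measure" and F W +
  fixes k :: "'q \<Rightarrow> real \<Rightarrow> real" and \<theta> :: 'q and V0 :: "real \<Rightarrow> real" and \<kappa>' :: "real \<Rightarrow> real"
    and K Vm :: real
  assumes kd: "\<And>x. x \<in> {0..1} \<Longrightarrow> (k \<theta> has_real_derivative \<kappa>' x) (at x)"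
    and kc': "continuous_on {0..1} \<kappa>'"
    and kK: "\<And>x. x \<in> {0..1} \<Longrightarrow> \<bar>k \<theta> x\<bar> \<le> K"
    and V0c: "continuous_on {0..1} V0" and V0p: "\<And>u. u \<in> {0..1} \<Longrightarrow> 0 < V0 u"
    and V0m: "\<And>u. u \<in> {0..1} \<Longrightarrow> V0 u \<le> Vm"
begin

definition JJ :: "real \<Rightarrow> real \<Rightarrow> real \<Rightarrow> 'a \<Rightarrow> real" where
  "JJ u a b \<omega> = k \<theta> (u - b) * W b \<omega> - k \<theta> (u - a) * W a \<omega> - integral {a..b} (\<lambda>r. W r \<omega> * (- \<kappa>' (u - r)))"

definition AA :: "real \<Rightarrow> real \<Rightarrow> real" where
  "AA u t = integral {0..t} (\<lambda>s. (kext k \<theta> (u - s))\<^sup>2)"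

lemma kc: "continuous_on {0..1} (k \<theta>)"
  using kd by (meson DERIV_continuous continuous_at_imp_continuous_on)

lemma K0: "0 \<le> K" using kK[of 0] by auto

lemma f_deriv:
  assumes "0 \<le> a" "b \<le> u" "u \<le> 1" "x \<in> {a..b}"
  shows "((\<lambda>r. k \<theta> (u - r)) has_real_derivative - \<kappa>' (u - x)) (at x within {a..b})"
proof -
  have ux: "u - x \<in> {0..1}" using assms by auto
  have "((\<lambda>r. k \<theta> (u - r)) has_real_derivative \<kappa>' (u - x) * (- 1)) (at x)"
    by (rule DERIV_chain2[where f="k \<theta>" and g="\<lambda>r. u - r", OF kd[OF ux]]) (auto intro!: derivative_eq_intros)
  then show ?thesis by (simp add: has_field_derivative_at_within)
qed

lemma f'_cont0:
  assumes "0 \<le> a" "b \<le> u" "u \<le> 1"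
  shows "continuous_on {a..b} (\<lambda>r. \<kappa>' (u - r))"
  by (rule continuous_on_compose2[OF kc']) (use assms in \<open>auto intro!: continuous_intros\<close>)

lemma f'_cont:
  assumes "0 \<le> a" "b \<le> u" "u \<le> 1"
  shows "continuous_on {a..b} (\<lambda>r. - \<kappa>' (u - r))"
  using f'_cont0[OF assms] by (intro continuous_intros)

lemma JJ_mgf:
  assumes "0 \<le> a" "a \<le> b" "b \<le> u" "u \<le> 1"
  shows "JJ u a b \<in> borel_measurable M" "integrable M (\<lambda>\<omega>. exp (l * JJ u a b \<omega>))"
    "(\<integral>\<omega>. exp (l * JJ u a b \<omega>) \<partial>M) \<le> exp (l\<^sup>2 * K\<^sup>2 * (b - a) / 2)"
proof -
  have b1: "b \<le> 1" using assms by auto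
  have d: "\<And>x. x \<in> {a..b} \<Longrightarrow> ((\<lambda>r. k \<theta> (u - r)) has_real_derivative - \<kappa>' (u - x)) (at x within {a..b})"
    using f_deriv assms by auto
  have kb: "\<And>x. x \<in> {a..b} \<Longrightarrow> \<bar>k \<theta> (u - x)\<bar> \<le> K" using assms by (intro kK) auto
  note m = mgf_J[OF assms(1,2) b1 d f'_cont[OF assms(1,3,4)] kb]
  show "JJ u a b \<in> borel_measurable M" "integrable M (\<lambda>\<omega>. exp (l * JJ u a b \<omega>))"
    "(\<integral>\<omega>. exp (l * JJ u a b \<omega>) \<partial>M) \<le> exp (l\<^sup>2 * K\<^sup>2 * (b - a) / 2)"
    using m unfolding JJ_def[abs_def] by auto
qed

lemma ito_JJ:
  assumes "0 \<le> t" "t \<le> u" "u \<le> 1" "\<omega> \<in> space M"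
  shows "ito_det (\<lambda>s. kext k \<theta> (u - s)) W t \<omega> = JJ u 0 t \<omega>"
proof -
  have lim: "(\<lambda>n. \<Sum>i<n. k \<theta> (u - pt 0 t n i) * (W (pt 0 t n (Suc i)) \<omega> - W (pt 0 t n i) \<omega>)) \<longlonglongrightarrow> JJ u 0 t \<omega>"
    unfolding JJ_def
    using rs_lim[OF order_refl assms(1) _ f_deriv[OF order_refl assms(2,3)] f'_cont[OF order_refl assms(2,3)] assms(4)]
      assms by simp
  have eq: "(\<Sum>i<n. kext k \<theta> (u - t * real i / real n) * (W (t * real (Suc i) / real n) \<omega> - W (t * real i / real n) \<omega>))
      = (\<Sum>i<n. k \<theta> (u - pt 0 t n i) * (W (pt 0 t n (Suc i)) \<omega> - W (pt 0 t n i) \<omega>))" for n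
  proof (rule sum.cong[OF refl])
    fix i assume i: "i \<in> {..<n}"
    have "pt 0 t n i \<in> {0..t}" using pt_range[OF assms(1), of i n] i by auto
    then have "\<not> u - pt 0 t n i < 0" using assms by auto
    moreover have "pt 0 t n i = t * real i / real n" "pt 0 t n (Suc i) = t * real (Suc i) / real n"
      unfolding pt_def by auto
    ultimately show "kext k \<theta> (u - t * real i / real n) * (W (t * real (Suc i) / real n) \<omega> - W (t * real i / real n) \<omega>)
      = k \<theta> (u - pt 0 t n i) * (W (pt 0 t n (Suc i)) \<omega> - W (pt 0 t n i) \<omega>)"
      unfolding kext_def by simp
  qed
  show ?thesis unfolding ito_det_def eq using lim by (rule limI)
qed

lemma integrand_cont:
  assumes "0 \<le> a" "b \<le> u" "u \<le> 1" "\<omega> \<in> space M"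
  shows "continuous_on {a..b} (\<lambda>r. W r \<omega> * (- \<kappa>' (u - r)))"
proof (intro continuous_intros f'_cont0[OF assms(1-3)])
  show "continuous_on {a..b} (\<lambda>r. W r \<omega>)"
    by (rule continuous_on_subset[OF Wcont[OF assms(4)]]) (use assms in auto)
qed

lemma JJ_add:
  assumes "0 \<le> s" "s \<le> t" "t \<le> u" "u \<le> 1" "\<omega> \<in> space M"
  shows "JJ u 0 t \<omega> - JJ u 0 s \<omega> = JJ u s t \<omega>"
proof -
  have "integral {0..s} (\<lambda>r. W r \<omega> * (- \<kappa>' (u - r))) + integral {s..t} (\<lambda>r. W r \<omega> * (- \<kappa>' (u - r)))
      = integral {0..t} (\<lambda>r. W r \<omega> * (- \<kappa>' (u - r)))"
    by (rule Henstock_Kurzweil_Integration.integral_combine[OF assms(1,2) integrable_continuous_real[OF integrand_cont]])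
      (use assms in auto)
  then show ?thesis unfolding JJ_def by simp
qed

lemma AA_eq:
  assumes "0 \<le> t" "t \<le> u"
  shows "AA u t = integral {0..t} (\<lambda>s. (k \<theta> (u - s))\<^sup>2)"
  unfolding AA_def by (rule integral_cong) (use assms in \<open>auto simp: kext_def\<close>)

lemma ksq_cont:
  assumes "0 \<le> a" "b \<le> u" "u \<le> 1"
  shows "continuous_on {a..b} (\<lambda>s. (k \<theta> (u - s))\<^sup>2)"
proof -
  have "continuous_on {a..b} (\<lambda>s. k \<theta> (u - s))"
    by (rule continuous_on_compose2[OF kc]) (use assms in \<open>auto intro!: continuous_intros\<close>)
  then show ?thesis by (intro continuous_intros)
qed

lemma AA_nonneg: assumes "0 \<le> t" "t \<le> u" "u \<le> 1" shows "0 \<le> AA u t"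
  unfolding AA_eq[OF assms(1,2)]
  by (rule integral_nonneg[OF integrable_continuous_real[OF ksq_cont[OF order_refl assms(2,3)]]]) auto

lemma AA_diff:
  assumes "0 \<le> s" "s \<le> t" "t \<le> u" "u \<le> 1"
  shows "0 \<le> AA u t - AA u s" "AA u t - AA u s \<le> K\<^sup>2 * (t - s)"
proof -
  have c: "continuous_on {0..t} (\<lambda>s. (k \<theta> (u - s))\<^sup>2)" by (rule ksq_cont) (use assms in auto)
  have "integral {0..s} (\<lambda>s. (k \<theta> (u - s))\<^sup>2) + integral {s..t} (\<lambda>s. (k \<theta> (u - s))\<^sup>2)
      = integral {0..t} (\<lambda>s. (k \<theta> (u - s))\<^sup>2)"
    by (rule Henstock_Kurzweil_Integration.integral_combine[OF assms(1,2) integrable_continuous_real[OF c]])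
  then have eq: "AA u t - AA u s = integral {s..t} (\<lambda>s. (k \<theta> (u - s))\<^sup>2)"
    using AA_eq[of t u] AA_eq[of s u] assms by simp
  have c2: "continuous_on {s..t} (\<lambda>s. (k \<theta> (u - s))\<^sup>2)" by (rule ksq_cont) (use assms in auto)
  show "0 \<le> AA u t - AA u s" unfolding eq
    by (rule integral_nonneg[OF integrable_continuous_real[OF c2]]) auto
  have "norm (integral {s..t} (\<lambda>s. (k \<theta> (u - s))\<^sup>2)) \<le> K\<^sup>2 * (t - s)"
  proof (rule integral_bound[OF assms(2) c2])
    fix r assume "r \<in> {s..t}"
    then have "\<bar>k \<theta> (u - r)\<bar> \<le> K" using assms by (intro kK) auto
    then show "norm ((k \<theta> (u - r))\<^sup>2) \<le> K\<^sup>2"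
      by (simp add: power_mono abs_le_square_iff[symmetric] K0)
  qed
  then show "AA u t - AA u s \<le> K\<^sup>2 * (t - s)" unfolding eq by simp
qed

lemma V_eq:
  assumes "0 \<le> t" "t \<le> u" "u \<le> 1" "\<omega> \<in> space M"
  shows "Vproc k \<theta> V0 W t u \<omega> = V0 u * exp (JJ u 0 t \<omega> - 1/2 * AA u t)"
  unfolding Vproc_def AA_def using ito_JJ[OF assms] assms by simp

lemma V_meas:
  assumes "0 \<le> t" "t \<le> 1" "u \<le> 1"
  shows "(\<lambda>\<omega>. Vproc k \<theta> V0 W t u \<omega>) \<in> borel_measurable M"
proof (cases "t \<le> u")
  case True
  have "(\<lambda>\<omega>. V0 u * exp (JJ u 0 t \<omega> - 1/2 * AA u t)) \<in> borel_measurable M"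
    using JJ_mgf(1)[OF order_refl assms(1) True assms(3)] by measurable
  then show ?thesis by (rule measurable_cong[THEN iffD1, rotated]) (use V_eq assms True in auto)
next
  case False
  then show ?thesis unfolding Vproc_def by simp
qed

lemma V_nonneg: assumes "u \<in> {0..1}" shows "0 \<le> Vproc k \<theta> V0 W t u \<omega>"
  unfolding Vproc_def using V0p[OF assms] by simp

end


context vk
begin

definition CV1 :: "nat \<Rightarrow> real" where "CV1 N = Vm ^ N * exp ((real N)\<^sup>2 * K\<^sup>2 / 2)"

lemma Vm0: "0 < Vm" using V0p[of 0] V0m[of 0] by auto

lemma V_moment:
  assumes "0 \<le> t" "t \<le> u" "u \<le> 1"
  shows "integrable M (\<lambda>\<omega>. Vproc k \<theta> V0 W t u \<omega> ^ N)" "(\<integral>\<omega>. Vproc k \<theta> V0 W t u \<omega> ^ N \<partial>M) \<le> CV1 N"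
proof -
  note J2 = JJ_mgf(2)[where l="real N", OF order_refl assms(1) assms(2,3)]
  note J3 = JJ_mgf(3)[where l="real N", OF order_refl assms(1) assms(2,3)]
  have u01: "u \<in> {0..1}" using assms by auto
  have A0: "0 \<le> AA u t" using AA_nonneg assms by auto
  have eqV: "\<And>\<omega>. \<omega> \<in> space M \<Longrightarrow> Vproc k \<theta> V0 W t u \<omega> ^ N = V0 u ^ N * exp (real N * JJ u 0 t \<omega> - real N / 2 * AA u t)"
    using V_eq[OF assms] by (simp add: power_mult_distrib exp_of_nat_mult[symmetric] algebra_simps)
  have pw: "\<And>\<omega>. \<omega> \<in> space M \<Longrightarrow> Vproc k \<theta> V0 W t u \<omega> ^ N \<le> Vm ^ N * exp (real N * JJ u 0 t \<omega>)"
  proof -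
    fix \<omega> assume \<omega>: "\<omega> \<in> space M"
    have "V0 u ^ N \<le> Vm ^ N" using V0p[OF u01] V0m[OF u01] by (intro power_mono) auto
    moreover have "exp (real N * JJ u 0 t \<omega> - real N / 2 * AA u t) \<le> exp (real N * JJ u 0 t \<omega>)"
      using A0 by simp
    ultimately show "Vproc k \<theta> V0 W t u \<omega> ^ N \<le> Vm ^ N * exp (real N * JJ u 0 t \<omega>)"
      unfolding eqV[OF \<omega>] using V0p[OF u01] Vm0 by (intro mult_mono) auto
  qed
  have i2: "integrable M (\<lambda>\<omega>. Vm ^ N * exp (real N * JJ u 0 t \<omega>))" using J2 by simp
  have vm: "(\<lambda>\<omega>. Vproc k \<theta> V0 W t u \<omega> ^ N) \<in> borel_measurable M"
  proof -
    have "(\<lambda>\<omega>. Vproc k \<theta> V0 W t u \<omega>) \<in> borel_measurable M" using V_meas[of t u] assms by auto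
    then show ?thesis by measurable
  qed
  show int: "integrable M (\<lambda>\<omega>. Vproc k \<theta> V0 W t u \<omega> ^ N)"
  proof (rule Bochner_Integration.integrable_bound[OF i2 vm])
    show "AE \<omega> in M. norm (Vproc k \<theta> V0 W t u \<omega> ^ N) \<le> norm (Vm ^ N * exp (real N * JJ u 0 t \<omega>))"
    proof (rule AE_I2)
      fix \<omega> assume \<omega>: "\<omega> \<in> space M"
      have "0 \<le> Vproc k \<theta> V0 W t u \<omega> ^ N" using V_nonneg[OF u01] by simp
      then show "norm (Vproc k \<theta> V0 W t u \<omega> ^ N) \<le> norm (Vm ^ N * exp (real N * JJ u 0 t \<omega>))"
        using pw[OF \<omega>] by simp
    qed
  qed
  have "(\<integral>\<omega>. Vproc k \<theta> V0 W t u \<omega> ^ N \<partial>M) \<le> (\<integral>\<omega>. Vm ^ N * exp (real N * JJ u 0 t \<omega>) \<partial>M)"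
    by (rule integral_mono[OF int i2]) (use pw in auto)
  also have "\<dots> = Vm ^ N * (\<integral>\<omega>. exp (real N * JJ u 0 t \<omega>) \<partial>M)" by simp
  also have "\<dots> \<le> Vm ^ N * exp ((real N)\<^sup>2 * K\<^sup>2 * (t - 0) / 2)"
    using J3 Vm0 by (intro mult_left_mono) auto
  also have "\<dots> \<le> CV1 N" unfolding CV1_def using Vm0 assms
  proof (intro mult_left_mono)
    have "(real N)\<^sup>2 * K\<^sup>2 * t \<le> (real N)\<^sup>2 * K\<^sup>2 * 1" using assms by (intro mult_left_mono) auto
    then show "exp ((real N)\<^sup>2 * K\<^sup>2 * (t - 0) / 2) \<le> exp ((real N)\<^sup>2 * K\<^sup>2 / 2)" by simp
  qed (use Vm0 in auto)
  finally show "(\<integral>\<omega>. Vproc k \<theta> V0 W t u \<omega> ^ N \<partial>M) \<le> CV1 N" .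
qed

definition C2 :: "nat \<Rightarrow> real" where
  "C2 N = real N ^ N * exp (real (Suc N) * (K\<^sup>2 / 2)) * (2 * exp ((real (Suc N))\<^sup>2 * K\<^sup>2 / 2))"

definition CV2 :: "nat \<Rightarrow> real" where "CV2 m = (CV1 (4 * m) + C2 (4 * m)) / 2"

lemma young: fixes a b e :: real assumes "0 < e" shows "a * b \<le> e / 2 * a\<^sup>2 + 1 / (2 * e) * b\<^sup>2"
proof -
  have "0 \<le> (e * a - b)\<^sup>2" by simp
  then have "2 * e * (a * b) \<le> e\<^sup>2 * a\<^sup>2 + b\<^sup>2" by (simp add: power2_eq_square algebra_simps)
  then have "a * b \<le> (e\<^sup>2 * a\<^sup>2 + b\<^sup>2) / (2 * e)" using assms by (simp add: le_divide_eq mult.commute)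
  also have "\<dots> = e / 2 * a\<^sup>2 + 1 / (2 * e) * b\<^sup>2" using assms by (simp add: field_simps power2_eq_square)
  finally show ?thesis .
qed

lemma V_incr:
  assumes "0 \<le> s" "s \<le> t" "t \<le> u" "u \<le> 1" "1 \<le> m"
  shows "integrable M (\<lambda>\<omega>. (Vproc k \<theta> V0 W t u \<omega> - Vproc k \<theta> V0 W s u \<omega>) ^ (2 * m))"
    "(\<integral>\<omega>. (Vproc k \<theta> V0 W t u \<omega> - Vproc k \<theta> V0 W s u \<omega>) ^ (2 * m) \<partial>M) \<le> CV2 m * (t - s) ^ m"
proof -
  let ?D = "\<lambda>\<omega>. (Vproc k \<theta> V0 W t u \<omega> - Vproc k \<theta> V0 W s u \<omega>) ^ (2 * m)"
  have Dm: "?D \<in> borel_measurable M"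
  proof -
    have "(\<lambda>\<omega>. Vproc k \<theta> V0 W t u \<omega>) \<in> borel_measurable M" "(\<lambda>\<omega>. Vproc k \<theta> V0 W s u \<omega>) \<in> borel_measurable M"
      using V_meas assms by auto
    then show ?thesis by measurable
  qed
  have "integrable M ?D \<and> (\<integral>\<omega>. ?D \<omega> \<partial>M) \<le> CV2 m * (t - s) ^ m"
  proof (cases "s = t")
    case True
    then have "?D = (\<lambda>\<omega>. 0)" using assms by (auto simp: power_0_left)
    moreover have "0 \<le> CV2 m"
    proof -
      have "0 \<le> CV1 (4 * m)" unfolding CV1_def using Vm0 by simp
      moreover have "0 \<le> C2 (4 * m)" unfolding C2_def by simp
      ultimately show ?thesis unfolding CV2_def by simp
    qed
    ultimately show ?thesis using True by simp
  next
    case False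
    then have st: "s < t" using assms by auto
    define \<sigma> where "\<sigma> = sqrt (t - s)"
    have s0: "0 < \<sigma>" unfolding \<sigma>_def using st by simp
    have s1: "\<sigma> \<le> 1" unfolding \<sigma>_def using assms by simp
    have ss: "\<sigma>\<^sup>2 = t - s" unfolding \<sigma>_def using st by simp
    define \<delta> where "\<delta> = 1/2 * (AA u t - AA u s)"
    have d0: "0 \<le> \<delta>" unfolding \<delta>_def using AA_diff(1)[OF assms(1-4)] by simp
    have d1: "\<delta> \<le> K\<^sup>2 / 2 * \<sigma>\<^sup>2" unfolding \<delta>_def ss using AA_diff(2)[OF assms(1-4)] by simp
    define e where "e = (t - s) ^ m"
    have e0: "0 < e" unfolding e_def using st by simp
    note Jm = JJ_mgf(1)[OF assms(1,2,3,4)]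
    have Ji: "\<And>l. integrable M (\<lambda>\<omega>. exp (l * JJ u s t \<omega>))" using JJ_mgf(2)[OF assms(1,2,3,4)] by blast
    have Jb: "\<And>l. (\<integral>\<omega>. exp (l * JJ u s t \<omega>) \<partial>M) \<le> exp (l\<^sup>2 * (K\<^sup>2 * \<sigma>\<^sup>2) / 2)"
      using JJ_mgf(3)[OF assms(1,2,3,4)] unfolding ss by (simp add: mult.assoc)
    note IM = incr_moment[OF Jm Ji Jb s0 s1 d0 d1, of "4 * m"]
    note VM = V_moment[of s u "4 * m"]
    have VMi: "integrable M (\<lambda>\<omega>. Vproc k \<theta> V0 W s u \<omega> ^ (4 * m))" using VM assms by auto
    have VMb: "(\<integral>\<omega>. Vproc k \<theta> V0 W s u \<omega> ^ (4 * m) \<partial>M) \<le> CV1 (4 * m)" using VM assms by auto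
    let ?R = "\<lambda>\<omega>. e / 2 * Vproc k \<theta> V0 W s u \<omega> ^ (4 * m) + 1 / (2 * e) * \<bar>exp (JJ u s t \<omega> - \<delta>) - 1\<bar> ^ (4 * m)"
    have pw: "\<And>\<omega>. \<omega> \<in> space M \<Longrightarrow> ?D \<omega> \<le> ?R \<omega>"
    proof -
      fix \<omega> assume \<omega>: "\<omega> \<in> space M"
      have "Vproc k \<theta> V0 W t u \<omega> = V0 u * exp (JJ u 0 t \<omega> - 1/2 * AA u t)"
        using V_eq assms \<omega> by auto
      also have "JJ u 0 t \<omega> - 1/2 * AA u t = (JJ u 0 s \<omega> - 1/2 * AA u s) + (JJ u s t \<omega> - \<delta>)"
        using JJ_add[OF assms(1-4) \<omega>] unfolding \<delta>_def by (simp add: field_simps)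
      finally have "Vproc k \<theta> V0 W t u \<omega> = Vproc k \<theta> V0 W s u \<omega> * exp (JJ u s t \<omega> - \<delta>)"
        using V_eq[of s u \<omega>] assms \<omega> by (simp add: exp_add)
      then have "?D \<omega> = Vproc k \<theta> V0 W s u \<omega> ^ (2 * m) * \<bar>exp (JJ u s t \<omega> - \<delta>) - 1\<bar> ^ (2 * m)"
        by (simp add: power_mult_distrib[symmetric] algebra_simps power_even_abs)
      also have "\<dots> \<le> e / 2 * (Vproc k \<theta> V0 W s u \<omega> ^ (2 * m))\<^sup>2 + 1 / (2 * e) * (\<bar>exp (JJ u s t \<omega> - \<delta>) - 1\<bar> ^ (2 * m))\<^sup>2"
        by (rule young[OF e0])
      also have "\<dots> = ?R \<omega>" by (simp add: power_mult[symmetric] mult.commute)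
      finally show "?D \<omega> \<le> ?R \<omega>" .
    qed
    have Ri: "integrable M ?R" using VMi IM(1) by simp
    have Di: "integrable M ?D"
    proof (rule Bochner_Integration.integrable_bound[OF Ri Dm], rule AE_I2)
      fix \<omega> assume \<omega>: "\<omega> \<in> space M"
      have "0 \<le> ?D \<omega>" by (simp add: zero_le_even_power)
      moreover have "0 \<le> ?R \<omega>" using e0 V_nonneg[of u] assms by (intro add_nonneg_nonneg mult_nonneg_nonneg) auto
      ultimately show "norm (?D \<omega>) \<le> norm (?R \<omega>)" using pw[OF \<omega>] by simp
    qed
    have "(\<integral>\<omega>. ?D \<omega> \<partial>M) \<le> (\<integral>\<omega>. ?R \<omega> \<partial>M)" by (rule integral_mono[OF Di Ri]) (use pw in auto)
    also have "\<dots> = e / 2 * (\<integral>\<omega>. Vproc k \<theta> V0 W s u \<omega> ^ (4 * m) \<partial>M)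
        + 1 / (2 * e) * (\<integral>\<omega>. \<bar>exp (JJ u s t \<omega> - \<delta>) - 1\<bar> ^ (4 * m) \<partial>M)"
      using VMi IM(1) by simp
    also have "\<dots> \<le> e / 2 * CV1 (4 * m) + 1 / (2 * e) * (C2 (4 * m) * \<sigma> ^ (4 * m))"
      using VMb IM(2) e0 unfolding C2_def by (intro add_mono mult_left_mono) auto
    also have "\<sigma> ^ (4 * m) = e * e"
    proof -
      have "\<sigma> ^ (4 * m) = (\<sigma>\<^sup>2) ^ (2 * m)" by (simp add: power_mult[symmetric])
      also have "\<dots> = e * e" unfolding ss e_def by (simp add: power_mult[symmetric] mult_2 power_add)
      finally show ?thesis .
    qed
    also have "e / 2 * CV1 (4 * m) + 1 / (2 * e) * (C2 (4 * m) * (e * e)) = CV2 m * e"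
      unfolding CV2_def using e0 by (simp add: field_simps)
    finally show ?thesis using Di unfolding e_def by simp
  qed
  then show "integrable M ?D" "(\<integral>\<omega>. ?D \<omega> \<partial>M) \<le> CV2 m * (t - s) ^ m" by auto
qed

lemma param_cont:
  fixes t :: real and g w :: "real \<Rightarrow> real"
  assumes "0 \<le> t" "t \<le> 1" and g: "continuous_on {0..1} g" and w: "continuous_on {0..t} w"
  shows "continuous_on {t..1} (\<lambda>u. integral {0..t} (\<lambda>r. w r * g (u - r)))"
proof -
  have "continuous_on ({t..1} \<times> cbox 0 t) (\<lambda>(u, r). w r * g (u - r))"
  proof -
    have c1: "continuous_on ({t..1} \<times> {0..t}) (\<lambda>p. w (snd p))"
      by (rule continuous_on_compose2[OF w]) (auto intro!: continuous_intros)
    have im: "(\<lambda>p. fst p - snd p) ` ({t..1} \<times> {0..t}) \<subseteq> {0..1}"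
    proof
      fix y assume "y \<in> (\<lambda>p. fst p - snd p) ` ({t..1} \<times> {0..t})"
      then obtain a b where "y = a - b" "t \<le> a" "a \<le> 1" "0 \<le> b" "b \<le> t" by auto
      then show "y \<in> {0..1}" using assms by auto
    qed
    have c2: "continuous_on ({t..1} \<times> {0..t}) (\<lambda>p. g (fst p - snd p))"
      by (rule continuous_on_compose2[OF g _ im]) (auto intro!: continuous_intros)
    have "continuous_on ({t..1} \<times> {0..t}) (\<lambda>p. w (snd p) * g (fst p - snd p))"
      by (intro continuous_intros c1 c2)
    then show ?thesis by (simp add: case_prod_beta')
  qed
  from integral_continuous_on_param[OF this] show ?thesis by simp
qed

lemma V_cont:
  assumes "0 \<le> t" "t \<le> 1" "\<omega> \<in> space M"
  shows "continuous_on {t..1} (\<lambda>u. Vproc k \<theta> V0 W t u \<omega>)"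
proof -
  have eq: "\<And>u. u \<in> {t..1} \<Longrightarrow> Vproc k \<theta> V0 W t u \<omega> =
     V0 u * exp ((k \<theta> (u - t) * W t \<omega> - k \<theta> (u - 0) * W 0 \<omega>
       - integral {0..t} (\<lambda>r. W r \<omega> * (\<lambda>x. - \<kappa>' x) (u - r)))
       - 1/2 * integral {0..t} (\<lambda>r. 1 * (\<lambda>x. (k \<theta> x)\<^sup>2) (u - r)))"
  proof -
    fix u assume u: "u \<in> {t..1}"
    have "Vproc k \<theta> V0 W t u \<omega> = V0 u * exp (JJ u 0 t \<omega> - 1/2 * AA u t)"
      by (rule V_eq) (use assms u in auto)
    also have "AA u t = integral {0..t} (\<lambda>s. (k \<theta> (u - s))\<^sup>2)" by (rule AA_eq) (use assms u in auto)
    finally show "Vproc k \<theta> V0 W t u \<omega> =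
     V0 u * exp ((k \<theta> (u - t) * W t \<omega> - k \<theta> (u - 0) * W 0 \<omega>
       - integral {0..t} (\<lambda>r. W r \<omega> * (\<lambda>x. - \<kappa>' x) (u - r)))
       - 1/2 * integral {0..t} (\<lambda>r. 1 * (\<lambda>x. (k \<theta> x)\<^sup>2) (u - r)))"
      unfolding JJ_def by simp
  qed
  have ck: "continuous_on {t..1} (\<lambda>u. k \<theta> (u - c)) " if "c \<in> {0..t}" for c
    by (rule continuous_on_compose2[OF kc]) (use assms that in \<open>auto intro!: continuous_intros\<close>)
  have Wc: "continuous_on {0..t} (\<lambda>r. W r \<omega>)"
    by (rule continuous_on_subset[OF Wcont[OF assms(3)]]) (use assms in auto)
  have i1: "continuous_on {t..1} (\<lambda>u. integral {0..t} (\<lambda>r. W r \<omega> * (\<lambda>x. - \<kappa>' x) (u - r)))"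
    by (rule param_cont[OF assms(1,2) _ Wc]) (intro continuous_intros kc')
  have i2: "continuous_on {t..1} (\<lambda>u. integral {0..t} (\<lambda>r. 1 * (\<lambda>x. (k \<theta> x)\<^sup>2) (u - r)))"
    by (rule param_cont[OF assms(1,2)]) (auto intro!: continuous_intros kc)
  have V0c': "continuous_on {t..1} V0" by (rule continuous_on_subset[OF V0c]) (use assms in auto)
  have "continuous_on {t..1} (\<lambda>u. V0 u * exp ((k \<theta> (u - t) * W t \<omega> - k \<theta> (u - 0) * W 0 \<omega>
       - integral {0..t} (\<lambda>r. W r \<omega> * (\<lambda>x. - \<kappa>' x) (u - r)))
       - 1/2 * integral {0..t} (\<lambda>r. 1 * (\<lambda>x. (k \<theta> x)\<^sup>2) (u - r))))"
    using assms by (intro continuous_intros V0c' ck[of t] ck[of 0] i1 i2) auto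
  then show ?thesis by (rule iffD2[OF continuous_on_cong[OF refl eq], rotated]) auto
qed

end


lemma jensen_even:
  fixes y :: "nat \<Rightarrow> real"
  assumes "n > 0"
  shows "(\<Sum>i<n. (1 / real n) * y i) ^ (2 * m) \<le> (\<Sum>i<n. (1 / real n) * y i ^ (2 * m))"
proof -
  have cv: "convex_on UNIV (\<lambda>x::real. x ^ (2 * m))" by (rule convex_power_even) simp
  have "(\<lambda>x::real. x ^ (2 * m)) (\<Sum>i\<in>{..<n}. (1 / real n) *\<^sub>R y i) \<le> (\<Sum>i\<in>{..<n}. (1 / real n) * (\<lambda>x. x ^ (2 * m)) (y i))"
    by (rule convex_on_sum[OF _ _ cv]) (use assms in auto)
  then show ?thesis by simp
qed

context prob_space
begin

lemma int_tool:
  fixes h :: "real \<Rightarrow> 'a \<Rightarrow> real"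
  assumes ab: "a \<le> b" and m: "1 \<le> m"
    and cont: "\<And>\<omega>. \<omega> \<in> space M \<Longrightarrow> continuous_on {a..b} (\<lambda>u. h u \<omega>)"
    and meas: "\<And>u. u \<in> {a..b} \<Longrightarrow> h u \<in> borel_measurable M"
    and int: "\<And>u. u \<in> {a..b} \<Longrightarrow> integrable M (\<lambda>\<omega>. (h u \<omega>) ^ (2 * m))"
    and bnd: "\<And>u. u \<in> {a..b} \<Longrightarrow> (\<integral>\<omega>. (h u \<omega>) ^ (2 * m) \<partial>M) \<le> B"
  shows "(\<lambda>\<omega>. integral {a..b} (\<lambda>u. h u \<omega>)) \<in> borel_measurable M"
    "integrable M (\<lambda>\<omega>. (integral {a..b} (\<lambda>u. h u \<omega>)) ^ (2 * m))"
    "(\<integral>\<omega>. (integral {a..b} (\<lambda>u. h u \<omega>)) ^ (2 * m) \<partial>M) \<le> (b - a) ^ (2 * m) * B"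
proof -
  let ?S = "\<lambda>n \<omega>. \<Sum>i<n. h (pt a b n i) \<omega> * ((b - a) / real n)"
  have ptr: "\<And>n i. i < n \<Longrightarrow> pt a b n i \<in> {a..b}" using pt_range[OF ab] by auto
  have lim: "\<And>\<omega>. \<omega> \<in> space M \<Longrightarrow> (\<lambda>n. ?S n \<omega>) \<longlonglongrightarrow> integral {a..b} (\<lambda>u. h u \<omega>)"
    by (rule riemann_sum[OF ab cont])
  have Sm: "\<And>n. ?S n \<in> borel_measurable M"
  proof (rule borel_measurable_sum)
    fix n i :: nat assume "i \<in> {..<n}"
    then have "h (pt a b n i) \<in> borel_measurable M" using meas ptr by auto
    then show "(\<lambda>\<omega>. h (pt a b n i) \<omega> * ((b - a) / real n)) \<in> borel_measurable M" by measurable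
  qed
  show "(\<lambda>\<omega>. integral {a..b} (\<lambda>u. h u \<omega>)) \<in> borel_measurable M"
    by (rule borel_measurable_LIMSEQ_metric[OF Sm lim])
  have B0: "0 \<le> B"
  proof -
    have "0 \<le> (\<integral>\<omega>. (h a \<omega>) ^ (2 * m) \<partial>M)" by (rule integral_nonneg_AE) (simp add: AE_I2 zero_le_even_power)
    then show ?thesis using bnd[of a] ab by (meson atLeastAtMost_iff order_refl order_trans)
  qed
  have "integrable M (\<lambda>\<omega>. (integral {a..b} (\<lambda>u. h u \<omega>)) ^ (2 * m)) \<and>
     (\<integral>\<omega>. (integral {a..b} (\<lambda>u. h u \<omega>)) ^ (2 * m) \<partial>M) \<le> (b - a) ^ (2 * m) * B"
  proof (rule fatou_bound[where f = "\<lambda>n \<omega>. (?S n \<omega>) ^ (2 * m)"])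
    show "\<And>n. (\<lambda>\<omega>. (?S n \<omega>) ^ (2 * m)) \<in> borel_measurable M" using Sm by measurable
    show "\<And>n x. 0 \<le> (?S n x) ^ (2 * m)" by (simp add: zero_le_even_power)
    show "\<And>x. x \<in> space M \<Longrightarrow> (\<lambda>n. (?S n x) ^ (2 * m)) \<longlonglongrightarrow> (integral {a..b} (\<lambda>u. h u x)) ^ (2 * m)"
      by (intro tendsto_power lim)
    have conj: "integrable M (\<lambda>\<omega>. (?S n \<omega>) ^ (2 * m)) \<and> (\<integral>\<omega>. (?S n \<omega>) ^ (2 * m) \<partial>M) \<le> (b - a) ^ (2 * m) * B" for n
    proof (cases "n = 0")
      case True then show ?thesis using m B0 by (simp add: power_0_left)
    next
      case False
      then have n0: "n > 0" by simp
      let ?R = "\<lambda>\<omega>. (b - a) ^ (2 * m) * (\<Sum>i<n. (1 / real n) * (h (pt a b n i) \<omega>) ^ (2 * m))"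
      have pw: "(?S n \<omega>) ^ (2 * m) \<le> ?R \<omega>" for \<omega>
      proof -
        have "?S n \<omega> = (b - a) * (\<Sum>i<n. (1 / real n) * h (pt a b n i) \<omega>)"
          by (simp add: sum_distrib_left field_simps)
        then have "(?S n \<omega>) ^ (2 * m) = (b - a) ^ (2 * m) * (\<Sum>i<n. (1 / real n) * h (pt a b n i) \<omega>) ^ (2 * m)"
          by (simp add: power_mult_distrib)
        also have "\<dots> \<le> ?R \<omega>"
          by (rule mult_left_mono[OF jensen_even[OF n0]]) (use ab in simp)
        finally show ?thesis .
      qed
      have Ri: "integrable M ?R"
        by (intro integrable_mult_right Bochner_Integration.integrable_sum integrable_mult_right int ptr) auto
      have Sm2: "(\<lambda>\<omega>. (?S n \<omega>) ^ (2 * m)) \<in> borel_measurable M" using Sm by measurable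
      have Si: "integrable M (\<lambda>\<omega>. (?S n \<omega>) ^ (2 * m))"
      proof (rule Bochner_Integration.integrable_bound[OF Ri Sm2], rule AE_I2)
        fix \<omega>
        have "0 \<le> (?S n \<omega>) ^ (2 * m)" by (simp add: zero_le_even_power)
        then show "norm ((?S n \<omega>) ^ (2 * m)) \<le> norm (?R \<omega>)" using pw[of \<omega>] by simp
      qed
      have "(\<integral>\<omega>. (?S n \<omega>) ^ (2 * m) \<partial>M) \<le> (\<integral>\<omega>. ?R \<omega> \<partial>M)" by (rule integral_mono[OF Si Ri pw])
      also have "\<dots> = (b - a) ^ (2 * m) * (\<Sum>i<n. (1 / real n) * (\<integral>\<omega>. (h (pt a b n i) \<omega>) ^ (2 * m) \<partial>M))"
      proof -
        have ii: "\<And>i. i \<in> {..<n} \<Longrightarrow> integrable M (\<lambda>\<omega>. (1 / real n) * (h (pt a b n i) \<omega>) ^ (2 * m))"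
          using int ptr by auto
        have "(\<integral>\<omega>. ?R \<omega> \<partial>M) = (b - a) ^ (2 * m) * (\<integral>\<omega>. (\<Sum>i<n. (1 / real n) * (h (pt a b n i) \<omega>) ^ (2 * m)) \<partial>M)"
          by (rule integral_mult_right_zero)
        also have "(\<integral>\<omega>. (\<Sum>i<n. (1 / real n) * (h (pt a b n i) \<omega>) ^ (2 * m)) \<partial>M)
            = (\<Sum>i<n. (\<integral>\<omega>. (1 / real n) * (h (pt a b n i) \<omega>) ^ (2 * m) \<partial>M))"
          by (rule Bochner_Integration.integral_sum[OF ii])
        also have "\<dots> = (\<Sum>i<n. (1 / real n) * (\<integral>\<omega>. (h (pt a b n i) \<omega>) ^ (2 * m) \<partial>M))"
          by (rule sum.cong[OF refl], rule integral_mult_right_zero)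
        finally show ?thesis .
      qed
      also have "\<dots> \<le> (b - a) ^ (2 * m) * (\<Sum>i<n. (1 / real n) * B)"
        by (intro mult_left_mono sum_mono) (use ab bnd ptr in auto)
      also have "\<dots> = (b - a) ^ (2 * m) * B" using n0 by simp
      finally show ?thesis using Si by simp
    qed
    show "\<And>n. integrable M (\<lambda>\<omega>. (?S n \<omega>) ^ (2 * m))" using conj by blast
    show "\<And>n. (\<integral>\<omega>. (?S n \<omega>) ^ (2 * m) \<partial>M) \<le> (b - a) ^ (2 * m) * B" using conj by blast
  qed
  then show "integrable M (\<lambda>\<omega>. (integral {a..b} (\<lambda>u. h u \<omega>)) ^ (2 * m))"
    "(\<integral>\<omega>. (integral {a..b} (\<lambda>u. h u \<omega>)) ^ (2 * m) \<partial>M) \<le> (b - a) ^ (2 * m) * B" by auto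
qed

end


lemma sq_sum2: fixes x y :: real shows "(x + y) ^ (2 * m) \<le> 2 ^ (2 * m) * (x ^ (2 * m) + y ^ (2 * m))"
proof -
  have "(\<Sum>i<(2::nat). (1 / real 2) * (if i = 0 then 2 * x else 2 * y)) ^ (2 * m)
      \<le> (\<Sum>i<(2::nat). (1 / real 2) * (if i = 0 then 2 * x else 2 * y) ^ (2 * m))"
    by (rule jensen_even) simp
  then have "(x + y) ^ (2 * m) \<le> ((2 * x) ^ (2 * m) + (2 * y) ^ (2 * m)) / 2"
    by (simp add: numeral_2_eq_2 lessThan_Suc add.commute power_mult_distrib add_divide_distrib)
  also have "\<dots> \<le> (2 * x) ^ (2 * m) + (2 * y) ^ (2 * m)"
    by (simp add: zero_le_even_power)
  also have "\<dots> = 2 ^ (2 * m) * (x ^ (2 * m) + y ^ (2 * m))" by (simp add: power_mult_distrib algebra_simps)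
  finally show ?thesis .
qed

context vk
begin

lemma IV1:
  assumes "0 \<le> t" "t \<le> a" "a \<le> b" "b \<le> 1" "1 \<le> m"
  shows "(\<lambda>\<omega>. integral {a..b} (\<lambda>u. Vproc k \<theta> V0 W t u \<omega>)) \<in> borel_measurable M"
    "integrable M (\<lambda>\<omega>. (integral {a..b} (\<lambda>u. Vproc k \<theta> V0 W t u \<omega>)) ^ (2 * m))"
    "(\<integral>\<omega>. (integral {a..b} (\<lambda>u. Vproc k \<theta> V0 W t u \<omega>)) ^ (2 * m) \<partial>M) \<le> (b - a) ^ (2 * m) * CV1 (2 * m)"
proof -
  have c: "\<And>\<omega>. \<omega> \<in> space M \<Longrightarrow> continuous_on {a..b} (\<lambda>u. Vproc k \<theta> V0 W t u \<omega>)"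
    by (rule continuous_on_subset[OF V_cont]) (use assms in auto)
  have me: "\<And>u. u \<in> {a..b} \<Longrightarrow> (\<lambda>\<omega>. Vproc k \<theta> V0 W t u \<omega>) \<in> borel_measurable M"
    by (rule V_meas) (use assms in auto)
  have i: "\<And>u. u \<in> {a..b} \<Longrightarrow> integrable M (\<lambda>\<omega>. (Vproc k \<theta> V0 W t u \<omega>) ^ (2 * m))"
    by (rule V_moment) (use assms in auto)
  have bd: "\<And>u. u \<in> {a..b} \<Longrightarrow> (\<integral>\<omega>. (Vproc k \<theta> V0 W t u \<omega>) ^ (2 * m) \<partial>M) \<le> CV1 (2 * m)"
    by (rule V_moment) (use assms in auto)
  note T = int_tool[where h = "\<lambda>u \<omega>. Vproc k \<theta> V0 W t u \<omega>", OF assms(3,5) c me i bd]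
  show "(\<lambda>\<omega>. integral {a..b} (\<lambda>u. Vproc k \<theta> V0 W t u \<omega>)) \<in> borel_measurable M"
    "integrable M (\<lambda>\<omega>. (integral {a..b} (\<lambda>u. Vproc k \<theta> V0 W t u \<omega>)) ^ (2 * m))"
    "(\<integral>\<omega>. (integral {a..b} (\<lambda>u. Vproc k \<theta> V0 W t u \<omega>)) ^ (2 * m) \<partial>M) \<le> (b - a) ^ (2 * m) * CV1 (2 * m)"
    using T by auto
qed

lemma IV2:
  assumes "0 \<le> s" "s \<le> t" "t \<le> a" "a \<le> b" "b \<le> 1" "1 \<le> m"
  shows "(\<lambda>\<omega>. integral {a..b} (\<lambda>u. Vproc k \<theta> V0 W t u \<omega> - Vproc k \<theta> V0 W s u \<omega>)) \<in> borel_measurable M"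
    "integrable M (\<lambda>\<omega>. (integral {a..b} (\<lambda>u. Vproc k \<theta> V0 W t u \<omega> - Vproc k \<theta> V0 W s u \<omega>)) ^ (2 * m))"
    "(\<integral>\<omega>. (integral {a..b} (\<lambda>u. Vproc k \<theta> V0 W t u \<omega> - Vproc k \<theta> V0 W s u \<omega>)) ^ (2 * m) \<partial>M)
       \<le> (b - a) ^ (2 * m) * (CV2 m * (t - s) ^ m)"
proof -
  have c: "\<And>\<omega>. \<omega> \<in> space M \<Longrightarrow> continuous_on {a..b} (\<lambda>u. Vproc k \<theta> V0 W t u \<omega> - Vproc k \<theta> V0 W s u \<omega>)"
  proof -
    fix \<omega> assume \<omega>: "\<omega> \<in> space M"
    have "continuous_on {a..b} (\<lambda>u. Vproc k \<theta> V0 W t u \<omega>)"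
      by (rule continuous_on_subset[OF V_cont]) (use assms \<omega> in auto)
    moreover have "continuous_on {a..b} (\<lambda>u. Vproc k \<theta> V0 W s u \<omega>)"
      by (rule continuous_on_subset[OF V_cont]) (use assms \<omega> in auto)
    ultimately show "continuous_on {a..b} (\<lambda>u. Vproc k \<theta> V0 W t u \<omega> - Vproc k \<theta> V0 W s u \<omega>)"
      by (intro continuous_intros)
  qed
  have me: "\<And>u. u \<in> {a..b} \<Longrightarrow> (\<lambda>\<omega>. Vproc k \<theta> V0 W t u \<omega> - Vproc k \<theta> V0 W s u \<omega>) \<in> borel_measurable M"
  proof -
    fix u assume "u \<in> {a..b}"
    then have "(\<lambda>\<omega>. Vproc k \<theta> V0 W t u \<omega>) \<in> borel_measurable M" "(\<lambda>\<omega>. Vproc k \<theta> V0 W s u \<omega>) \<in> borel_measurable M"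
      using V_meas assms by auto
    then show "(\<lambda>\<omega>. Vproc k \<theta> V0 W t u \<omega> - Vproc k \<theta> V0 W s u \<omega>) \<in> borel_measurable M" by measurable
  qed
  have i: "\<And>u. u \<in> {a..b} \<Longrightarrow> integrable M (\<lambda>\<omega>. (Vproc k \<theta> V0 W t u \<omega> - Vproc k \<theta> V0 W s u \<omega>) ^ (2 * m))"
    by (rule V_incr) (use assms in auto)
  have bd: "\<And>u. u \<in> {a..b} \<Longrightarrow> (\<integral>\<omega>. (Vproc k \<theta> V0 W t u \<omega> - Vproc k \<theta> V0 W s u \<omega>) ^ (2 * m) \<partial>M) \<le> CV2 m * (t - s) ^ m"
    by (rule V_incr) (use assms in auto)
  note T = int_tool[where h = "\<lambda>u \<omega>. Vproc k \<theta> V0 W t u \<omega> - Vproc k \<theta> V0 W s u \<omega>", OF assms(4,6) c me i bd]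
  show "(\<lambda>\<omega>. integral {a..b} (\<lambda>u. Vproc k \<theta> V0 W t u \<omega> - Vproc k \<theta> V0 W s u \<omega>)) \<in> borel_measurable M"
    "integrable M (\<lambda>\<omega>. (integral {a..b} (\<lambda>u. Vproc k \<theta> V0 W t u \<omega> - Vproc k \<theta> V0 W s u \<omega>)) ^ (2 * m))"
    "(\<integral>\<omega>. (integral {a..b} (\<lambda>u. Vproc k \<theta> V0 W t u \<omega> - Vproc k \<theta> V0 W s u \<omega>)) ^ (2 * m) \<partial>M)
       \<le> (b - a) ^ (2 * m) * (CV2 m * (t - s) ^ m)"
    using T by auto
qed

lemma V_integrable_on:
  assumes "0 \<le> t" "t \<le> a" "a \<le> b" "b \<le> 1" "\<omega> \<in> space M"
  shows "(\<lambda>u. Vproc k \<theta> V0 W t u \<omega>) integrable_on {a..b}"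
  by (rule integrable_continuous_real, rule continuous_on_subset[OF V_cont]) (use assms in auto)

lemma I_meas:
  assumes "0 \<le> t" "t \<le> 1" "T \<le> 1"
  shows "(\<lambda>\<omega>. Iproc k \<theta> V0 W t T \<omega>) \<in> borel_measurable M"
proof (cases "t < T")
  case True
  have "(\<lambda>\<omega>. integral {t..T} (\<lambda>u. Vproc k \<theta> V0 W t u \<omega>)) \<in> borel_measurable M"
    by (rule IV1(1)[of t t T 1]) (use assms True in auto)
  then show ?thesis unfolding Iproc_def using True by simp
next
  case False then show ?thesis unfolding Iproc_def by simp
qed

end


lemma powr_even_bound:
  fixes X c p :: real
  assumes c: "0 < c" and p: "1 \<le> p" "p \<le> real (2 * m)"
  shows "\<bar>X\<bar> powr p \<le> c powr (p / 2) + c powr (p / 2) * (X ^ (2 * m) / c ^ m)"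
proof -
  define r where "r = c powr (1/2)"
  have r0: "0 < r" unfolding r_def using c by simp
  have rp: "r powr p = c powr (p / 2)" unfolding r_def using c by (simp add: powr_powr)
  have r2: "r ^ 2 = c" unfolding r_def using c by (simp add: powr_realpow[symmetric] powr_powr)
  define y where "y = \<bar>X\<bar> / r"
  have y0: "0 \<le> y" unfolding y_def using r0 by simp
  have Xy: "\<bar>X\<bar> = r * y" unfolding y_def using r0 by simp
  have "\<bar>X\<bar> powr p = r powr p * y powr p" unfolding Xy using r0 y0 by (simp add: powr_mult)
  also have "y powr p \<le> 1 + y ^ (2 * m)"
  proof (cases "y \<le> 1")
    case True
    then have "y powr p \<le> 1" using y0 p by (intro powr_le1) auto
    moreover have "0 \<le> y ^ (2 * m)" using y0 by simp
    ultimately show ?thesis by linarith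
  next
    case False
    then have "y powr p \<le> y powr real (2 * m)" using p by (intro powr_mono) auto
    also have "\<dots> = y ^ (2 * m)" using False powr_realpow[of y "2 * m"] by simp
    finally show ?thesis by simp
  qed
  also have "y ^ (2 * m) = X ^ (2 * m) / c ^ m"
  proof -
    have "y ^ (2 * m) = \<bar>X\<bar> ^ (2 * m) / r ^ (2 * m)" unfolding y_def by (simp add: power_divide)
    also have "\<bar>X\<bar> ^ (2 * m) = X ^ (2 * m)" by (simp add: power_even_abs)
    also have "r ^ (2 * m) = c ^ m" by (simp add: power_mult r2)
    finally show ?thesis .
  qed
  finally have "\<bar>X\<bar> powr p \<le> r powr p * (1 + X ^ (2 * m) / c ^ m)"
    using r0 by (simp add: mult_left_mono)
  then show ?thesis unfolding rp by (simp add: algebra_simps)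
qed

context vk
begin

definition CI :: "nat \<Rightarrow> real" where "CI m = 2 ^ (2 * m) * (CV1 (2 * m) + CV2 m)"

lemma CV1_nonneg: "0 \<le> CV1 N" unfolding CV1_def using Vm0 by simp
lemma CV2_nonneg: "0 \<le> CV2 m" unfolding CV2_def C2_def using CV1_nonneg by simp
lemma CI_nonneg: "0 \<le> CI m" unfolding CI_def using CV1_nonneg CV2_nonneg by simp

lemma pow_shrink: fixes x :: real assumes "0 \<le> x" "x \<le> 1" "a \<le> b" "0 \<le> y" "y \<le> x"
  shows "y ^ b \<le> x ^ a"
proof -
  have "y ^ b \<le> x ^ b" using assms by (intro power_mono) auto
  also have "\<dots> \<le> x ^ a" using assms by (intro power_decreasing) auto
  finally show ?thesis .
qed

lemma I_even:
  assumes st: "0 \<le> s" "s \<le> t" "t \<le> 1" and T: "0 \<le> T" "T \<le> 1" and m: "1 \<le> m"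
  shows "integrable M (\<lambda>\<omega>. (Iproc k \<theta> V0 W t T \<omega> - Iproc k \<theta> V0 W s T \<omega>) ^ (2 * m))
     \<and> (\<integral>\<omega>. (Iproc k \<theta> V0 W t T \<omega> - Iproc k \<theta> V0 W s T \<omega>) ^ (2 * m) \<partial>M) \<le> CI m * (t - s) ^ m"
proof -
  let ?I = "\<lambda>t \<omega>. Iproc k \<theta> V0 W t T \<omega>"
  let ?D = "\<lambda>\<omega>. (?I t \<omega> - ?I s \<omega>) ^ (2 * m)"
  have ts0: "0 \<le> t - s" "t - s \<le> 1" using st by auto
  have Dm: "?D \<in> borel_measurable M"
  proof -
    have "?I t \<in> borel_measurable M" "?I s \<in> borel_measurable M" using I_meas st T by auto
    then show ?thesis by measurable
  qed
  have C0: "0 \<le> CI m * (t - s) ^ m" using CI_nonneg ts0 by simp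
  consider (a) "T \<le> s" | (b) "s < T" "T \<le> t" | (c) "t < T" using st by linarith
  then show ?thesis
  proof cases
    case a
    have "\<not> t < T" "\<not> s < T" using a st by auto
    then have "?D = (\<lambda>\<omega>. 0)" using m unfolding Iproc_def by (simp add: power_0_left)
    then show ?thesis using C0 by simp
  next
    case b
    let ?Y = "\<lambda>\<omega>. integral {s..T} (\<lambda>u. Vproc k \<theta> V0 W s u \<omega>)"
    have eq: "?D = (\<lambda>\<omega>. (?Y \<omega>) ^ (2 * m))"
    proof -
      have "\<not> t < T" using b by auto
      then show ?thesis unfolding Iproc_def using b by (simp add: power_mult)
    qed
    note Y = IV1[of s s T m] 
    have "(\<integral>\<omega>. (?Y \<omega>) ^ (2 * m) \<partial>M) \<le> (T - s) ^ (2 * m) * CV1 (2 * m)" using Y st b T m by auto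
    also have "\<dots> \<le> (t - s) ^ m * CV1 (2 * m)"
      using b st by (intro mult_right_mono CV1_nonneg pow_shrink) auto
    also have "\<dots> \<le> CI m * (t - s) ^ m"
    proof -
      have x0: "0 \<le> CV1 (2 * m) + CV2 m" using CV1_nonneg CV2_nonneg by (simp add: add_nonneg_nonneg)
      have "CV1 (2 * m) \<le> 1 * (CV1 (2 * m) + CV2 m)" using CV2_nonneg by simp
      also have "\<dots> \<le> 2 ^ (2 * m) * (CV1 (2 * m) + CV2 m)" by (rule mult_right_mono[OF _ x0]) simp
      finally have "CV1 (2 * m) \<le> CI m" unfolding CI_def .
      then have "(t - s) ^ m * CV1 (2 * m) \<le> (t - s) ^ m * CI m" using ts0 by (intro mult_left_mono) auto
      then show ?thesis by (simp add: mult.commute)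
    qed
    finally show ?thesis unfolding eq using Y st b T m by auto
  next
    case c
    let ?X = "\<lambda>\<omega>. integral {t..T} (\<lambda>u. Vproc k \<theta> V0 W t u \<omega> - Vproc k \<theta> V0 W s u \<omega>)"
    let ?Y = "\<lambda>\<omega>. integral {s..t} (\<lambda>u. Vproc k \<theta> V0 W s u \<omega>)"
    have eqp: "\<And>\<omega>. \<omega> \<in> space M \<Longrightarrow> ?I t \<omega> - ?I s \<omega> = ?X \<omega> + (- ?Y \<omega>)"
    proof -
      fix \<omega> assume \<omega>: "\<omega> \<in> space M"
      have i1: "(\<lambda>u. Vproc k \<theta> V0 W t u \<omega>) integrable_on {t..T}" by (rule V_integrable_on) (use st c T \<omega> in auto)
      have i2: "(\<lambda>u. Vproc k \<theta> V0 W s u \<omega>) integrable_on {t..T}" by (rule V_integrable_on) (use st c T \<omega> in auto)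
      have i3: "(\<lambda>u. Vproc k \<theta> V0 W s u \<omega>) integrable_on {s..T}" by (rule V_integrable_on) (use st c T \<omega> in auto)
      have "integral {s..t} (\<lambda>u. Vproc k \<theta> V0 W s u \<omega>) + integral {t..T} (\<lambda>u. Vproc k \<theta> V0 W s u \<omega>)
          = integral {s..T} (\<lambda>u. Vproc k \<theta> V0 W s u \<omega>)"
        by (rule Henstock_Kurzweil_Integration.integral_combine[OF st(2) _ i3]) (use c in auto)
      moreover have "?X \<omega> = integral {t..T} (\<lambda>u. Vproc k \<theta> V0 W t u \<omega>) - integral {t..T} (\<lambda>u. Vproc k \<theta> V0 W s u \<omega>)"
        by (rule integral_diff[OF i1 i2])
      moreover have "s < T" using st c by auto
      ultimately show "?I t \<omega> - ?I s \<omega> = ?X \<omega> + (- ?Y \<omega>)" unfolding Iproc_def using c by auto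
    qed
    note X = IV2[of s t t T m] and Y = IV1[of s s t m]
    let ?R = "\<lambda>\<omega>. 2 ^ (2 * m) * ((?X \<omega>) ^ (2 * m) + (?Y \<omega>) ^ (2 * m))"
    have pw: "\<And>\<omega>. \<omega> \<in> space M \<Longrightarrow> ?D \<omega> \<le> ?R \<omega>"
    proof -
      fix \<omega> assume \<omega>: "\<omega> \<in> space M"
      have "?D \<omega> = (?X \<omega> + (- ?Y \<omega>)) ^ (2 * m)" using eqp[OF \<omega>] by simp
      also have "\<dots> \<le> 2 ^ (2 * m) * ((?X \<omega>) ^ (2 * m) + (- ?Y \<omega>) ^ (2 * m))" by (rule sq_sum2)
      also have "(- ?Y \<omega>) ^ (2 * m) = (?Y \<omega>) ^ (2 * m)" by (simp add: power_mult)
      finally show "?D \<omega> \<le> ?R \<omega>" .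
    qed
    have Ri: "integrable M ?R" using X Y st c T m by auto
    have Di: "integrable M ?D"
    proof (rule Bochner_Integration.integrable_bound[OF Ri Dm], rule AE_I2)
      fix \<omega> assume \<omega>: "\<omega> \<in> space M"
      have "0 \<le> ?D \<omega>" by (simp add: zero_le_even_power)
      moreover have "0 \<le> ?R \<omega>" by (simp add: zero_le_even_power)
      ultimately show "norm (?D \<omega>) \<le> norm (?R \<omega>)" using pw[OF \<omega>] by simp
    qed
    have "(\<integral>\<omega>. ?D \<omega> \<partial>M) \<le> (\<integral>\<omega>. ?R \<omega> \<partial>M)" by (rule integral_mono[OF Di Ri]) (use pw in auto)
    also have "\<dots> = 2 ^ (2 * m) * ((\<integral>\<omega>. (?X \<omega>) ^ (2 * m) \<partial>M) + (\<integral>\<omega>. (?Y \<omega>) ^ (2 * m) \<partial>M))"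
      using X Y st c T m by simp
    also have "\<dots> \<le> 2 ^ (2 * m) * ((T - t) ^ (2 * m) * (CV2 m * (t - s) ^ m) + (t - s) ^ (2 * m) * CV1 (2 * m))"
      using X Y st c T m by (intro mult_left_mono add_mono) auto
    also have "\<dots> \<le> 2 ^ (2 * m) * (1 * (CV2 m * (t - s) ^ m) + (t - s) ^ m * CV1 (2 * m))"
    proof (intro mult_left_mono add_mono mult_right_mono)
      show "(T - t) ^ (2 * m) \<le> 1" using c st T by (intro power_le_one) auto
      show "(t - s) ^ (2 * m) \<le> (t - s) ^ m" using ts0 by (intro power_decreasing) auto
    qed (use CV1_nonneg CV2_nonneg ts0 in auto)
    also have "\<dots> = CI m * (t - s) ^ m" unfolding CI_def by (simp add: algebra_simps)
    finally show ?thesis using Di by simp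
  qed
qed

lemma I_even_abs:
  assumes "t \<in> {0..1}" "s \<in> {0..1}" "T \<in> {0..1}" "1 \<le> m"
  shows "integrable M (\<lambda>\<omega>. (Iproc k \<theta> V0 W t T \<omega> - Iproc k \<theta> V0 W s T \<omega>) ^ (2 * m))
     \<and> (\<integral>\<omega>. (Iproc k \<theta> V0 W t T \<omega> - Iproc k \<theta> V0 W s T \<omega>) ^ (2 * m) \<partial>M) \<le> CI m * \<bar>t - s\<bar> ^ m"
proof (cases "s \<le> t")
  case True then show ?thesis using I_even[of s t T m] assms by auto
next
  case False
  have sw: "\<And>\<omega>. (Iproc k \<theta> V0 W t T \<omega> - Iproc k \<theta> V0 W s T \<omega>) ^ (2 * m) = (Iproc k \<theta> V0 W s T \<omega> - Iproc k \<theta> V0 W t T \<omega>) ^ (2 * m)"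
    by (simp add: power_mult power2_commute)
  show ?thesis unfolding sw using I_even[of t s T m] assms False by auto
qed

lemma part1:
  assumes p: "1 \<le> p"
  shows "\<exists>C. \<forall>t\<in>{0..1}. \<forall>s\<in>{0..1}. \<forall>T\<in>{0..1}.
        integrable M (\<lambda>\<omega>. \<bar>Iproc k \<theta> V0 W t T \<omega> - Iproc k \<theta> V0 W s T \<omega>\<bar> powr p)
      \<and> (\<integral>\<omega>. \<bar>Iproc k \<theta> V0 W t T \<omega> - Iproc k \<theta> V0 W s T \<omega>\<bar> powr p \<partial>M) \<le> C * \<bar>t - s\<bar> powr (p / 2)"
proof -
  define m where "m = nat \<lceil>p\<rceil>"
  have m1: "1 \<le> m" unfolding m_def using p by linarith
  have pm: "p \<le> real (2 * m)" unfolding m_def using p by linarith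
  show ?thesis
  proof (intro exI ballI)
    fix t s T :: real assume t: "t \<in> {0..1}" and s: "s \<in> {0..1}" and T: "T \<in> {0..1}"
    let ?X = "\<lambda>\<omega>. Iproc k \<theta> V0 W t T \<omega> - Iproc k \<theta> V0 W s T \<omega>"
    have Xm: "?X \<in> borel_measurable M"
    proof -
      have "(\<lambda>\<omega>. Iproc k \<theta> V0 W t T \<omega>) \<in> borel_measurable M" "(\<lambda>\<omega>. Iproc k \<theta> V0 W s T \<omega>) \<in> borel_measurable M"
        using I_meas t s T by auto
      then show ?thesis by measurable
    qed
    note E = I_even_abs[OF t s T m1]
    show "integrable M (\<lambda>\<omega>. \<bar>?X \<omega>\<bar> powr p) \<and> (\<integral>\<omega>. \<bar>?X \<omega>\<bar> powr p \<partial>M) \<le> (1 + CI m) * \<bar>t - s\<bar> powr (p / 2)"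
    proof (cases "t = s")
      case True then show ?thesis by simp
    next
      case False
      define c where "c = \<bar>t - s\<bar>"
      have c0: "0 < c" unfolding c_def using False by simp
      let ?R = "\<lambda>\<omega>. c powr (p / 2) + c powr (p / 2) * ((?X \<omega>) ^ (2 * m) / c ^ m)"
      have pw: "\<And>\<omega>. \<bar>?X \<omega>\<bar> powr p \<le> ?R \<omega>" by (rule powr_even_bound[OF c0 p pm])
      have Ri: "integrable M ?R" using E by simp
      have Pm: "(\<lambda>\<omega>. \<bar>?X \<omega>\<bar> powr p) \<in> borel_measurable M" using Xm by measurable
      have Pi: "integrable M (\<lambda>\<omega>. \<bar>?X \<omega>\<bar> powr p)"
      proof (rule Bochner_Integration.integrable_bound[OF Ri Pm], rule AE_I2)
        fix \<omega>
        have "0 \<le> \<bar>?X \<omega>\<bar> powr p" by simp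
        then show "norm (\<bar>?X \<omega>\<bar> powr p) \<le> norm (?R \<omega>)" using pw[of \<omega>] by simp
      qed
      have "(\<integral>\<omega>. \<bar>?X \<omega>\<bar> powr p \<partial>M) \<le> (\<integral>\<omega>. ?R \<omega> \<partial>M)" by (rule integral_mono[OF Pi Ri pw])
      also have "\<dots> = c powr (p / 2) + c powr (p / 2) * ((\<integral>\<omega>. (?X \<omega>) ^ (2 * m) \<partial>M) / c ^ m)"
        using E by (simp add: prob_space)
      also have "\<dots> \<le> c powr (p / 2) + c powr (p / 2) * (CI m * c ^ m / c ^ m)"
        using E c0 unfolding c_def by (intro add_mono mult_left_mono divide_right_mono) auto
      also have "\<dots> = (1 + CI m) * c powr (p / 2)" using c0 by (simp add: algebra_simps)
      finally show ?thesis using Pi unfolding c_def by simp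
    qed
  qed
qed

end


definition cfun :: "(real \<Rightarrow> real) \<Rightarrow> real \<Rightarrow> real \<Rightarrow> real" where
  "cfun \<phi> b \<tau> = (if b - \<tau> < 0 then 0 else \<phi> (b - \<tau>))"

definition clip :: "real \<Rightarrow> real \<Rightarrow> real \<Rightarrow> real" where
  "clip s t x = max s (min t x)"

lemma sq3: fixes u v w :: real shows "(u + v + w)\<^sup>2 \<le> 3 * (u\<^sup>2 + v\<^sup>2 + w\<^sup>2)"
proof -
  have "0 \<le> (u - v)\<^sup>2 + (v - w)\<^sup>2 + (u - w)\<^sup>2" by simp
  then show ?thesis by (simp add: power2_eq_square algebra_simps)
qed

lemma power_mono_abs: fixes x y :: real assumes "\<bar>x\<bar> \<le> y" shows "x\<^sup>2 \<le> y\<^sup>2"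
proof -
  have "\<bar>x\<bar>\<^sup>2 \<le> y\<^sup>2" using assms by (intro power_mono) auto
  then show ?thesis by simp
qed

context vk
begin

definition gl :: "(real \<Rightarrow> real) \<Rightarrow> real \<Rightarrow> real \<Rightarrow> real \<Rightarrow> 'a \<Rightarrow> real" where
  "gl \<phi> a b \<tau> \<omega> = cfun \<phi> b \<tau> * (Iproc k \<theta> V0 W \<tau> b \<omega> - Iproc k \<theta> V0 W \<tau> a \<omega>)"

definition Cg :: "real \<Rightarrow> real \<Rightarrow> real" where
  "Cg Kp Lp = 3 * (Lp\<^sup>2 * CV1 2 + Kp\<^sup>2 * CV2 1 + Kp\<^sup>2 * CV1 2)"

lemma D_eq:
  assumes "0 \<le> \<tau>" "\<tau> < b" "a \<le> b" "b \<le> 1" "\<omega> \<in> space M"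
  shows "Iproc k \<theta> V0 W \<tau> b \<omega> - Iproc k \<theta> V0 W \<tau> a \<omega> = integral {max \<tau> a..b} (\<lambda>u. Vproc k \<theta> V0 W \<tau> u \<omega>)"
proof (cases "\<tau> < a")
  case True
  have "integral {\<tau>..a} (\<lambda>u. Vproc k \<theta> V0 W \<tau> u \<omega>) + integral {a..b} (\<lambda>u. Vproc k \<theta> V0 W \<tau> u \<omega>)
      = integral {\<tau>..b} (\<lambda>u. Vproc k \<theta> V0 W \<tau> u \<omega>)"
    by (rule Henstock_Kurzweil_Integration.integral_combine[OF _ assms(3) V_integrable_on])
       (use assms True in auto)
  then show ?thesis unfolding Iproc_def using True assms by auto
next
  case False
  then show ?thesis unfolding Iproc_def using assms by auto
qed

lemma gl_meas:
  assumes "0 \<le> \<tau>" "\<tau> \<le> 1" "a \<le> 1" "b \<le> 1"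
  shows "gl \<phi> a b \<tau> \<in> borel_measurable M"
proof -
  have "(\<lambda>\<omega>. Iproc k \<theta> V0 W \<tau> b \<omega>) \<in> borel_measurable M" "(\<lambda>\<omega>. Iproc k \<theta> V0 W \<tau> a \<omega>) \<in> borel_measurable M"
    using I_meas assms by auto
  then show ?thesis unfolding gl_def[abs_def] by measurable
qed

lemma CV_pos: "0 \<le> CV1 2" "0 \<le> CV2 1" using CV1_nonneg CV2_nonneg by auto

lemma per_l:
  assumes ab: "0 \<le> a" "a \<le> b" "b \<le> 1" and st: "0 \<le> s" "s \<le> t" "t \<le> 1"
    and Kp: "\<And>x. x \<in> {0..1} \<Longrightarrow> \<bar>\<phi> x\<bar> \<le> Kp"
    and Lp: "\<And>x y. x \<in> {0..1} \<Longrightarrow> y \<in> {0..1} \<Longrightarrow> \<bar>\<phi> x - \<phi> y\<bar> \<le> Lp * \<bar>x - y\<bar>"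
  shows "integrable M (\<lambda>\<omega>. (gl \<phi> a b t \<omega> - gl \<phi> a b s \<omega>)\<^sup>2)
    \<and> (\<integral>\<omega>. (gl \<phi> a b t \<omega> - gl \<phi> a b s \<omega>)\<^sup>2 \<partial>M) \<le> Cg Kp Lp * ((b - a)\<^sup>2 * (t - s) + (clip s t b - clip s t a)\<^sup>2)"
proof -
  let ?G = "\<lambda>\<omega>. (gl \<phi> a b t \<omega> - gl \<phi> a b s \<omega>)\<^sup>2"
  have Gm: "?G \<in> borel_measurable M"
  proof -
    have "gl \<phi> a b t \<in> borel_measurable M" "gl \<phi> a b s \<in> borel_measurable M" using gl_meas ab st by auto
    then show ?thesis by measurable
  qed
  have ts: "0 \<le> t - s" "t - s \<le> 1" using st by auto
  have Cg0: "0 \<le> Cg Kp Lp" unfolding Cg_def using CV_pos by simp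
  have RHS0: "0 \<le> Cg Kp Lp * ((b - a)\<^sup>2 * (t - s) + (clip s t b - clip s t a)\<^sup>2)"
    using Cg0 ts by simp
  have Kp0: "0 \<le> Kp" using Kp[of 0] by auto
  consider (a) "b \<le> s" | (b) "s < b" "b \<le> t" | (c) "t < b" using st by linarith
  then show ?thesis
  proof cases
    case a
    then have "?G = (\<lambda>\<omega>. 0)" unfolding gl_def Iproc_def using ab st by auto
    then show ?thesis using RHS0 by simp
  next
    case b
    let ?Y = "\<lambda>\<omega>. integral {max s a..b} (\<lambda>u. Vproc k \<theta> V0 W s u \<omega>)"
    have pw: "\<And>\<omega>. \<omega> \<in> space M \<Longrightarrow> ?G \<omega> \<le> Kp\<^sup>2 * (?Y \<omega>)\<^sup>2"
    proof -
      fix \<omega> assume \<omega>: "\<omega> \<in> space M"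
      have "gl \<phi> a b t \<omega> = 0" unfolding gl_def Iproc_def using b ab by auto
      moreover have "gl \<phi> a b s \<omega> = \<phi> (b - s) * ?Y \<omega>"
        unfolding gl_def cfun_def using D_eq[OF st(1) b(1) ab(2,3) \<omega>] b by auto
      moreover have "(\<phi> (b - s))\<^sup>2 \<le> Kp\<^sup>2" using Kp[of "b - s"] b st ab
        by (intro power_mono_abs) (auto simp: abs_minus_commute)
      ultimately show "?G \<omega> \<le> Kp\<^sup>2 * (?Y \<omega>)\<^sup>2"
        by (simp add: power_mult_distrib mult_right_mono)
    qed
    note Y = IV1[of s "max s a" b 1]
    have Yi: "integrable M (\<lambda>\<omega>. (?Y \<omega>)\<^sup>2)" using Y ab st b by auto
    have Yb: "(\<integral>\<omega>. (?Y \<omega>)\<^sup>2 \<partial>M) \<le> (b - max s a)\<^sup>2 * CV1 2" using Y ab st b by auto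
    have Ri: "integrable M (\<lambda>\<omega>. Kp\<^sup>2 * (?Y \<omega>)\<^sup>2)" using Yi by simp
    have Gi: "integrable M ?G"
    proof (rule Bochner_Integration.integrable_bound[OF Ri Gm], rule AE_I2)
      fix \<omega> assume "\<omega> \<in> space M"
      then show "norm (?G \<omega>) \<le> norm (Kp\<^sup>2 * (?Y \<omega>)\<^sup>2)" using pw by simp
    qed
    have cl: "clip s t b - clip s t a = b - max s a" unfolding clip_def using b ab by auto
    have "(\<integral>\<omega>. ?G \<omega> \<partial>M) \<le> (\<integral>\<omega>. Kp\<^sup>2 * (?Y \<omega>)\<^sup>2 \<partial>M)" by (rule integral_mono[OF Gi Ri]) (use pw in auto)
    also have "\<dots> = Kp\<^sup>2 * (\<integral>\<omega>. (?Y \<omega>)\<^sup>2 \<partial>M)" by simp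
    also have "\<dots> \<le> Kp\<^sup>2 * ((b - max s a)\<^sup>2 * CV1 2)" by (rule mult_left_mono[OF Yb]) simp
    also have "\<dots> = (Kp\<^sup>2 * CV1 2) * (clip s t b - clip s t a)\<^sup>2" unfolding cl by simp
    also have "\<dots> \<le> Cg Kp Lp * (clip s t b - clip s t a)\<^sup>2"
      unfolding Cg_def using CV_pos by (intro mult_right_mono) auto
    also have "\<dots> \<le> Cg Kp Lp * ((b - a)\<^sup>2 * (t - s) + (clip s t b - clip s t a)\<^sup>2)"
      using Cg0 ts by (intro mult_left_mono) auto
    finally show ?thesis using Gi by simp
  next
    case c
    define \<alpha> where "\<alpha> = max t a"
    define \<beta> where "\<beta> = max s a"
    have \<alpha>\<beta>: "\<beta> \<le> \<alpha>" "\<alpha> \<le> b" "t \<le> \<alpha>" "s \<le> \<beta>" "0 \<le> \<beta>" "a \<le> \<beta>" "a \<le> \<alpha>"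
      unfolding \<alpha>_def \<beta>_def using c ab st by auto
    let ?X1 = "\<lambda>\<omega>. integral {\<alpha>..b} (\<lambda>u. Vproc k \<theta> V0 W t u \<omega>)"
    let ?X2 = "\<lambda>\<omega>. integral {\<alpha>..b} (\<lambda>u. Vproc k \<theta> V0 W t u \<omega> - Vproc k \<theta> V0 W s u \<omega>)"
    let ?X3 = "\<lambda>\<omega>. integral {\<beta>..\<alpha>} (\<lambda>u. Vproc k \<theta> V0 W s u \<omega>)"
    let ?R = "\<lambda>\<omega>. 3 * (Lp\<^sup>2 * (t - s)\<^sup>2 * (?X1 \<omega>)\<^sup>2 + Kp\<^sup>2 * (?X2 \<omega>)\<^sup>2 + Kp\<^sup>2 * (?X3 \<omega>)\<^sup>2)"
    have pw: "\<And>\<omega>. \<omega> \<in> space M \<Longrightarrow> ?G \<omega> \<le> ?R \<omega>"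
    proof -
      fix \<omega> assume \<omega>: "\<omega> \<in> space M"
      have Dt: "Iproc k \<theta> V0 W t b \<omega> - Iproc k \<theta> V0 W t a \<omega> = ?X1 \<omega>"
        unfolding \<alpha>_def by (rule D_eq) (use st c ab \<omega> in auto)
      have Ds: "Iproc k \<theta> V0 W s b \<omega> - Iproc k \<theta> V0 W s a \<omega> = integral {\<beta>..b} (\<lambda>u. Vproc k \<theta> V0 W s u \<omega>)"
        unfolding \<beta>_def by (rule D_eq) (use st c ab \<omega> in auto)
      have i1: "(\<lambda>u. Vproc k \<theta> V0 W t u \<omega>) integrable_on {\<alpha>..b}" by (rule V_integrable_on) (use st \<alpha>\<beta> ab \<omega> in auto)
      have i2: "(\<lambda>u. Vproc k \<theta> V0 W s u \<omega>) integrable_on {\<alpha>..b}" by (rule V_integrable_on) (use st \<alpha>\<beta> ab \<omega> in auto)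
      have i3: "(\<lambda>u. Vproc k \<theta> V0 W s u \<omega>) integrable_on {\<beta>..b}" by (rule V_integrable_on) (use st \<alpha>\<beta> ab \<omega> in auto)
      have sp: "integral {\<beta>..b} (\<lambda>u. Vproc k \<theta> V0 W s u \<omega>) = ?X3 \<omega> + integral {\<alpha>..b} (\<lambda>u. Vproc k \<theta> V0 W s u \<omega>)"
        using Henstock_Kurzweil_Integration.integral_combine[OF \<alpha>\<beta>(1,2) i3] by simp
      have x2: "?X2 \<omega> = ?X1 \<omega> - integral {\<alpha>..b} (\<lambda>u. Vproc k \<theta> V0 W s u \<omega>)"
        by (rule integral_diff[OF i1 i2])
      have ct: "cfun \<phi> b t = \<phi> (b - t)" "cfun \<phi> b s = \<phi> (b - s)" unfolding cfun_def using c st by auto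
      have "gl \<phi> a b t \<omega> - gl \<phi> a b s \<omega> = (\<phi> (b - t) - \<phi> (b - s)) * ?X1 \<omega> + \<phi> (b - s) * ?X2 \<omega> + (- \<phi> (b - s) * ?X3 \<omega>)"
        unfolding gl_def ct Dt Ds sp x2 by (simp add: algebra_simps)
      then have "?G \<omega> = ((\<phi> (b - t) - \<phi> (b - s)) * ?X1 \<omega> + \<phi> (b - s) * ?X2 \<omega> + (- \<phi> (b - s) * ?X3 \<omega>))\<^sup>2"
        by (simp only:)
      also have "\<dots> \<le> 3 * (((\<phi> (b - t) - \<phi> (b - s)) * ?X1 \<omega>)\<^sup>2 + (\<phi> (b - s) * ?X2 \<omega>)\<^sup>2 + (- \<phi> (b - s) * ?X3 \<omega>)\<^sup>2)"
        by (rule sq3)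
      also have "\<dots> \<le> ?R \<omega>"
      proof -
        have "(\<phi> (b - t) - \<phi> (b - s))\<^sup>2 \<le> (Lp * \<bar>(b - t) - (b - s)\<bar>)\<^sup>2"
          using Lp[of "b - t" "b - s"] c st ab by (intro power_mono_abs) (auto simp: abs_minus_commute)
        also have "\<dots> = Lp\<^sup>2 * (t - s)\<^sup>2" by (simp add: power_mult_distrib power2_commute)
        finally have L: "(\<phi> (b - t) - \<phi> (b - s))\<^sup>2 \<le> Lp\<^sup>2 * (t - s)\<^sup>2" .
        have K: "(\<phi> (b - s))\<^sup>2 \<le> Kp\<^sup>2" using Kp[of "b - s"] c st ab by (intro power_mono_abs) (auto simp: abs_minus_commute)
        show ?thesis
          using mult_right_mono[OF L, of "(?X1 \<omega>)\<^sup>2"] mult_right_mono[OF K, of "(?X2 \<omega>)\<^sup>2"]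
            mult_right_mono[OF K, of "(?X3 \<omega>)\<^sup>2"]
          by (simp add: power_mult_distrib)
      qed
      finally show "?G \<omega> \<le> ?R \<omega>" .
    qed
    note X1 = IV1[of t \<alpha> b 1] and X2 = IV2[of s t \<alpha> b 1] and X3 = IV1[of s \<beta> \<alpha> 1]
    have X1i: "integrable M (\<lambda>\<omega>. (?X1 \<omega>)\<^sup>2)" and X1b: "(\<integral>\<omega>. (?X1 \<omega>)\<^sup>2 \<partial>M) \<le> (b - \<alpha>)\<^sup>2 * CV1 2"
      using X1 \<alpha>\<beta> st ab by auto
    have X2i: "integrable M (\<lambda>\<omega>. (?X2 \<omega>)\<^sup>2)" and X2b: "(\<integral>\<omega>. (?X2 \<omega>)\<^sup>2 \<partial>M) \<le> (b - \<alpha>)\<^sup>2 * (CV2 1 * (t - s))"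
      using X2 \<alpha>\<beta> st ab by auto
    have X3i: "integrable M (\<lambda>\<omega>. (?X3 \<omega>)\<^sup>2)" and X3b: "(\<integral>\<omega>. (?X3 \<omega>)\<^sup>2 \<partial>M) \<le> (\<alpha> - \<beta>)\<^sup>2 * CV1 2"
      using X3 \<alpha>\<beta> st ab by auto
    have Ri: "integrable M ?R" using X1i X2i X3i by simp
    have Gi: "integrable M ?G"
    proof (rule Bochner_Integration.integrable_bound[OF Ri Gm], rule AE_I2)
      fix \<omega> assume \<omega>: "\<omega> \<in> space M"
      have "0 \<le> ?G \<omega>" by simp
      then show "norm (?G \<omega>) \<le> norm (?R \<omega>)" using pw[OF \<omega>] by simp
    qed
    have ba: "(b - \<alpha>)\<^sup>2 \<le> (b - a)\<^sup>2" using \<alpha>\<beta> by (intro power_mono) auto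
    have cl: "clip s t b - clip s t a = \<alpha> - \<beta>" unfolding clip_def \<alpha>_def \<beta>_def using c st ab by auto
    have tt: "(t - s)\<^sup>2 \<le> t - s" using ts by (simp add: power2_eq_square mult_left_le_one_le)
    have "(\<integral>\<omega>. ?G \<omega> \<partial>M) \<le> (\<integral>\<omega>. ?R \<omega> \<partial>M)" by (rule integral_mono[OF Gi Ri]) (use pw in auto)
    also have "\<dots> = 3 * (Lp\<^sup>2 * (t - s)\<^sup>2 * (\<integral>\<omega>. (?X1 \<omega>)\<^sup>2 \<partial>M) + Kp\<^sup>2 * (\<integral>\<omega>. (?X2 \<omega>)\<^sup>2 \<partial>M)
        + Kp\<^sup>2 * (\<integral>\<omega>. (?X3 \<omega>)\<^sup>2 \<partial>M))"
      using X1i X2i X3i by simp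
    also have "\<dots> \<le> 3 * (Lp\<^sup>2 * (t - s)\<^sup>2 * ((b - \<alpha>)\<^sup>2 * CV1 2) + Kp\<^sup>2 * ((b - \<alpha>)\<^sup>2 * (CV2 1 * (t - s)))
        + Kp\<^sup>2 * ((\<alpha> - \<beta>)\<^sup>2 * CV1 2))"
      using X1b X2b X3b by (intro mult_left_mono add_mono) auto
    also have "\<dots> \<le> 3 * (Lp\<^sup>2 * (t - s) * ((b - a)\<^sup>2 * CV1 2) + Kp\<^sup>2 * ((b - a)\<^sup>2 * (CV2 1 * (t - s)))
        + Kp\<^sup>2 * ((\<alpha> - \<beta>)\<^sup>2 * CV1 2))"
    proof -
      have A: "Lp\<^sup>2 * (t - s)\<^sup>2 * ((b - \<alpha>)\<^sup>2 * CV1 2) \<le> Lp\<^sup>2 * (t - s) * ((b - a)\<^sup>2 * CV1 2)"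
      proof -
        have "(t - s)\<^sup>2 * ((b - \<alpha>)\<^sup>2 * CV1 2) \<le> (t - s) * ((b - a)\<^sup>2 * CV1 2)"
          by (rule mult_mono[OF tt mult_right_mono[OF ba]]) (use CV_pos ts in auto)
        then show ?thesis by (simp add: mult.assoc mult_left_mono)
      qed
      have B: "Kp\<^sup>2 * ((b - \<alpha>)\<^sup>2 * (CV2 1 * (t - s))) \<le> Kp\<^sup>2 * ((b - a)\<^sup>2 * (CV2 1 * (t - s)))"
        by (rule mult_left_mono[OF mult_right_mono[OF ba]]) (use CV_pos ts in auto)
      show ?thesis by (rule mult_left_mono[OF add_mono[OF add_mono[OF A B] order_refl]]) simp
    qed
    also have "\<dots> = 3 * (Lp\<^sup>2 * CV1 2 + Kp\<^sup>2 * CV2 1) * ((b - a)\<^sup>2 * (t - s)) + 3 * (Kp\<^sup>2 * CV1 2) * (clip s t b - clip s t a)\<^sup>2"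
      unfolding cl by (simp add: algebra_simps)
    also have "\<dots> \<le> Cg Kp Lp * ((b - a)\<^sup>2 * (t - s)) + Cg Kp Lp * (clip s t b - clip s t a)\<^sup>2"
      unfolding Cg_def using CV_pos ts by (intro add_mono mult_right_mono) auto
    also have "\<dots> = Cg Kp Lp * ((b - a)\<^sup>2 * (t - s) + (clip s t b - clip s t a)\<^sup>2)" by (simp add: algebra_simps)
    finally show ?thesis using Gi by simp
  qed
qed

end


lemma telescope1: fixes f :: "nat \<Rightarrow> real" shows "(\<Sum>l\<in>{1..j}. f l - f (l - 1)) = f j - f 0"
  by (induction j) (auto simp: atLeastAtMostSuc_conv)

lemma clip_mono: "s \<le> t \<Longrightarrow> x \<le> y \<Longrightarrow> clip s t x \<le> clip s t y" unfolding clip_def by auto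
lemma clip_range: "s \<le> t \<Longrightarrow> clip s t x \<in> {s..t}" unfolding clip_def by auto

lemma grid_facts:
  assumes g: "grid d Tg" and l: "l \<in> {1..j}" and j: "j \<le> d"
  shows "0 \<le> Tg (l - 1)" "Tg (l - 1) < Tg l" "Tg l \<le> 1"
proof -
  have inc: "\<And>i. i < d \<Longrightarrow> Tg i \<le> Tg (Suc i)" using g unfolding grid_def by (auto intro: less_imp_le)
  have "Tg 0 \<le> Tg (l - 1)" by (rule chain_mono[of d]) (use inc l j in auto)
  then show "0 \<le> Tg (l - 1)" using g unfolding grid_def by auto
  have "l - 1 < d" using l j by auto
  then have "Tg (l - 1) < Tg (Suc (l - 1))" using g unfolding grid_def by blast
  moreover have "Suc (l - 1) = l" using l by auto
  ultimately show "Tg (l - 1) < Tg l" by simp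
  have "Tg l \<le> Tg d" by (rule chain_mono[of d]) (use inc l j in auto)
  then show "Tg l \<le> 1" using g unfolding grid_def by auto
qed

lemma cs_weighted:
  fixes X w :: "nat \<Rightarrow> real"
  assumes "\<And>l. l \<in> A \<Longrightarrow> 0 < w l"
  shows "(\<Sum>l\<in>A. X l)\<^sup>2 \<le> (\<Sum>l\<in>A. w l) * (\<Sum>l\<in>A. (X l)\<^sup>2 / w l)"
proof -
  have "(\<Sum>l\<in>A. X l) = (\<Sum>l\<in>A. sqrt (w l) * (X l / sqrt (w l)))"
  proof (rule sum.cong[OF refl])
    fix l assume "l \<in> A"
    then have "0 < sqrt (w l)" using assms by simp
    then show "X l = sqrt (w l) * (X l / sqrt (w l))" by simp
  qed
  then have "(\<Sum>l\<in>A. X l)\<^sup>2 \<le> (\<Sum>l\<in>A. (sqrt (w l))\<^sup>2) * (\<Sum>l\<in>A. (X l / sqrt (w l))\<^sup>2)"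
    by (simp only:) (rule Cauchy_Schwarz_ineq_sum)
  also have "(\<Sum>l\<in>A. (sqrt (w l))\<^sup>2) = (\<Sum>l\<in>A. w l)" using assms by (intro sum.cong) (auto simp: less_imp_le)
  also have "(\<Sum>l\<in>A. (X l / sqrt (w l))\<^sup>2) = (\<Sum>l\<in>A. (X l)\<^sup>2 / w l)"
    using assms by (intro sum.cong) (auto simp: power_divide less_imp_le)
  finally show ?thesis .
qed

context vk
begin

lemma sum_l:
  assumes g: "grid d Tg" and j: "j \<le> d" and st: "0 \<le> s" "s \<le> t" "t \<le> 1"
    and Kp: "\<And>x. x \<in> {0..1} \<Longrightarrow> \<bar>\<phi> x\<bar> \<le> Kp"
    and Lp: "\<And>x y. x \<in> {0..1} \<Longrightarrow> y \<in> {0..1} \<Longrightarrow> \<bar>\<phi> x - \<phi> y\<bar> \<le> Lp * \<bar>x - y\<bar>"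
  shows "integrable M (\<lambda>\<omega>. (\<Sum>l\<in>{1..j}. gl \<phi> (Tg (l - 1)) (Tg l) t \<omega> - gl \<phi> (Tg (l - 1)) (Tg l) s \<omega>)\<^sup>2)
    \<and> (\<integral>\<omega>. (\<Sum>l\<in>{1..j}. gl \<phi> (Tg (l - 1)) (Tg l) t \<omega> - gl \<phi> (Tg (l - 1)) (Tg l) s \<omega>)\<^sup>2 \<partial>M)
       \<le> 4 * Cg Kp Lp * (t - s)"
proof -
  let ?X = "\<lambda>l \<omega>. gl \<phi> (Tg (l - 1)) (Tg l) t \<omega> - gl \<phi> (Tg (l - 1)) (Tg l) s \<omega>"
  let ?S = "\<lambda>\<omega>. (\<Sum>l\<in>{1..j}. ?X l \<omega>)\<^sup>2"
  note gf = grid_facts[OF g _ j]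
  have PL: "\<And>l. l \<in> {1..j} \<Longrightarrow> integrable M (\<lambda>\<omega>. (?X l \<omega>)\<^sup>2) \<and> (\<integral>\<omega>. (?X l \<omega>)\<^sup>2 \<partial>M)
       \<le> Cg Kp Lp * ((Tg l - Tg (l - 1))\<^sup>2 * (t - s) + (clip s t (Tg l) - clip s t (Tg (l - 1)))\<^sup>2)"
    using per_l[OF _ _ _ st Kp Lp] gf by (meson less_imp_le)
  have Sm: "?S \<in> borel_measurable M"
  proof -
    have "\<And>l. l \<in> {1..j} \<Longrightarrow> ?X l \<in> borel_measurable M"
    proof -
      fix l assume l: "l \<in> {1..j}"
      have "gl \<phi> (Tg (l - 1)) (Tg l) t \<in> borel_measurable M" "gl \<phi> (Tg (l - 1)) (Tg l) s \<in> borel_measurable M"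
        using gl_meas gf[OF l] st by auto
      then show "?X l \<in> borel_measurable M" by measurable
    qed
    then have "(\<lambda>\<omega>. \<Sum>l\<in>{1..j}. ?X l \<omega>) \<in> borel_measurable M" by (rule borel_measurable_sum)
    then show ?thesis by measurable
  qed
  have Cg0: "0 \<le> Cg Kp Lp" unfolding Cg_def using CV_pos by simp
  show ?thesis
  proof (cases "s = t")
    case True
    then show ?thesis unfolding gl_def by simp
  next
    case False
    then have st': "s < t" using st by auto
    define \<sigma> where "\<sigma> = sqrt (t - s)"
    have s0: "0 < \<sigma>" unfolding \<sigma>_def using st' by simp
    have s1: "\<sigma> \<le> 1" unfolding \<sigma>_def using st by simp
    have ss: "\<sigma>\<^sup>2 = t - s" unfolding \<sigma>_def using st' by simp
    define w where "w l = (Tg l - Tg (l - 1)) * \<sigma> + (clip s t (Tg l) - clip s t (Tg (l - 1)))" for l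
    have mpos: "\<And>l. l \<in> {1..j} \<Longrightarrow> 0 \<le> clip s t (Tg l) - clip s t (Tg (l - 1))"
      using clip_mono[of s t] gf st by (simp add: less_imp_le)
    have w0: "\<And>l. l \<in> {1..j} \<Longrightarrow> 0 < w l"
      unfolding w_def using gf s0 mpos by (intro add_pos_nonneg mult_pos_pos) auto
    have wsq: "\<And>l. l \<in> {1..j} \<Longrightarrow> (Tg l - Tg (l - 1))\<^sup>2 * (t - s) + (clip s t (Tg l) - clip s t (Tg (l - 1)))\<^sup>2 \<le> (w l)\<^sup>2"
    proof -
      fix l assume l: "l \<in> {1..j}"
      have "0 \<le> 2 * ((Tg l - Tg (l - 1)) * \<sigma>) * (clip s t (Tg l) - clip s t (Tg (l - 1)))"
        using gf[OF l] s0 mpos[OF l] by simp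
      then show "(Tg l - Tg (l - 1))\<^sup>2 * (t - s) + (clip s t (Tg l) - clip s t (Tg (l - 1)))\<^sup>2 \<le> (w l)\<^sup>2"
        unfolding w_def ss[symmetric] by (simp add: power2_eq_square algebra_simps)
    qed
    have sumw: "(\<Sum>l\<in>{1..j}. w l) \<le> 2 * \<sigma>"
    proof -
      have "(\<Sum>l\<in>{1..j}. w l) = \<sigma> * (\<Sum>l\<in>{1..j}. Tg l - Tg (l - 1)) + (\<Sum>l\<in>{1..j}. clip s t (Tg l) - clip s t (Tg (l - 1)))"
        unfolding w_def by (simp add: sum.distrib sum_distrib_left mult.commute)
      also have "\<dots> = \<sigma> * (Tg j - Tg 0) + (clip s t (Tg j) - clip s t (Tg 0))"
        by (simp only: telescope1[of Tg] telescope1[of "\<lambda>l. clip s t (Tg l)"])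
      also have "\<dots> \<le> \<sigma> * 1 + (t - s)"
      proof (intro add_mono mult_left_mono)
        have "Tg j \<le> 1" using j g gf[of j] by (cases "j = 0") (auto simp: grid_def)
        then show "Tg j - Tg 0 \<le> 1" using g unfolding grid_def by auto
        have "clip s t (Tg j) \<le> t" "s \<le> clip s t (Tg 0)" using clip_range[of s t] st by auto
        then show "clip s t (Tg j) - clip s t (Tg 0) \<le> t - s" by linarith
      qed (use s0 in auto)
      also have "t - s \<le> \<sigma>" using ss s0 s1 by (metis mult_left_le_one_le less_imp_le power2_eq_square)
      finally show ?thesis by simp
    qed
    let ?R = "\<lambda>\<omega>. (\<Sum>l\<in>{1..j}. w l) * (\<Sum>l\<in>{1..j}. (?X l \<omega>)\<^sup>2 / w l)"
    have pw: "\<And>\<omega>. ?S \<omega> \<le> ?R \<omega>" by (rule cs_weighted) (use w0 in auto)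
    have Ri: "integrable M ?R" using PL by (intro integrable_mult_right Bochner_Integration.integrable_sum integrable_divide) auto
    have Si: "integrable M ?S"
    proof (rule Bochner_Integration.integrable_bound[OF Ri Sm], rule AE_I2)
      fix \<omega>
      have "0 \<le> ?S \<omega>" by simp
      then show "norm (?S \<omega>) \<le> norm (?R \<omega>)" using pw[of \<omega>] by simp
    qed
    have "(\<integral>\<omega>. ?S \<omega> \<partial>M) \<le> (\<integral>\<omega>. ?R \<omega> \<partial>M)" by (rule integral_mono[OF Si Ri pw])
    also have "\<dots> = (\<Sum>l\<in>{1..j}. w l) * (\<Sum>l\<in>{1..j}. (\<integral>\<omega>. (?X l \<omega>)\<^sup>2 \<partial>M) / w l)"
    proof -
      have "(\<integral>\<omega>. ?R \<omega> \<partial>M) = (\<Sum>l\<in>{1..j}. w l) * (\<integral>\<omega>. (\<Sum>l\<in>{1..j}. (?X l \<omega>)\<^sup>2 / w l) \<partial>M)"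
        by (rule integral_mult_right_zero)
      also have "(\<integral>\<omega>. (\<Sum>l\<in>{1..j}. (?X l \<omega>)\<^sup>2 / w l) \<partial>M) = (\<Sum>l\<in>{1..j}. (\<integral>\<omega>. (?X l \<omega>)\<^sup>2 / w l \<partial>M))"
        by (rule Bochner_Integration.integral_sum) (use PL in auto)
      also have "\<dots> = (\<Sum>l\<in>{1..j}. (\<integral>\<omega>. (?X l \<omega>)\<^sup>2 \<partial>M) / w l)"
        by (rule sum.cong[OF refl]) simp
      finally show ?thesis .
    qed
    also have "\<dots> \<le> (\<Sum>l\<in>{1..j}. w l) * (\<Sum>l\<in>{1..j}. Cg Kp Lp * w l)"
    proof (rule mult_left_mono)
      show "(\<Sum>l\<in>{1..j}. (\<integral>\<omega>. (?X l \<omega>)\<^sup>2 \<partial>M) / w l) \<le> (\<Sum>l\<in>{1..j}. Cg Kp Lp * w l)"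
      proof (rule sum_mono)
        fix l assume l: "l \<in> {1..j}"
        have "(\<integral>\<omega>. (?X l \<omega>)\<^sup>2 \<partial>M) \<le> Cg Kp Lp * (w l)\<^sup>2"
          using PL[OF l] mult_left_mono[OF wsq[OF l] Cg0] by linarith
        then show "(\<integral>\<omega>. (?X l \<omega>)\<^sup>2 \<partial>M) / w l \<le> Cg Kp Lp * w l"
          using w0[OF l] by (simp add: divide_le_eq power2_eq_square mult.assoc)
      qed
      show "0 \<le> (\<Sum>l\<in>{1..j}. w l)" by (rule sum_nonneg) (use w0 in \<open>auto intro: less_imp_le\<close>)
    qed
    also have "\<dots> = Cg Kp Lp * (\<Sum>l\<in>{1..j}. w l)\<^sup>2" by (simp add: sum_distrib_left[symmetric] power2_eq_square)
    also have "\<dots> \<le> Cg Kp Lp * (2 * \<sigma>)\<^sup>2"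
    proof (intro mult_left_mono power_mono sumw Cg0)
      show "0 \<le> (\<Sum>l\<in>{1..j}. w l)" by (rule sum_nonneg) (use w0 in \<open>auto intro: less_imp_le\<close>)
    qed
    also have "\<dots> = 4 * Cg Kp Lp * (t - s)" using ss by (simp add: power_mult_distrib)
    finally show ?thesis using Si by simp
  qed
qed

end


definition Ssum :: "(real^'q::finite \<Rightarrow> real \<Rightarrow> real) \<Rightarrow> (nat \<Rightarrow> real) \<Rightarrow> nat \<Rightarrow> real \<Rightarrow> (nat \<Rightarrow> real) \<Rightarrow> real^'q \<Rightarrow> real" where
  "Ssum G Tg j t D x = (\<Sum>l\<in>{1..j}. cfun (G x) (Tg l) t * D l)"

lemma pdir_Ssum:
  fixes G :: "real^'q::finite \<Rightarrow> real \<Rightarrow> real"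
  assumes d: "\<And>l. l \<in> {1..j} \<Longrightarrow> 0 \<le> Tg l - t \<Longrightarrow> (\<lambda>h. G (x0 + h *\<^sub>R axis \<alpha> 1) (Tg l - t)) differentiable (at 0)"
  shows "pdir \<alpha> (Ssum G Tg j t D) x0 = Ssum (pd_xi \<alpha> G) Tg j t D x0"
proof -
  have "((\<lambda>h. Ssum G Tg j t D (x0 + h *\<^sub>R axis \<alpha> 1)) has_field_derivative
      (\<Sum>l\<in>{1..j}. (if Tg l - t < 0 then 0 else deriv (\<lambda>h. G (x0 + h *\<^sub>R axis \<alpha> 1) (Tg l - t)) 0) * D l)) (at 0)"
    unfolding Ssum_def
  proof (rule DERIV_sum)
    fix l assume l: "l \<in> {1..j}"
    show "((\<lambda>h. cfun (G (x0 + h *\<^sub>R axis \<alpha> 1)) (Tg l) t * D l) has_field_derivative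
      (if Tg l - t < 0 then 0 else deriv (\<lambda>h. G (x0 + h *\<^sub>R axis \<alpha> 1) (Tg l - t)) 0) * D l) (at 0)"
    proof (cases "Tg l - t < 0")
      case True
      then show ?thesis unfolding cfun_def by simp
    next
      case False
      have "((\<lambda>h. G (x0 + h *\<^sub>R axis \<alpha> 1) (Tg l - t)) has_field_derivative deriv (\<lambda>h. G (x0 + h *\<^sub>R axis \<alpha> 1) (Tg l - t)) 0) (at 0)"
        using d[OF l] False by (simp add: DERIV_deriv_iff_real_differentiable)
      then have "((\<lambda>h. G (x0 + h *\<^sub>R axis \<alpha> 1) (Tg l - t) * D l) has_field_derivative
          deriv (\<lambda>h. G (x0 + h *\<^sub>R axis \<alpha> 1) (Tg l - t)) 0 * D l) (at 0)"
        by (rule DERIV_cmult_right)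
      then show ?thesis unfolding cfun_def using False by simp
    qed
  qed
  then have "pdir \<alpha> (Ssum G Tg j t D) x0 = (\<Sum>l\<in>{1..j}. (if Tg l - t < 0 then 0 else deriv (\<lambda>h. G (x0 + h *\<^sub>R axis \<alpha> 1) (Tg l - t)) 0) * D l)"
    unfolding pdir_def by (rule DERIV_imp_deriv)
  also have "\<dots> = Ssum (pd_xi \<alpha> G) Tg j t D x0"
    unfolding Ssum_def cfun_def pd_xi_def pdir_def by (intro sum.cong) auto
  finally show ?thesis .
qed

lemma ev_in_open:
  fixes x0 :: "real^'q::finite" and y :: real
  assumes U: "open U" "(x0, y) \<in> U"
  shows "\<forall>\<^sub>F h in nhds 0. (x0 + h *\<^sub>R axis \<alpha> 1, y) \<in> U"
proof -
  obtain e where e: "e > 0" "ball (x0, y) e \<subseteq> U" using U open_contains_ball by blast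
  show ?thesis unfolding eventually_nhds_metric
  proof (intro exI conjI allI impI)
    show "0 < e" by (rule e)
    fix h :: real assume "dist h 0 < e"
    then have "dist (x0, y) (x0 + h *\<^sub>R axis \<alpha> 1, y) < e"
      by (simp add: dist_Pair_Pair dist_norm)
    then show "(x0 + h *\<^sub>R axis \<alpha> 1, y) \<in> U" using e by auto
  qed
qed


lemma C22_bounds:
  fixes g :: "real^'q::finite \<Rightarrow> real \<Rightarrow> real"
  assumes cT: "compact \<Theta>" and sub: "\<Theta> \<times> {0..1} \<subseteq> U"
    and c1: "continuous_on U (\<lambda>(\<xi>, t). g \<xi> t)" and c2: "continuous_on U (\<lambda>(\<xi>, t). pd_t g \<xi> t)"
    and dg: "\<forall>(\<xi>, t)\<in>U. g \<xi> differentiable (at t)"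
  shows "\<exists>Kp Lp. 0 \<le> Kp \<and> 0 \<le> Lp \<and> (\<forall>\<xi>\<in>\<Theta>. \<forall>x\<in>{0..1}. \<bar>g \<xi> x\<bar> \<le> Kp)
     \<and> (\<forall>\<xi>\<in>\<Theta>. \<forall>x\<in>{0..1}. \<forall>y\<in>{0..1}. \<bar>g \<xi> x - g \<xi> y\<bar> \<le> Lp * \<bar>x - y\<bar>)"
proof -
  have cS: "compact (\<Theta> \<times> {0..1::real})" using cT by (intro compact_Times) auto
  obtain B1 where B1: "\<And>p. p \<in> \<Theta> \<times> {0..1} \<Longrightarrow> norm ((\<lambda>(\<xi>, t). g \<xi> t) p) \<le> B1"
    using compact_imp_bounded[OF compact_continuous_image[OF continuous_on_subset[OF c1 sub] cS]]
    unfolding bounded_iff by auto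
  obtain B2 where B2: "\<And>p. p \<in> \<Theta> \<times> {0..1} \<Longrightarrow> norm ((\<lambda>(\<xi>, t). pd_t g \<xi> t) p) \<le> B2"
    using compact_imp_bounded[OF compact_continuous_image[OF continuous_on_subset[OF c2 sub] cS]]
    unfolding bounded_iff by auto
  have K: "\<forall>\<xi>\<in>\<Theta>. \<forall>x\<in>{0..1}. \<bar>g \<xi> x\<bar> \<le> max 0 B1"
  proof (intro ballI)
    fix \<xi> x assume "\<xi> \<in> \<Theta>" "x \<in> {0..1::real}"
    then show "\<bar>g \<xi> x\<bar> \<le> max 0 B1" using B1[of "(\<xi>, x)"] by auto
  qed
  have L: "\<forall>\<xi>\<in>\<Theta>. \<forall>x\<in>{0..1}. \<forall>y\<in>{0..1}. \<bar>g \<xi> x - g \<xi> y\<bar> \<le> max 0 B2 * \<bar>x - y\<bar>"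
  proof (intro ballI)
    fix \<xi> x y assume \<xi>: "\<xi> \<in> \<Theta>" and x: "x \<in> {0..1::real}" and y: "y \<in> {0..1::real}"
    have gen: "\<bar>g \<xi> b - g \<xi> a\<bar> \<le> max 0 B2 * (b - a)" if ab: "a < b" "a \<in> {0..1}" "b \<in> {0..1}" for a b :: real
    proof -
      have "\<And>z. a \<le> z \<Longrightarrow> z \<le> b \<Longrightarrow> (g \<xi> has_real_derivative pd_t g \<xi> z) (at z)"
      proof -
        fix z assume "a \<le> z" "z \<le> b"
        then have "(\<xi>, z) \<in> U" using sub \<xi> ab by auto
        then have "g \<xi> differentiable (at z)" using dg by auto
        then show "(g \<xi> has_real_derivative pd_t g \<xi> z) (at z)"
          unfolding pd_t_def by (simp add: DERIV_deriv_iff_real_differentiable)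
      qed
      from MVT2[OF ab(1) this] obtain z where z: "a < z" "z < b" "g \<xi> b - g \<xi> a = (b - a) * pd_t g \<xi> z" by blast
      have "\<bar>pd_t g \<xi> z\<bar> \<le> max 0 B2" using B2[of "(\<xi>, z)"] \<xi> z ab by auto
      then show ?thesis unfolding z(3) using ab by (simp add: abs_mult mult.commute mult_left_mono)
    qed
    consider "x < y" | "x = y" | "y < x" by linarith
    then show "\<bar>g \<xi> x - g \<xi> y\<bar> \<le> max 0 B2 * \<bar>x - y\<bar>"
    proof cases
      case 1 then show ?thesis using gen[of x y] x y by (simp add: abs_minus_commute)
    next
      case 2 then show ?thesis by simp
    next
      case 3 then show ?thesis using gen[of y x] x y by simp
    qed
  qed
  show ?thesis using K L by (intro exI[of _ "max 0 B1"] exI[of _ "max 0 B2"]) auto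
qed

context vk
begin

lemma part2_core:
  assumes g: "grid d Tg" and t: "t \<in> {0..1}" and s: "s \<in> {0..1}"
    and Kp: "\<And>x. x \<in> {0..1} \<Longrightarrow> \<bar>\<phi> x\<bar> \<le> Kp"
    and Lp: "\<And>x y. x \<in> {0..1} \<Longrightarrow> y \<in> {0..1} \<Longrightarrow> \<bar>\<phi> x - \<phi> y\<bar> \<le> Lp * \<bar>x - y\<bar>"
  shows "integrable M (\<lambda>\<omega>. \<Sum>j\<in>{1..d}. (\<Sum>l\<in>{1..j}. gl \<phi> (Tg (l - 1)) (Tg l) t \<omega> - gl \<phi> (Tg (l - 1)) (Tg l) s \<omega>)\<^sup>2)
    \<and> (\<integral>\<omega>. (\<Sum>j\<in>{1..d}. (\<Sum>l\<in>{1..j}. gl \<phi> (Tg (l - 1)) (Tg l) t \<omega> - gl \<phi> (Tg (l - 1)) (Tg l) s \<omega>)\<^sup>2) \<partial>M)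
       \<le> 4 * Cg Kp Lp * real d * \<bar>t - s\<bar>"
proof -
  let ?Q = "\<lambda>j \<omega>. (\<Sum>l\<in>{1..j}. gl \<phi> (Tg (l - 1)) (Tg l) t \<omega> - gl \<phi> (Tg (l - 1)) (Tg l) s \<omega>)\<^sup>2"
  have one: "integrable M (?Q j) \<and> (\<integral>\<omega>. ?Q j \<omega> \<partial>M) \<le> 4 * Cg Kp Lp * \<bar>t - s\<bar>" if j: "j \<in> {1..d}" for j
  proof (cases "s \<le> t")
    case True
    then show ?thesis using sum_l[OF g _ _ True _ Kp Lp, of j] j s t by auto
  next
    case False
    have sw: "?Q j = (\<lambda>\<omega>. (\<Sum>l\<in>{1..j}. gl \<phi> (Tg (l - 1)) (Tg l) s \<omega> - gl \<phi> (Tg (l - 1)) (Tg l) t \<omega>)\<^sup>2)"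
    proof
      fix \<omega>
      have "(\<Sum>l\<in>{1..j}. gl \<phi> (Tg (l - 1)) (Tg l) t \<omega> - gl \<phi> (Tg (l - 1)) (Tg l) s \<omega>)
          = - (\<Sum>l\<in>{1..j}. gl \<phi> (Tg (l - 1)) (Tg l) s \<omega> - gl \<phi> (Tg (l - 1)) (Tg l) t \<omega>)"
        by (simp add: sum_negf[symmetric])
      then show "?Q j \<omega> = (\<Sum>l\<in>{1..j}. gl \<phi> (Tg (l - 1)) (Tg l) s \<omega> - gl \<phi> (Tg (l - 1)) (Tg l) t \<omega>)\<^sup>2"
        by simp
    qed
    have "integrable M (\<lambda>\<omega>. (\<Sum>l\<in>{1..j}. gl \<phi> (Tg (l - 1)) (Tg l) s \<omega> - gl \<phi> (Tg (l - 1)) (Tg l) t \<omega>)\<^sup>2)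
      \<and> (\<integral>\<omega>. (\<Sum>l\<in>{1..j}. gl \<phi> (Tg (l - 1)) (Tg l) s \<omega> - gl \<phi> (Tg (l - 1)) (Tg l) t \<omega>)\<^sup>2 \<partial>M)
       \<le> 4 * Cg Kp Lp * (s - t)"
      by (rule sum_l[OF g _ _ _ _ Kp Lp]) (use j s t False in auto)
    then show ?thesis unfolding sw using False by auto
  qed
  have int: "integrable M (\<lambda>\<omega>. \<Sum>j\<in>{1..d}. ?Q j \<omega>)"
    by (rule Bochner_Integration.integrable_sum) (use one in auto)
  have "(\<integral>\<omega>. (\<Sum>j\<in>{1..d}. ?Q j \<omega>) \<partial>M) = (\<Sum>j\<in>{1..d}. (\<integral>\<omega>. ?Q j \<omega> \<partial>M))"
    by (rule Bochner_Integration.integral_sum) (use one in auto)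
  also have "\<dots> \<le> (\<Sum>j\<in>{1..d}. 4 * Cg Kp Lp * \<bar>t - s\<bar>)" by (rule sum_mono) (use one in auto)
  also have "\<dots> = 4 * Cg Kp Lp * real d * \<bar>t - s\<bar>" by simp
  finally show ?thesis using int by simp
qed

end


theorem mainTheorem3:
  fixes M :: "'a measure" and F :: "real \<Rightarrow> 'a measure" and W :: "real \<Rightarrow> 'a \<Rightarrow> real"
    and \<Theta> :: "(real^'q::finite) set" and k :: "real^'q \<Rightarrow> real \<Rightarrow> real"
    and \<theta> :: "real^'q" and V0 :: "real \<Rightarrow> real"
  assumes BM: "std_BM M F W"
    and Theta: "compact \<Theta>" "convex \<Theta>" "\<theta> \<in> \<Theta>"
    and V0: "continuous_on {0..1} V0" "\<forall>u\<in>{0..1}. V0 u > 0"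
    and hyp: "H1 \<Theta> k"
  shows
    "(\<forall>p::real. p \<ge> 1 \<longrightarrow> (\<exists>C. \<forall>t\<in>{0..1}. \<forall>s\<in>{0..1}. \<forall>T\<in>{0..1}.
        integrable M (\<lambda>\<omega>. \<bar>Iproc k \<theta> V0 W t T \<omega> - Iproc k \<theta> V0 W s T \<omega>\<bar> powr p)
      \<and> (\<integral>\<omega>. \<bar>Iproc k \<theta> V0 W t T \<omega> - Iproc k \<theta> V0 W s T \<omega>\<bar> powr p \<partial>M)
          \<le> C * \<bar>t - s\<bar> powr (p / 2)))
   \<and> (\<exists>C. \<forall>d Tg. grid d Tg \<longrightarrow> (\<forall>\<xi>\<in>\<Theta>. \<forall>t\<in>{0..1}. \<forall>s\<in>{0..1}. \<forall>\<alpha> \<beta>.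
        let \<sigma> = (\<lambda>j x t \<omega>. sigma_hat k \<theta> V0 W Tg j x t \<omega>) in
        integrable M (\<lambda>\<omega>. \<Sum>j\<in>{1..d}. (\<sigma> j \<xi> t \<omega> - \<sigma> j \<xi> s \<omega>)\<^sup>2)
      \<and> (\<integral>\<omega>. (\<Sum>j\<in>{1..d}. (\<sigma> j \<xi> t \<omega> - \<sigma> j \<xi> s \<omega>)\<^sup>2) \<partial>M) \<le> C * real d * \<bar>t - s\<bar>
      \<and> integrable M (\<lambda>\<omega>. \<Sum>j\<in>{1..d}.
            (pdir \<alpha> (\<lambda>x. \<sigma> j x t \<omega>) \<xi> - pdir \<alpha> (\<lambda>x. \<sigma> j x s \<omega>) \<xi>)\<^sup>2)
      \<and> (\<integral>\<omega>. (\<Sum>j\<in>{1..d}.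
            (pdir \<alpha> (\<lambda>x. \<sigma> j x t \<omega>) \<xi> - pdir \<alpha> (\<lambda>x. \<sigma> j x s \<omega>) \<xi>)\<^sup>2) \<partial>M)
          \<le> C * real d * \<bar>t - s\<bar>
      \<and> integrable M (\<lambda>\<omega>. \<Sum>j\<in>{1..d}.
            (pdir \<alpha> (pdir \<beta> (\<lambda>x. \<sigma> j x t \<omega>)) \<xi> - pdir \<alpha> (pdir \<beta> (\<lambda>x. \<sigma> j x s \<omega>)) \<xi>)\<^sup>2)
      \<and> (\<integral>\<omega>. (\<Sum>j\<in>{1..d}.
            (pdir \<alpha> (pdir \<beta> (\<lambda>x. \<sigma> j x t \<omega>)) \<xi> - pdir \<alpha> (pdir \<beta> (\<lambda>x. \<sigma> j x s \<omega>)) \<xi>)\<^sup>2) \<partial>M)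
          \<le> C * real d * \<bar>t - s\<bar>))"
proof -
  from hyp obtain U where Uo: "open U" and US: "\<Theta> \<times> {0..1} \<subseteq> U" and C22: "C22_on U k"
    unfolding H1_def by blast
  have dir: "\<And>g \<xi> t \<gamma>. g \<in> {k} \<union> {pd_xi \<alpha> k | \<alpha>. True} \<Longrightarrow> (\<xi>, t) \<in> U \<Longrightarrow> (\<lambda>h. g (\<xi> + h *\<^sub>R axis \<gamma> 1) t) differentiable (at 0)"
    using C22 unfolding C22_on_def by blast
  have props: "\<And>g. g \<in> {k} \<union> {pd_xi \<alpha> k | \<alpha>. True} \<union> {pd_xi \<beta> (pd_xi \<alpha> k) | \<alpha> \<beta>. True} \<Longrightarrow>
      (\<forall>(\<xi>, t)\<in>U. g \<xi> differentiable (at t)) \<and> continuous_on U (\<lambda>(\<xi>, t). g \<xi> t) \<and> continuous_on U (\<lambda>(\<xi>, t). pd_t g \<xi> t)"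
    using C22 unfolding C22_on_def by blast
  have bnds: "\<exists>Kp Lp. 0 \<le> Kp \<and> 0 \<le> Lp \<and> (\<forall>\<xi>\<in>\<Theta>. \<forall>x\<in>{0..1}. \<bar>g \<xi> x\<bar> \<le> Kp)
     \<and> (\<forall>\<xi>\<in>\<Theta>. \<forall>x\<in>{0..1}. \<forall>y\<in>{0..1}. \<bar>g \<xi> x - g \<xi> y\<bar> \<le> Lp * \<bar>x - y\<bar>)"
    if "g \<in> {k} \<union> {pd_xi \<alpha> k | \<alpha>. True} \<union> {pd_xi \<beta> (pd_xi \<alpha> k) | \<alpha> \<beta>. True}" for g
    using props[OF that] by (intro C22_bounds[OF Theta(1) US]) auto
  obtain Kk Lk where Kk: "0 \<le> Kk" "0 \<le> Lk" "\<forall>\<xi>\<in>\<Theta>. \<forall>x\<in>{0..1}. \<bar>k \<xi> x\<bar> \<le> Kk"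
    "\<forall>\<xi>\<in>\<Theta>. \<forall>x\<in>{0..1}. \<forall>y\<in>{0..1}. \<bar>k \<xi> x - k \<xi> y\<bar> \<le> Lk * \<bar>x - y\<bar>"
    using bnds[of k] by auto
  have "\<forall>\<alpha>. \<exists>Kp Lp. 0 \<le> Kp \<and> 0 \<le> Lp \<and> (\<forall>\<xi>\<in>\<Theta>. \<forall>x\<in>{0..1}. \<bar>pd_xi \<alpha> k \<xi> x\<bar> \<le> Kp)
     \<and> (\<forall>\<xi>\<in>\<Theta>. \<forall>x\<in>{0..1}. \<forall>y\<in>{0..1}. \<bar>pd_xi \<alpha> k \<xi> x - pd_xi \<alpha> k \<xi> y\<bar> \<le> Lp * \<bar>x - y\<bar>)"
    using bnds by blast
  then obtain K1 L1 where K1: "\<And>\<alpha>. 0 \<le> K1 \<alpha>" "\<And>\<alpha>. 0 \<le> L1 \<alpha>"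
    "\<And>\<alpha>. \<forall>\<xi>\<in>\<Theta>. \<forall>x\<in>{0..1}. \<bar>pd_xi \<alpha> k \<xi> x\<bar> \<le> K1 \<alpha>"
    "\<And>\<alpha>. \<forall>\<xi>\<in>\<Theta>. \<forall>x\<in>{0..1}. \<forall>y\<in>{0..1}. \<bar>pd_xi \<alpha> k \<xi> x - pd_xi \<alpha> k \<xi> y\<bar> \<le> L1 \<alpha> * \<bar>x - y\<bar>"
    by metis
  have "\<forall>\<alpha> \<beta>. \<exists>Kp Lp. 0 \<le> Kp \<and> 0 \<le> Lp \<and> (\<forall>\<xi>\<in>\<Theta>. \<forall>x\<in>{0..1}. \<bar>pd_xi \<alpha> (pd_xi \<beta> k) \<xi> x\<bar> \<le> Kp)
     \<and> (\<forall>\<xi>\<in>\<Theta>. \<forall>x\<in>{0..1}. \<forall>y\<in>{0..1}. \<bar>pd_xi \<alpha> (pd_xi \<beta> k) \<xi> x - pd_xi \<alpha> (pd_xi \<beta> k) \<xi> y\<bar> \<le> Lp * \<bar>x - y\<bar>)"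
  proof (intro allI)
    fix \<alpha> \<beta> :: 'q
    have "pd_xi \<alpha> (pd_xi \<beta> k) \<in> {k} \<union> {pd_xi \<alpha> k | \<alpha>. True} \<union> {pd_xi \<beta> (pd_xi \<alpha> k) | \<alpha> \<beta>. True}" by blast
    from bnds[OF this] show "\<exists>Kp Lp. 0 \<le> Kp \<and> 0 \<le> Lp \<and> (\<forall>\<xi>\<in>\<Theta>. \<forall>x\<in>{0..1}. \<bar>pd_xi \<alpha> (pd_xi \<beta> k) \<xi> x\<bar> \<le> Kp)
     \<and> (\<forall>\<xi>\<in>\<Theta>. \<forall>x\<in>{0..1}. \<forall>y\<in>{0..1}. \<bar>pd_xi \<alpha> (pd_xi \<beta> k) \<xi> x - pd_xi \<alpha> (pd_xi \<beta> k) \<xi> y\<bar> \<le> Lp * \<bar>x - y\<bar>)" .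
  qed
  then obtain K2 L2 where K2: "\<And>\<alpha> \<beta>. 0 \<le> K2 \<alpha> \<beta>" "\<And>\<alpha> \<beta>. 0 \<le> L2 \<alpha> \<beta>"
    "\<And>\<alpha> \<beta>. \<forall>\<xi>\<in>\<Theta>. \<forall>x\<in>{0..1}. \<bar>pd_xi \<alpha> (pd_xi \<beta> k) \<xi> x\<bar> \<le> K2 \<alpha> \<beta>"
    "\<And>\<alpha> \<beta>. \<forall>\<xi>\<in>\<Theta>. \<forall>x\<in>{0..1}. \<forall>y\<in>{0..1}. \<bar>pd_xi \<alpha> (pd_xi \<beta> k) \<xi> x - pd_xi \<alpha> (pd_xi \<beta> k) \<xi> y\<bar> \<le> L2 \<alpha> \<beta> * \<bar>x - y\<bar>"
    by metis
  define KA where "KA = Kk + (\<Sum>\<alpha>\<in>UNIV. K1 \<alpha>) + (\<Sum>\<alpha>\<in>UNIV. \<Sum>\<beta>\<in>UNIV. K2 \<alpha> \<beta>)"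
  define LA where "LA = Lk + (\<Sum>\<alpha>\<in>UNIV. L1 \<alpha>) + (\<Sum>\<alpha>\<in>UNIV. \<Sum>\<beta>\<in>UNIV. L2 \<alpha> \<beta>)"
  have s1: "(\<Sum>\<alpha>\<in>UNIV. K1 \<alpha>) \<ge> 0" "(\<Sum>\<alpha>\<in>UNIV. L1 \<alpha>) \<ge> 0" using K1 by (auto intro: sum_nonneg)
  have s2: "(\<Sum>\<alpha>\<in>UNIV. \<Sum>\<beta>\<in>UNIV. K2 \<alpha> \<beta>) \<ge> 0" "(\<Sum>\<alpha>\<in>UNIV. \<Sum>\<beta>\<in>UNIV. L2 \<alpha> \<beta>) \<ge> 0"
    using K2 by (auto intro!: sum_nonneg)
  have K1le: "K1 \<alpha> \<le> (\<Sum>\<alpha>\<in>UNIV. K1 \<alpha>)" "L1 \<alpha> \<le> (\<Sum>\<alpha>\<in>UNIV. L1 \<alpha>)" for \<alpha>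
    using K1 by (auto intro!: member_le_sum)
  have K2le: "K2 \<alpha> \<beta> \<le> (\<Sum>\<alpha>\<in>UNIV. \<Sum>\<beta>\<in>UNIV. K2 \<alpha> \<beta>)" "L2 \<alpha> \<beta> \<le> (\<Sum>\<alpha>\<in>UNIV. \<Sum>\<beta>\<in>UNIV. L2 \<alpha> \<beta>)" for \<alpha> \<beta>
  proof -
    have "K2 \<alpha> \<beta> \<le> (\<Sum>\<beta>\<in>UNIV. K2 \<alpha> \<beta>)" using K2 by (auto intro!: member_le_sum)
    also have "\<dots> \<le> (\<Sum>\<alpha>\<in>UNIV. \<Sum>\<beta>\<in>UNIV. K2 \<alpha> \<beta>)" using K2 by (auto intro!: member_le_sum sum_nonneg)
    finally show "K2 \<alpha> \<beta> \<le> (\<Sum>\<alpha>\<in>UNIV. \<Sum>\<beta>\<in>UNIV. K2 \<alpha> \<beta>)" .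
    have "L2 \<alpha> \<beta> \<le> (\<Sum>\<beta>\<in>UNIV. L2 \<alpha> \<beta>)" using K2 by (auto intro!: member_le_sum)
    also have "\<dots> \<le> (\<Sum>\<alpha>\<in>UNIV. \<Sum>\<beta>\<in>UNIV. L2 \<alpha> \<beta>)" using K2 by (auto intro!: member_le_sum sum_nonneg)
    finally show "L2 \<alpha> \<beta> \<le> (\<Sum>\<alpha>\<in>UNIV. \<Sum>\<beta>\<in>UNIV. L2 \<alpha> \<beta>)" .
  qed
  have KA: "Kk \<le> KA" "\<And>\<alpha>. K1 \<alpha> \<le> KA" "\<And>\<alpha> \<beta>. K2 \<alpha> \<beta> \<le> KA"
    unfolding KA_def using s1 s2 K1le K2le Kk by (auto intro: add_increasing add_increasing2 order_trans)
  have LA: "Lk \<le> LA" "\<And>\<alpha>. L1 \<alpha> \<le> LA" "\<And>\<alpha> \<beta>. L2 \<alpha> \<beta> \<le> LA"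
  proof -
    show "Lk \<le> LA" unfolding LA_def using s1 s2 by linarith
    fix \<alpha> \<beta>
    show "L1 \<alpha> \<le> LA" unfolding LA_def using s1 s2 K1le(2)[of \<alpha>] Kk(2) by linarith
    show "L2 \<alpha> \<beta> \<le> LA" unfolding LA_def using s1 s2 K2le(2)[of \<alpha> \<beta>] Kk(2) by linarith
  qed
  have LA0: "0 \<le> LA" using LA(1) Kk by linarith
  have lift: "(\<forall>x\<in>{0..1}. \<bar>\<phi> x\<bar> \<le> KA) \<and> (\<forall>x\<in>{0..1}. \<forall>y\<in>{0..1}. \<bar>\<phi> x - \<phi> y\<bar> \<le> LA * \<bar>x - y\<bar>)"
    if "\<forall>x\<in>{0..1}. \<bar>\<phi> x\<bar> \<le> Kp" "\<forall>x\<in>{0..1}. \<forall>y\<in>{0..1}. \<bar>\<phi> x - \<phi> y\<bar> \<le> Lp * \<bar>x - y\<bar>"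
       "Kp \<le> KA" "Lp \<le> LA" for \<phi> :: "real \<Rightarrow> real" and Kp Lp
  proof (intro conjI ballI)
    fix x assume "x \<in> {0..1::real}"
    then show "\<bar>\<phi> x\<bar> \<le> KA" using that by force
  next
    fix x y assume "x \<in> {0..1::real}" "y \<in> {0..1::real}"
    then have "\<bar>\<phi> x - \<phi> y\<bar> \<le> Lp * \<bar>x - y\<bar>" using that by blast
    also have "\<dots> \<le> LA * \<bar>x - y\<bar>" using that by (intro mult_right_mono) auto
    finally show "\<bar>\<phi> x - \<phi> y\<bar> \<le> LA * \<bar>x - y\<bar>" .
  qed
  obtain Vm where Vm: "\<And>u. u \<in> {0..1} \<Longrightarrow> V0 u \<le> Vm"
  proof -
    obtain B where "\<And>x. x \<in> V0 ` {0..1} \<Longrightarrow> norm x \<le> B"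
      using compact_imp_bounded[OF compact_continuous_image[OF V0(1) compact_Icc]] unfolding bounded_iff by auto
    then have "\<And>u. u \<in> {0..1} \<Longrightarrow> V0 u \<le> B" by (metis abs_ge_self image_eqI order_trans real_norm_def)
    then show ?thesis by (rule that)
  qed
  have \<theta>U: "\<And>x. x \<in> {0..1} \<Longrightarrow> (\<theta>, x) \<in> U" using US Theta(3) by auto
  have kprops: "(\<forall>(\<xi>, t)\<in>U. k \<xi> differentiable (at t)) \<and> continuous_on U (\<lambda>(\<xi>, t). pd_t k \<xi> t)"
    using props[of k] by auto
  have VK: "vk M F W k \<theta> V0 (pd_t k \<theta>) Kk Vm"
  proof (unfold_locales)
    show "std_BM M F W" by (rule BM)
    fix x :: real assume x: "x \<in> {0..1}"
    then have "k \<theta> differentiable (at x)" using kprops \<theta>U by auto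
    then show "(k \<theta> has_real_derivative pd_t k \<theta> x) (at x)"
      unfolding pd_t_def by (simp add: DERIV_deriv_iff_real_differentiable)
    show "\<bar>k \<theta> x\<bar> \<le> Kk" using Kk(3) Theta(3) x by auto
  next
    have "continuous_on {0..1} (\<lambda>x. (\<lambda>(\<xi>, t). pd_t k \<xi> t) (\<theta>, x))"
      by (rule continuous_on_compose2[OF conjunct2[OF kprops]]) (use \<theta>U in \<open>auto intro!: continuous_intros\<close>)
    then show "continuous_on {0..1} (pd_t k \<theta>)" by simp
  next
    show "continuous_on {0..1} V0" by (rule V0(1))
    fix u :: real assume "u \<in> {0..1}"
    then show "0 < V0 u" "V0 u \<le> Vm" using V0(2) Vm by auto
  qed
  interpret V: vk M F W k \<theta> V0 "pd_t k \<theta>" Kk Vm by (rule VK)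
  show ?thesis
  proof (intro conjI allI impI)
    fix p :: real assume "1 \<le> p"
    then show "\<exists>C. \<forall>t\<in>{0..1}. \<forall>s\<in>{0..1}. \<forall>T\<in>{0..1}.
        integrable M (\<lambda>\<omega>. \<bar>Iproc k \<theta> V0 W t T \<omega> - Iproc k \<theta> V0 W s T \<omega>\<bar> powr p)
      \<and> (\<integral>\<omega>. \<bar>Iproc k \<theta> V0 W t T \<omega> - Iproc k \<theta> V0 W s T \<omega>\<bar> powr p \<partial>M) \<le> C * \<bar>t - s\<bar> powr (p / 2)"
      by (rule V.part1)
  next
    show "\<exists>C. \<forall>d Tg. grid d Tg \<longrightarrow> (\<forall>\<xi>\<in>\<Theta>. \<forall>t\<in>{0..1}. \<forall>s\<in>{0..1}. \<forall>\<alpha> \<beta>.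
        let \<sigma> = (\<lambda>j x t \<omega>. sigma_hat k \<theta> V0 W Tg j x t \<omega>) in
        integrable M (\<lambda>\<omega>. \<Sum>j\<in>{1..d}. (\<sigma> j \<xi> t \<omega> - \<sigma> j \<xi> s \<omega>)\<^sup>2)
      \<and> (\<integral>\<omega>. (\<Sum>j\<in>{1..d}. (\<sigma> j \<xi> t \<omega> - \<sigma> j \<xi> s \<omega>)\<^sup>2) \<partial>M) \<le> C * real d * \<bar>t - s\<bar>
      \<and> integrable M (\<lambda>\<omega>. \<Sum>j\<in>{1..d}.
            (pdir \<alpha> (\<lambda>x. \<sigma> j x t \<omega>) \<xi> - pdir \<alpha> (\<lambda>x. \<sigma> j x s \<omega>) \<xi>)\<^sup>2)
      \<and> (\<integral>\<omega>. (\<Sum>j\<in>{1..d}.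
            (pdir \<alpha> (\<lambda>x. \<sigma> j x t \<omega>) \<xi> - pdir \<alpha> (\<lambda>x. \<sigma> j x s \<omega>) \<xi>)\<^sup>2) \<partial>M)
          \<le> C * real d * \<bar>t - s\<bar>
      \<and> integrable M (\<lambda>\<omega>. \<Sum>j\<in>{1..d}.
            (pdir \<alpha> (pdir \<beta> (\<lambda>x. \<sigma> j x t \<omega>)) \<xi> - pdir \<alpha> (pdir \<beta> (\<lambda>x. \<sigma> j x s \<omega>)) \<xi>)\<^sup>2)
      \<and> (\<integral>\<omega>. (\<Sum>j\<in>{1..d}.
            (pdir \<alpha> (pdir \<beta> (\<lambda>x. \<sigma> j x t \<omega>)) \<xi> - pdir \<alpha> (pdir \<beta> (\<lambda>x. \<sigma> j x s \<omega>)) \<xi>)\<^sup>2) \<partial>M)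
          \<le> C * real d * \<bar>t - s\<bar>)"
    proof (intro exI[of _ "4 * V.Cg KA LA"] allI impI ballI)
      fix d Tg \<xi> t s \<alpha> \<beta>
      assume g: "grid d Tg" and \<xi>: "\<xi> \<in> \<Theta>" and t: "t \<in> {0..1::real}" and s: "s \<in> {0..1::real}"
      define D where "D \<tau> \<omega> l = Iproc k \<theta> V0 W \<tau> (Tg l) \<omega> - Iproc k \<theta> V0 W \<tau> (Tg (l - 1)) \<omega>" for \<tau> \<omega> l
      have e0: "(\<lambda>x. sigma_hat k \<theta> V0 W Tg j x \<tau> \<omega>) = Ssum k Tg j \<tau> (D \<tau> \<omega>)" for j \<tau> \<omega>
        unfolding sigma_hat_def Ssum_def D_def kext_def cfun_def by auto
      have inU: "(x, Tg l - \<tau>) \<in> U" if "x \<in> \<Theta>" "l \<in> {1..j}" "j \<le> d" "\<tau> \<in> {0..1}" "0 \<le> Tg l - \<tau>" for x l j \<tau>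
        using grid_facts[OF g that(2,3)] that US by auto
      have e1: "pdir \<alpha> (\<lambda>x. sigma_hat k \<theta> V0 W Tg j x \<tau> \<omega>) \<xi> = Ssum (pd_xi \<alpha> k) Tg j \<tau> (D \<tau> \<omega>) \<xi>"
        if "j \<le> d" "\<tau> \<in> {0..1}" for j \<tau> \<omega>
        unfolding e0 by (rule pdir_Ssum) (rule dir, simp, rule inU[OF \<xi> _ that], auto)
      have e2: "pdir \<alpha> (pdir \<beta> (\<lambda>x. sigma_hat k \<theta> V0 W Tg j x \<tau> \<omega>)) \<xi> = Ssum (pd_xi \<alpha> (pd_xi \<beta> k)) Tg j \<tau> (D \<tau> \<omega>) \<xi>"
        if j: "j \<le> d" and \<tau>: "\<tau> \<in> {0..1}" for j \<tau> \<omega>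
      proof -
        let ?L = "{l \<in> {1..j}. 0 \<le> Tg l - \<tau>}"
        have ev: "\<forall>\<^sub>F h in nhds 0. \<forall>l\<in>?L. (\<xi> + h *\<^sub>R axis \<alpha> 1, Tg l - \<tau>) \<in> U"
          by (rule eventually_ball_finite) (auto intro!: ev_in_open[OF Uo] inU[OF \<xi> _ j \<tau>])
        have ev2: "\<forall>\<^sub>F h in nhds 0. pdir \<beta> (Ssum k Tg j \<tau> (D \<tau> \<omega>)) (\<xi> + h *\<^sub>R axis \<alpha> 1)
            = Ssum (pd_xi \<beta> k) Tg j \<tau> (D \<tau> \<omega>) (\<xi> + h *\<^sub>R axis \<alpha> 1)"
        proof (rule eventually_mono[OF ev])
          fix h assume h: "\<forall>l\<in>?L. (\<xi> + h *\<^sub>R axis \<alpha> 1, Tg l - \<tau>) \<in> U"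
          show "pdir \<beta> (Ssum k Tg j \<tau> (D \<tau> \<omega>)) (\<xi> + h *\<^sub>R axis \<alpha> 1)
            = Ssum (pd_xi \<beta> k) Tg j \<tau> (D \<tau> \<omega>) (\<xi> + h *\<^sub>R axis \<alpha> 1)"
            by (rule pdir_Ssum) (rule dir, simp, use h in auto)
        qed
        have "pdir \<alpha> (pdir \<beta> (Ssum k Tg j \<tau> (D \<tau> \<omega>))) \<xi> = pdir \<alpha> (Ssum (pd_xi \<beta> k) Tg j \<tau> (D \<tau> \<omega>)) \<xi>"
          unfolding pdir_def[of \<alpha>] by (rule deriv_cong_ev[OF ev2 refl])
        also have "\<dots> = Ssum (pd_xi \<alpha> (pd_xi \<beta> k)) Tg j \<tau> (D \<tau> \<omega>) \<xi>"
          by (rule pdir_Ssum) (rule dir, blast, rule inU[OF \<xi> _ j \<tau>], auto)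
        finally show ?thesis unfolding e0 .
      qed
      have dS: "Ssum G Tg j t (D t \<omega>) \<xi> - Ssum G Tg j s (D s \<omega>) \<xi>
          = (\<Sum>l\<in>{1..j}. V.gl (G \<xi>) (Tg (l - 1)) (Tg l) t \<omega> - V.gl (G \<xi>) (Tg (l - 1)) (Tg l) s \<omega>)" for G j \<omega>
        unfolding Ssum_def V.gl_def D_def by (simp add: sum_subtractf)
      note P0 = V.part2_core[OF g t s, of "k \<xi>" KA LA]
      note P1 = V.part2_core[OF g t s, of "pd_xi \<alpha> k \<xi>" KA LA]
      note P2 = V.part2_core[OF g t s, of "pd_xi \<alpha> (pd_xi \<beta> k) \<xi>" KA LA]
      have B0: "(\<forall>x\<in>{0..1}. \<bar>k \<xi> x\<bar> \<le> KA) \<and> (\<forall>x\<in>{0..1}. \<forall>y\<in>{0..1}. \<bar>k \<xi> x - k \<xi> y\<bar> \<le> LA * \<bar>x - y\<bar>)"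
        by (rule lift) (use Kk \<xi> KA LA in auto)
      have B1: "(\<forall>x\<in>{0..1}. \<bar>pd_xi \<alpha> k \<xi> x\<bar> \<le> KA) \<and> (\<forall>x\<in>{0..1}. \<forall>y\<in>{0..1}. \<bar>pd_xi \<alpha> k \<xi> x - pd_xi \<alpha> k \<xi> y\<bar> \<le> LA * \<bar>x - y\<bar>)"
        by (rule lift[of _ "K1 \<alpha>" "L1 \<alpha>"]) (use K1 \<xi> KA LA in auto)
      have B2: "(\<forall>x\<in>{0..1}. \<bar>pd_xi \<alpha> (pd_xi \<beta> k) \<xi> x\<bar> \<le> KA) \<and> (\<forall>x\<in>{0..1}. \<forall>y\<in>{0..1}. \<bar>pd_xi \<alpha> (pd_xi \<beta> k) \<xi> x - pd_xi \<alpha> (pd_xi \<beta> k) \<xi> y\<bar> \<le> LA * \<bar>x - y\<bar>)"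
        by (rule lift[of _ "K2 \<alpha> \<beta>" "L2 \<alpha> \<beta>"]) (use K2 \<xi> KA LA in auto)
      have Q0: "(\<lambda>\<omega>. \<Sum>j\<in>{1..d}. (sigma_hat k \<theta> V0 W Tg j \<xi> t \<omega> - sigma_hat k \<theta> V0 W Tg j \<xi> s \<omega>)\<^sup>2)
          = (\<lambda>\<omega>. \<Sum>j\<in>{1..d}. (\<Sum>l\<in>{1..j}. V.gl (k \<xi>) (Tg (l - 1)) (Tg l) t \<omega> - V.gl (k \<xi>) (Tg (l - 1)) (Tg l) s \<omega>)\<^sup>2)"
      proof (intro ext sum.cong refl)
        fix \<omega> j
        have "sigma_hat k \<theta> V0 W Tg j \<xi> t \<omega> = Ssum k Tg j t (D t \<omega>) \<xi>" using fun_cong[OF e0[of j t \<omega>], of \<xi>] by simp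
        moreover have "sigma_hat k \<theta> V0 W Tg j \<xi> s \<omega> = Ssum k Tg j s (D s \<omega>) \<xi>" using fun_cong[OF e0[of j s \<omega>], of \<xi>] by simp
        ultimately show "(sigma_hat k \<theta> V0 W Tg j \<xi> t \<omega> - sigma_hat k \<theta> V0 W Tg j \<xi> s \<omega>)\<^sup>2
          = (\<Sum>l\<in>{1..j}. V.gl (k \<xi>) (Tg (l - 1)) (Tg l) t \<omega> - V.gl (k \<xi>) (Tg (l - 1)) (Tg l) s \<omega>)\<^sup>2"
          using dS[of k j \<omega>] by simp
      qed
      have Q1: "(\<lambda>\<omega>. \<Sum>j\<in>{1..d}. (pdir \<alpha> (\<lambda>x. sigma_hat k \<theta> V0 W Tg j x t \<omega>) \<xi> - pdir \<alpha> (\<lambda>x. sigma_hat k \<theta> V0 W Tg j x s \<omega>) \<xi>)\<^sup>2)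
          = (\<lambda>\<omega>. \<Sum>j\<in>{1..d}. (\<Sum>l\<in>{1..j}. V.gl (pd_xi \<alpha> k \<xi>) (Tg (l - 1)) (Tg l) t \<omega> - V.gl (pd_xi \<alpha> k \<xi>) (Tg (l - 1)) (Tg l) s \<omega>)\<^sup>2)"
      proof (intro ext sum.cong refl)
        fix \<omega> j assume "j \<in> {1..d}"
        then have j: "j \<le> d" by auto
        show "(pdir \<alpha> (\<lambda>x. sigma_hat k \<theta> V0 W Tg j x t \<omega>) \<xi> - pdir \<alpha> (\<lambda>x. sigma_hat k \<theta> V0 W Tg j x s \<omega>) \<xi>)\<^sup>2
          = (\<Sum>l\<in>{1..j}. V.gl (pd_xi \<alpha> k \<xi>) (Tg (l - 1)) (Tg l) t \<omega> - V.gl (pd_xi \<alpha> k \<xi>) (Tg (l - 1)) (Tg l) s \<omega>)\<^sup>2"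
          unfolding e1[OF j t] e1[OF j s] dS[of "pd_xi \<alpha> k"] ..
      qed
      have Q2: "(\<lambda>\<omega>. \<Sum>j\<in>{1..d}. (pdir \<alpha> (pdir \<beta> (\<lambda>x. sigma_hat k \<theta> V0 W Tg j x t \<omega>)) \<xi> - pdir \<alpha> (pdir \<beta> (\<lambda>x. sigma_hat k \<theta> V0 W Tg j x s \<omega>)) \<xi>)\<^sup>2)
          = (\<lambda>\<omega>. \<Sum>j\<in>{1..d}. (\<Sum>l\<in>{1..j}. V.gl (pd_xi \<alpha> (pd_xi \<beta> k) \<xi>) (Tg (l - 1)) (Tg l) t \<omega> - V.gl (pd_xi \<alpha> (pd_xi \<beta> k) \<xi>) (Tg (l - 1)) (Tg l) s \<omega>)\<^sup>2)"
      proof (intro ext sum.cong refl)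
        fix \<omega> j assume "j \<in> {1..d}"
        then have j: "j \<le> d" by auto
        show "(pdir \<alpha> (pdir \<beta> (\<lambda>x. sigma_hat k \<theta> V0 W Tg j x t \<omega>)) \<xi> - pdir \<alpha> (pdir \<beta> (\<lambda>x. sigma_hat k \<theta> V0 W Tg j x s \<omega>)) \<xi>)\<^sup>2
          = (\<Sum>l\<in>{1..j}. V.gl (pd_xi \<alpha> (pd_xi \<beta> k) \<xi>) (Tg (l - 1)) (Tg l) t \<omega> - V.gl (pd_xi \<alpha> (pd_xi \<beta> k) \<xi>) (Tg (l - 1)) (Tg l) s \<omega>)\<^sup>2"
          unfolding e2[OF j t] e2[OF j s] dS[of "pd_xi \<alpha> (pd_xi \<beta> k)"] ..
      qed
      show "let \<sigma> = (\<lambda>j x t \<omega>. sigma_hat k \<theta> V0 W Tg j x t \<omega>) in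
        integrable M (\<lambda>\<omega>. \<Sum>j\<in>{1..d}. (\<sigma> j \<xi> t \<omega> - \<sigma> j \<xi> s \<omega>)\<^sup>2)
      \<and> (\<integral>\<omega>. (\<Sum>j\<in>{1..d}. (\<sigma> j \<xi> t \<omega> - \<sigma> j \<xi> s \<omega>)\<^sup>2) \<partial>M) \<le> 4 * V.Cg KA LA * real d * \<bar>t - s\<bar>
      \<and> integrable M (\<lambda>\<omega>. \<Sum>j\<in>{1..d}.
            (pdir \<alpha> (\<lambda>x. \<sigma> j x t \<omega>) \<xi> - pdir \<alpha> (\<lambda>x. \<sigma> j x s \<omega>) \<xi>)\<^sup>2)
      \<and> (\<integral>\<omega>. (\<Sum>j\<in>{1..d}.
            (pdir \<alpha> (\<lambda>x. \<sigma> j x t \<omega>) \<xi> - pdir \<alpha> (\<lambda>x. \<sigma> j x s \<omega>) \<xi>)\<^sup>2) \<partial>M)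
          \<le> 4 * V.Cg KA LA * real d * \<bar>t - s\<bar>
      \<and> integrable M (\<lambda>\<omega>. \<Sum>j\<in>{1..d}.
            (pdir \<alpha> (pdir \<beta> (\<lambda>x. \<sigma> j x t \<omega>)) \<xi> - pdir \<alpha> (pdir \<beta> (\<lambda>x. \<sigma> j x s \<omega>)) \<xi>)\<^sup>2)
      \<and> (\<integral>\<omega>. (\<Sum>j\<in>{1..d}.
            (pdir \<alpha> (pdir \<beta> (\<lambda>x. \<sigma> j x t \<omega>)) \<xi> - pdir \<alpha> (pdir \<beta> (\<lambda>x. \<sigma> j x s \<omega>)) \<xi>)\<^sup>2) \<partial>M)
          \<le> 4 * V.Cg KA LA * real d * \<bar>t - s\<bar>"
        unfolding Let_def Q0 Q1 Q2 using P0 P1 P2 B0 B1 B2 by auto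
    qed
  qed
qed


end
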